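(* Let $d\ge 2$ and let $\mathfrak{F}$ be an ordered field or a field that has more than two elements. Let $\mathcal{G}$ and $\mathcal{G}'$ be FFD coordinate geometries over $\mathfrak{F}$ (of dimension $d$). Then: (i) $\mathrm{Co}(\mathcal{G})\subseteq\mathrm{Co}(\mathcal{G}')$ if and only if $\mathrm{Aut}(\mathcal{G})\supseteq\mathrm{Aut}(\mathcal{G}')$; (ii) $\mathrm{Co}(\mathcal{G})\subseteq\mathrm{Co}(\mathcal{G}')$ if and only if $\mathrm{AffAut}(\mathcal{G})\supseteq\mathrm{AffAut}(\mathcal{G}')$.
   Context: A field is $\langle F,+,\cdot,0,1\rangle$; an ordered field is $\langle F,+,\cdot,0,1,\le\rangle$. "Definable" means first-order definable without parameters. For a model $\mathfrak{M}$, $\mathrm{Co}(\mathfrak{M})$ is the set of all relations (of all finite arities $n\ge1$) on its universe that are definable in $\mathfrak{M}$, and $\mathrm{Aut}(\mathfrak{M})$ its automorphism group. For points of $F^d$: ${\mathsf{Col}}(\vec p,\vec q,\vec r)$ iff $\vec q=\vec p+\lambda(\vec r-\vec p)$ for some $\lambda\in F$ or $\vec r=\vec p$; for an ordered field, ${\mathsf{Bw}}(\vec p,\vec q,\vec r)$ iff $\vec q=\vec p+\lambda(\vec r-\vec p)$ for some $\lambda\in F$ with $0\le\lambda\le1$. An $n$-ary relation $\mathsf{R}$ on $F^d$ is definable over $\mathfrak{F}$ iff the corresponding $dn$-ary relation on $F$ obtained by listing coordinates of the $n$ points consecutively is definable in $\mathfrak{F}$. A coordinate geometry over a field (resp. ordered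 field) $\mathfrak{F}$ is a model with universe $F^d$, only relation symbols in its language, in which ${\mathsf{Col}}$ (resp. ${\mathsf{Bw}}$) is definable. It is FFD if it has finitely many relations, each definable over $\mathfrak{F}$. An affine transformation of $F^d$ is a composition of an invertible linear map followed by a translation; $\mathrm{AffAut}(\mathcal{G})=\mathrm{Aut}(\mathcal{G})\cap\{\text{affine transformations}\}$. *)

theory Defs
  imports Main
begin

text \<open>A relational structure is given by a carrier U and a finite list of relations,
  each paired with its arity. Tuples are lists.\<close>

datatype rfm = REq nat nat | RRel nat "nat list" | RNeg rfm | RAnd rfm rfm | REx nat rfm

fun rsat :: "'b set \<Rightarrow> (nat \<times> 'b list set) list \<Rightarrow> rfm \<Rightarrow> (nat \<Rightarrow> 'b) \<Rightarrow> bool" where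
  "rsat U I (REq i j) v = (v i = v j)"
| "rsat U I (RRel k xs) v =
     (k < length I \<and> length xs = fst (I ! k) \<and> map v xs \<in> snd (I ! k))"
| "rsat U I (RNeg \<phi>) v = (\<not> rsat U I \<phi> v)"
| "rsat U I (RAnd \<phi> \<psi>) v = (rsat U I \<phi> v \<and> rsat U I \<psi> v)"
| "rsat U I (REx x \<phi>) v = (\<exists>a\<in>U. rsat U I \<phi> (v(x := a)))"

text \<open>Parameter-free definability of an n-ary relation: the formula must define R
  under every assignment into the carrier (so variables other than 0..n-1 carry no
  parameters).\<close>
definition rdefinable :: "'b set \<Rightarrow> (nat \<times> 'b list set) list \<Rightarrow> nat \<Rightarrow> 'b list set \<Rightarrow> bool" where
  "rdefinable U I n R \<longleftrightarrow>
     R \<subseteq> {xs. length xs = n \<and> set xs \<subseteq> U} \<and>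
     (\<exists>\<phi>. \<forall>v. (\<forall>i. v i \<in> U) \<longrightarrow> (map v [0..<n] \<in> R \<longleftrightarrow> rsat U I \<phi> v))"

definition Co :: "'b set \<Rightarrow> (nat \<times> 'b list set) list \<Rightarrow> (nat \<times> 'b list set) set" where
  "Co U I = {(n, R). n \<ge> 1 \<and> rdefinable U I n R}"

definition Aut :: "'b set \<Rightarrow> (nat \<times> 'b list set) list \<Rightarrow> ('b \<Rightarrow> 'b) set" where
  "Aut U I = {f. bij_betw f U U \<and> (\<forall>x. x \<notin> U \<longrightarrow> f x = x) \<and>
      (\<forall>(n, R)\<in>set I. \<forall>xs. length xs = n \<and> set xs \<subseteq> U \<longrightarrow> (map f xs \<in> R \<longleftrightarrow> xs \<in> R))}"

datatype ftm = FVar nat | FZero | FOne | FAdd ftm ftm | FMul ftm ftm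

datatype ffm = FEq ftm ftm | FLe ftm ftm | FNeg ffm | FAnd ffm ffm | FEx nat ffm

fun feval :: "ftm \<Rightarrow> (nat \<Rightarrow> 'a::field) \<Rightarrow> 'a" where
  "feval (FVar i) v = v i"
| "feval FZero v = 0"
| "feval FOne v = 1"
| "feval (FAdd s t) v = feval s v + feval t v"
| "feval (FMul s t) v = feval s v * feval t v"

fun fsat :: "('a::field \<Rightarrow> 'a \<Rightarrow> bool) \<Rightarrow> ffm \<Rightarrow> (nat \<Rightarrow> 'a) \<Rightarrow> bool" where
  "fsat le (FEq s t) v = (feval s v = feval t v)"
| "fsat le (FLe s t) v = le (feval s v) (feval t v)"
| "fsat le (FNeg \<phi>) v = (\<not> fsat le \<phi> v)"
| "fsat le (FAnd \<phi> \<psi>) v = (fsat le \<phi> v \<and> fsat le \<psi> v)"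
| "fsat le (FEx x \<phi>) v = (\<exists>a. fsat le \<phi> (v(x := a)))"

fun le_free :: "ffm \<Rightarrow> bool" where
  "le_free (FEq s t) = True"
| "le_free (FLe s t) = False"
| "le_free (FNeg \<phi>) = le_free \<phi>"
| "le_free (FAnd \<phi> \<psi>) = (le_free \<phi> \<and> le_free \<psi>)"
| "le_free (FEx x \<phi>) = le_free \<phi>"

text \<open>isord = True: the ordered field (F,+,*,0,1,le); isord = False: the field
  (F,+,*,0,1), whose language has no order symbol.\<close>
definition fdefinable :: "bool \<Rightarrow> ('a::field \<Rightarrow> 'a \<Rightarrow> bool) \<Rightarrow> nat \<Rightarrow> 'a list set \<Rightarrow> bool" where
  "fdefinable isord le n R \<longleftrightarrow>
     R \<subseteq> {xs. length xs = n} \<and>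
     (\<exists>\<phi>. (\<not> isord \<longrightarrow> le_free \<phi>) \<and> (\<forall>v. map v [0..<n] \<in> R \<longleftrightarrow> fsat le \<phi> v))"

definition ordered_field_le :: "('a::field \<Rightarrow> 'a \<Rightarrow> bool) \<Rightarrow> bool" where
  "ordered_field_le le \<longleftrightarrow>
     (\<forall>x. le x x) \<and> (\<forall>x y. le x y \<and> le y x \<longrightarrow> x = y) \<and>
     (\<forall>x y z. le x y \<and> le y z \<longrightarrow> le x z) \<and> (\<forall>x y. le x y \<or> le y x) \<and>
     (\<forall>x y z. le x y \<longrightarrow> le (x + z) (y + z)) \<and>
     (\<forall>x y. le 0 x \<and> le 0 y \<longrightarrow> le 0 (x * y))"

definition Pts :: "nat \<Rightarrow> 'a list set" where
  "Pts d = {p. length p = d}"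

definition vadd :: "'a::field list \<Rightarrow> 'a list \<Rightarrow> 'a list" where
  "vadd p q = map2 (+) p q"

definition vsub :: "'a::field list \<Rightarrow> 'a list \<Rightarrow> 'a list" where
  "vsub p q = map2 (-) p q"

definition smul :: "'a::field \<Rightarrow> 'a list \<Rightarrow> 'a list" where
  "smul c p = map ((*) c) p"

definition Col :: "nat \<Rightarrow> 'a::field list list set" where
  "Col d = {[p, q, r] | p q r. p \<in> Pts d \<and> q \<in> Pts d \<and> r \<in> Pts d \<and>
     ((\<exists>t. q = vadd p (smul t (vsub r p))) \<or> r = p)}"

definition Bw :: "('a::field \<Rightarrow> 'a \<Rightarrow> bool) \<Rightarrow> nat \<Rightarrow> 'a list list set" where
  "Bw le d = {[p, q, r] | p q r. p \<in> Pts d \<and> q \<in> Pts d \<and> r \<in> Pts d \<and>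
     (\<exists>t. le 0 t \<and> le t 1 \<and> q = vadd p (smul t (vsub r p)))}"

text \<open>An n-ary relation on F^d is definable over F iff the dn-ary relation obtained by
  listing coordinates consecutively is.\<close>
definition pdefinable :: "bool \<Rightarrow> ('a::field \<Rightarrow> 'a \<Rightarrow> bool) \<Rightarrow> nat \<Rightarrow> nat \<Rightarrow> 'a list list set \<Rightarrow> bool" where
  "pdefinable isord le d n R \<longleftrightarrow>
     R \<subseteq> {xs. length xs = n \<and> set xs \<subseteq> Pts d} \<and> fdefinable isord le (d * n) (concat ` R)"

definition wf_geom :: "nat \<Rightarrow> (nat \<times> 'a list list set) list \<Rightarrow> bool" where
  "wf_geom d G \<longleftrightarrow> (\<forall>(n, R)\<in>set G. n \<ge> 1 \<and> R \<subseteq> {xs. length xs = n \<and> set xs \<subseteq> Pts d})"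

definition coord_geom :: "bool \<Rightarrow> ('a::field \<Rightarrow> 'a \<Rightarrow> bool) \<Rightarrow> nat \<Rightarrow> (nat \<times> 'a list list set) list \<Rightarrow> bool" where
  "coord_geom isord le d G \<longleftrightarrow> wf_geom d G \<and>
     (3, if isord then Bw le d else Col d) \<in> Co (Pts d) G"

definition FFD :: "bool \<Rightarrow> ('a::field \<Rightarrow> 'a \<Rightarrow> bool) \<Rightarrow> nat \<Rightarrow> (nat \<times> 'a list list set) list \<Rightarrow> bool" where
  "FFD isord le d G \<longleftrightarrow> coord_geom isord le d G \<and>
     (\<forall>(n, R)\<in>set G. pdefinable isord le d n R)"

definition affine_transf :: "nat \<Rightarrow> ('a::field list \<Rightarrow> 'a list) \<Rightarrow> bool" where
  "affine_transf d f \<longleftrightarrow>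
     (\<exists>M :: nat \<Rightarrow> nat \<Rightarrow> 'a. \<exists>b. length b = d \<and>
        (\<exists>N :: nat \<Rightarrow> nat \<Rightarrow> 'a. \<forall>i<d. \<forall>k<d. (\<Sum>j<d. M i j * N j k) = (if i = k then 1 else 0)) \<and>
        (\<forall>p\<in>Pts d. f p = map (\<lambda>i. (\<Sum>j<d. M i j * p ! j) + b ! i) [0..<d]))"

definition AffAut :: "nat \<Rightarrow> (nat \<times> 'a::field list list set) list \<Rightarrow> ('a list \<Rightarrow> 'a list) set" where
  "AffAut d G = Aut (Pts d) G \<inter> {f. affine_transf d f}"

end

theory Submission
  imports Defs
begin

section \<open>Logic infrastructure\<close>

fun fvr :: "rfm \<Rightarrow> nat set" where
  "fvr (REq i j) = {i, j}"
| "fvr (RRel k xs) = set xs"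
| "fvr (RNeg \<phi>) = fvr \<phi>"
| "fvr (RAnd \<phi> \<psi>) = fvr \<phi> \<union> fvr \<psi>"
| "fvr (REx x \<phi>) = fvr \<phi> - {x}"

lemma finite_fvr: "finite (fvr \<phi>)"
  by (induction \<phi>) auto

lemma rsat_cong: "(\<And>z. z \<in> fvr \<phi> \<Longrightarrow> v z = w z) \<Longrightarrow> rsat U I \<phi> v = rsat U I \<phi> w"
proof (induction \<phi> arbitrary: v w)
  case (RRel k xs v w)
  have e: "map v xs = map w xs" by (rule map_cong) (use RRel in auto)
  show ?case by (simp only: rsat.simps e)
next
  case (REx x \<phi> v w)
  have "\<And>a. rsat U I \<phi> (v(x := a)) = rsat U I \<phi> (w(x := a))"
    by (rule REx.IH) (use REx.prems in auto)
  then show ?case by simp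
next
  case (REq i j v w)
  then show ?case by simp
next
  case (RNeg \<phi> v w)
  have "rsat U I \<phi> v = rsat U I \<phi> w" by (rule RNeg.IH) (use RNeg.prems in auto)
  then show ?case by simp
next
  case (RAnd \<phi> \<psi> v w)
  have "rsat U I \<phi> v = rsat U I \<phi> w" by (rule RAnd.IH(1)) (use RAnd.prems in auto)
  moreover have "rsat U I \<psi> v = rsat U I \<psi> w" by (rule RAnd.IH(2)) (use RAnd.prems in auto)
  ultimately show ?case by simp
qed

definition expr :: "'b set \<Rightarrow> (nat \<times> 'b list set) list \<Rightarrow> ((nat \<Rightarrow> 'b) \<Rightarrow> bool) \<Rightarrow> bool" where
  "expr U I P \<longleftrightarrow> (\<exists>\<phi>. \<forall>v. (\<forall>i. v i \<in> U) \<longrightarrow> (P v \<longleftrightarrow> rsat U I \<phi> v))"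

lemma expr_cong:
  assumes "expr U I P" "\<And>v. (\<And>i. v i \<in> U) \<Longrightarrow> P v = Q v"
  shows "expr U I Q"
proof -
  from assms(1) obtain \<phi> where h: "\<forall>v. (\<forall>i. v i \<in> U) \<longrightarrow> (P v \<longleftrightarrow> rsat U I \<phi> v)"
    unfolding expr_def by blast
  show ?thesis unfolding expr_def
    by (rule exI[of _ \<phi>]) (use h assms(2) in auto)
qed

lemma expr_eq: "expr U I (\<lambda>v. v i = v j)"
  unfolding expr_def by (rule exI[of _ "REq i j"]) simp

lemma expr_not: "expr U I P \<Longrightarrow> expr U I (\<lambda>v. \<not> P v)"
proof -
  assume "expr U I P"
  then obtain \<phi> where h: "\<forall>v. (\<forall>i. v i \<in> U) \<longrightarrow> (P v \<longleftrightarrow> rsat U I \<phi> v)"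
    unfolding expr_def by blast
  show ?thesis unfolding expr_def
    by (rule exI[of _ "RNeg \<phi>"]) (use h in auto)
qed

lemma expr_conj: "expr U I P \<Longrightarrow> expr U I Q \<Longrightarrow> expr U I (\<lambda>v. P v \<and> Q v)"
proof -
  assume "expr U I P" "expr U I Q"
  then obtain \<phi> \<psi> where h: "\<forall>v. (\<forall>i. v i \<in> U) \<longrightarrow> (P v \<longleftrightarrow> rsat U I \<phi> v)"
    and h2: "\<forall>v. (\<forall>i. v i \<in> U) \<longrightarrow> (Q v \<longleftrightarrow> rsat U I \<psi> v)"
    unfolding expr_def by blast
  show ?thesis unfolding expr_def
    by (rule exI[of _ "RAnd \<phi> \<psi>"]) (use h h2 in auto)
qed

lemma expr_disj: "expr U I P \<Longrightarrow> expr U I Q \<Longrightarrow> expr U I (\<lambda>v. P v \<or> Q v)"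
proof -
  assume "expr U I P" "expr U I Q"
  then have "expr U I (\<lambda>v. \<not> (\<not> P v \<and> \<not> Q v))" by (intro expr_not expr_conj)
  then show ?thesis by (rule expr_cong) simp
qed

lemma expr_imp: "expr U I P \<Longrightarrow> expr U I Q \<Longrightarrow> expr U I (\<lambda>v. P v \<longrightarrow> Q v)"
proof -
  assume "expr U I P" "expr U I Q"
  then have "expr U I (\<lambda>v. \<not> P v \<or> Q v)" by (intro expr_not expr_disj)
  then show ?thesis by (rule expr_cong) simp
qed

lemma expr_iff: "expr U I P \<Longrightarrow> expr U I Q \<Longrightarrow> expr U I (\<lambda>v. P v \<longleftrightarrow> Q v)"
proof -
  assume "expr U I P" "expr U I Q"
  then have "expr U I (\<lambda>v. (P v \<longrightarrow> Q v) \<and> (Q v \<longrightarrow> P v))" by (intro expr_imp expr_conj)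
  then show ?thesis by (rule expr_cong) blast
qed

lemma expr_const: "expr U I (\<lambda>v. c)"
proof (cases c)
  case True
  have "expr U I (\<lambda>v. v 0 = v 0)" by (rule expr_eq)
  then show ?thesis by (rule expr_cong) (simp add: True)
next
  case False
  have "expr U I (\<lambda>v. \<not> v 0 = v 0)" by (rule expr_not[OF expr_eq])
  then show ?thesis by (rule expr_cong) (simp add: False)
qed

lemma expr_ex: "expr U I P \<Longrightarrow> expr U I (\<lambda>v. \<exists>a\<in>U. P (v(k := a)))"
  unfolding expr_def
proof (elim exE)
  fix \<phi> assume h: "\<forall>v. (\<forall>i. v i \<in> U) \<longrightarrow> P v = rsat U I \<phi> v"
  show "\<exists>\<phi>. \<forall>v. (\<forall>i. v i \<in> U) \<longrightarrow> (\<exists>a\<in>U. P (v(k := a))) = rsat U I \<phi> v"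
    by (rule exI[of _ "REx k \<phi>"]) (auto simp: h)
qed

lemma expr_all: "expr U I P \<Longrightarrow> expr U I (\<lambda>v. \<forall>a\<in>U. P (v(k := a)))"
proof -
  assume "expr U I P"
  then have "expr U I (\<lambda>v. \<not> (\<exists>a\<in>U. \<not> P (v(k := a))))"
    by (intro expr_not expr_ex)
  then show ?thesis by (rule expr_cong) blast
qed

lemma expr_ball_nat: "(\<And>j. j < (m::nat) \<Longrightarrow> expr U I (P j)) \<Longrightarrow> expr U I (\<lambda>v. \<forall>j<m. P j v)"
proof (induction m)
  case 0
  then show ?case using expr_const[of U I True] by simp
next
  case (Suc m)
  then have "expr U I (\<lambda>v. (\<forall>j<m. P j v) \<and> P m v)" by (intro expr_conj) auto
  then show ?case by (rule expr_cong) (auto simp: less_Suc_eq)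
qed

lemma expr_bex_nat: "(\<And>j. j < (m::nat) \<Longrightarrow> expr U I (P j)) \<Longrightarrow> expr U I (\<lambda>v. \<exists>j<m. P j v)"
proof -
  assume "\<And>j. j < m \<Longrightarrow> expr U I (P j)"
  then have "expr U I (\<lambda>v. \<not> (\<forall>j<m. \<not> P j v))" by (intro expr_not expr_ball_nat) auto
  then show ?thesis by (rule expr_cong) blast
qed

lemma rsat_subst:
  "\<exists>\<psi>. \<forall>v. (\<forall>i. v i \<in> U) \<longrightarrow> (rsat U I \<psi> v \<longleftrightarrow> rsat U I \<phi> (v \<circ> f))"
proof (induction \<phi> arbitrary: f)
  case (REq i j)
  show ?case by (rule exI[of _ "REq (f i) (f j)"]) simp
next
  case (RRel k xs)
  show ?case by (rule exI[of _ "RRel k (map f xs)"]) (simp add: comp_def)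
next
  case (RNeg \<phi>)
  then obtain \<psi> where "\<forall>v. (\<forall>i. v i \<in> U) \<longrightarrow> (rsat U I \<psi> v \<longleftrightarrow> rsat U I \<phi> (v \<circ> f))" by blast
  then show ?case by (intro exI[of _ "RNeg \<psi>"]) (simp add: comp_def)
next
  case (RAnd \<phi>1 \<phi>2)
  obtain \<psi>1 where 1: "\<forall>v. (\<forall>i. v i \<in> U) \<longrightarrow> (rsat U I \<psi>1 v \<longleftrightarrow> rsat U I \<phi>1 (v \<circ> f))"
    using RAnd.IH(1) by blast
  obtain \<psi>2 where 2: "\<forall>v. (\<forall>i. v i \<in> U) \<longrightarrow> (rsat U I \<psi>2 v \<longleftrightarrow> rsat U I \<phi>2 (v \<circ> f))"
    using RAnd.IH(2) by blast
  show ?case by (rule exI[of _ "RAnd \<psi>1 \<psi>2"]) (simp add: 1 2 comp_def)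
next
  case (REx x \<phi>)
  define y where "y = Suc (Max (insert 0 (f ` fvr \<phi>)))"
  have fin: "finite (insert 0 (f ` fvr \<phi>))" using finite_fvr by simp
  have yf: "f z \<noteq> y" if "z \<in> fvr \<phi>" for z
  proof -
    have "f z \<le> Max (insert 0 (f ` fvr \<phi>))" using fin that by (intro Max_ge) auto
    then show ?thesis unfolding y_def by simp
  qed
  obtain \<psi> where h: "\<forall>v. (\<forall>i. v i \<in> U) \<longrightarrow> (rsat U I \<psi> v \<longleftrightarrow> rsat U I \<phi> (v \<circ> f(x := y)))"
    using REx.IH by blast
  show ?case
  proof (rule exI[of _ "REx y \<psi>"], intro allI impI)
    fix v :: "nat \<Rightarrow> 'a" assume v: "\<forall>i. v i \<in> U"
    have eq: "rsat U I \<phi> (v(y := a) \<circ> f(x := y)) = rsat U I \<phi> ((v \<circ> f)(x := a))" for a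
      by (rule rsat_cong) (auto simp: yf)
    show "rsat U I (REx y \<psi>) v = rsat U I (REx x \<phi>) (v \<circ> f)"
      using v by (simp add: h eq)
  qed
qed

lemma expr_comp: "expr U I P \<Longrightarrow> expr U I (\<lambda>v. P (v \<circ> f))"
proof -
  assume "expr U I P"
  then obtain \<phi> where h: "\<forall>v. (\<forall>i. v i \<in> U) \<longrightarrow> (P v \<longleftrightarrow> rsat U I \<phi> v)"
    unfolding expr_def by blast
  obtain \<psi> where h2: "\<forall>v. (\<forall>i. v i \<in> U) \<longrightarrow> (rsat U I \<psi> v \<longleftrightarrow> rsat U I \<phi> (v \<circ> f))"
    using rsat_subst by blast
  show ?thesis unfolding expr_def
    by (rule exI[of _ \<psi>]) (simp add: h h2)
qed

definition Def :: "'b set \<Rightarrow> (nat \<times> 'b list set) list \<Rightarrow> nat \<Rightarrow> ('b list \<Rightarrow> bool) \<Rightarrow> bool" where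
  "Def U I n P \<longleftrightarrow> expr U I (\<lambda>v. P (map v [0..<n]))"

lemma Def_inst:
  assumes "Def U I n P" "length xs = n"
  shows "expr U I (\<lambda>v. P (map v xs))"
proof -
  have h: "expr U I (\<lambda>v. P (map (v \<circ> (\<lambda>i. xs ! i)) [0..<n]))"
    using assms(1) unfolding Def_def by (rule expr_comp)
  have eq: "map (v \<circ> (\<lambda>i. xs ! i)) [0..<n] = map v xs" for v :: "nat \<Rightarrow> 'b"
    using assms(2) by (auto simp: list_eq_iff_nth_eq)
  show ?thesis using h unfolding eq .
qed

lemma Def_intro: "expr U I (\<lambda>v. P (map v [0..<n])) \<Longrightarrow> Def U I n P"
  unfolding Def_def .

lemma Co_expr: "(n, R) \<in> Co U I \<Longrightarrow> expr U I (\<lambda>v. map v [0..<n] \<in> R)"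
  unfolding Co_def rdefinable_def expr_def by auto

lemma Co_intro:
  assumes "n \<ge> 1" "R \<subseteq> {xs. length xs = n \<and> set xs \<subseteq> U}" "expr U I (\<lambda>v. map v [0..<n] \<in> R)"
  shows "(n, R) \<in> Co U I"
  using assms unfolding Co_def rdefinable_def expr_def by auto

lemma Co_rel:
  assumes "(n, R) \<in> Co U I" "length xs = n"
  shows "expr U I (\<lambda>v. map v xs \<in> R)"
  using Def_inst[of U I n "\<lambda>ys. ys \<in> R" xs] Co_expr[OF assms(1)] assms(2)
  unfolding Def_def by simp

lemma Def_cong:
  assumes "Def U I n P" "\<And>xs. length xs = n \<Longrightarrow> set xs \<subseteq> U \<Longrightarrow> P xs = Q xs"
  shows "Def U I n Q"
  using assms(1) unfolding Def_def
  by (rule expr_cong) (rule assms(2), auto)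

lemma Def_ex_last:
  assumes "Def U I (Suc n) P"
  shows "Def U I n (\<lambda>xs. \<exists>a\<in>U. P (xs @ [a]))"
proof -
  have "expr U I (\<lambda>v. \<exists>a\<in>U. P (map (v(n := a)) [0..<Suc n]))"
    using assms unfolding Def_def by (rule expr_ex)
  moreover have "map (v(n := a)) [0..<Suc n] = map v [0..<n] @ [a]" for v :: "nat \<Rightarrow> 'b" and a
    by simp
  ultimately show ?thesis unfolding Def_def by simp
qed

lemma Def_ex_block:
  assumes "Def U I (n + k) P"
  shows "Def U I n (\<lambda>xs. \<exists>ys. length ys = k \<and> set ys \<subseteq> U \<and> P (xs @ ys))"
  using assms
proof (induction k arbitrary: P)
  case 0
  then have "Def U I n P" by simp
  then show ?case by (rule Def_cong) auto
next
  case (Suc k)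
  have "Def U I (n + k) (\<lambda>xs. \<exists>a\<in>U. P (xs @ [a]))"
    using Def_ex_last[of U I "n + k" P] Suc.prems by simp
  then have "Def U I n (\<lambda>xs. \<exists>ys. length ys = k \<and> set ys \<subseteq> U \<and> (\<exists>a\<in>U. P ((xs @ ys) @ [a])))"
    by (rule Suc.IH)
  then show ?case
  proof (rule Def_cong)
    fix xs
    show "(\<exists>ys. length ys = k \<and> set ys \<subseteq> U \<and> (\<exists>a\<in>U. P ((xs @ ys) @ [a]))) =
          (\<exists>ys. length ys = Suc k \<and> set ys \<subseteq> U \<and> P (xs @ ys))"
    proof
      assume "\<exists>ys. length ys = k \<and> set ys \<subseteq> U \<and> (\<exists>a\<in>U. P ((xs @ ys) @ [a]))"
      then obtain ys a where "length ys = k" "set ys \<subseteq> U" "a \<in> U" "P ((xs @ ys) @ [a])" by blast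
      then show "\<exists>ys. length ys = Suc k \<and> set ys \<subseteq> U \<and> P (xs @ ys)"
        by (intro exI[of _ "ys @ [a]"]) auto
    next
      assume "\<exists>ys. length ys = Suc k \<and> set ys \<subseteq> U \<and> P (xs @ ys)"
      then obtain ys where ys: "length ys = Suc k" "set ys \<subseteq> U" "P (xs @ ys)" by blast
      then obtain zs a where "ys = zs @ [a]"
        by (cases ys rule: rev_cases) auto
      with ys show "\<exists>ys. length ys = k \<and> set ys \<subseteq> U \<and> (\<exists>a\<in>U. P ((xs @ ys) @ [a]))"
        by (intro exI[of _ zs]) auto
    qed
  qed
qed

section \<open>Invariance under automorphisms\<close>

lemma Aut_bij: "f \<in> Aut U I \<Longrightarrow> bij_betw f U U"
  unfolding Aut_def by auto

lemma rsat_Aut: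
  assumes f: "f \<in> Aut U I" and v: "\<forall>i. v i \<in> U"
  shows "rsat U I \<phi> (f \<circ> v) = rsat U I \<phi> v"
  using v
proof (induction \<phi> arbitrary: v)
  case (REq i j v)
  have "inj_on f U" using Aut_bij[OF f] bij_betw_imp_inj_on by blast
  then show ?case using REq by (auto dest: inj_onD)
next
  case (RRel k xs v)
  show ?case
  proof (cases "k < length I \<and> length xs = fst (I ! k)")
    case True
    then have mem: "I ! k \<in> set I" by auto
    obtain n R where nR: "I ! k = (n, R)" by fastforce
    have s: "set (map v xs) \<subseteq> U" using RRel by auto
    have A: "\<forall>(n, R)\<in>set I. \<forall>xs. length xs = n \<and> set xs \<subseteq> U \<longrightarrow> (map f xs \<in> R \<longleftrightarrow> xs \<in> R)"
      using f unfolding Aut_def by blast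
    have m2: "(n, R) \<in> set I" using mem nR by simp
    have l: "length (map v xs) = n" using True nR by simp
    have "map f (map v xs) \<in> R \<longleftrightarrow> map v xs \<in> R"
      using A m2 l s by blast
    then show ?thesis using True nR by (simp add: comp_def)
  next
    case False
    then show ?thesis by auto
  qed
next
  case (REx x \<phi> v)
  have bij: "bij_betw f U U" using Aut_bij[OF f] .
  have "(\<exists>a\<in>U. rsat U I \<phi> ((f \<circ> v)(x := a))) = (\<exists>b\<in>U. rsat U I \<phi> ((f \<circ> v)(x := f b)))"
  proof
    assume "\<exists>a\<in>U. rsat U I \<phi> ((f \<circ> v)(x := a))"
    then obtain a where a: "a \<in> U" "rsat U I \<phi> ((f \<circ> v)(x := a))" by blast
    then obtain b where "b \<in> U" "a = f b" using bij unfolding bij_betw_def by blast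
    then show "\<exists>b\<in>U. rsat U I \<phi> ((f \<circ> v)(x := f b))" using a by blast
  next
    assume "\<exists>b\<in>U. rsat U I \<phi> ((f \<circ> v)(x := f b))"
    then obtain b where "b \<in> U" "rsat U I \<phi> ((f \<circ> v)(x := f b))" by blast
    moreover have "f b \<in> U" using bij \<open>b \<in> U\<close> by (auto simp: bij_betw_def)
    ultimately show "\<exists>a\<in>U. rsat U I \<phi> ((f \<circ> v)(x := a))" by blast
  qed
  also have "\<dots> = (\<exists>b\<in>U. rsat U I \<phi> (f \<circ> v(x := b)))"
    by (simp add: fun_upd_comp)
  also have "\<dots> = (\<exists>b\<in>U. rsat U I \<phi> (v(x := b)))"
  proof -
    have "\<And>b. b \<in> U \<Longrightarrow> rsat U I \<phi> (f \<circ> v(x := b)) = rsat U I \<phi> (v(x := b))"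
      by (rule REx.IH) (use REx.prems in auto)
    then show ?thesis by auto
  qed
  finally show ?case by (simp only: rsat.simps)
qed auto


section \<open>Vector algebra on lists\<close>

lemma length_vadd[simp]: "length (vadd p q) = min (length p) (length q)"
  by (simp add: vadd_def)
lemma length_vsub[simp]: "length (vsub p q) = min (length p) (length q)"
  by (simp add: vsub_def)
lemma length_smul[simp]: "length (smul c p) = length p"
  by (simp add: smul_def)
lemma nth_vadd[simp]: "i < length p \<Longrightarrow> i < length q \<Longrightarrow> vadd p q ! i = p ! i + q ! i"
  by (simp add: vadd_def)
lemma nth_vsub[simp]: "i < length p \<Longrightarrow> i < length q \<Longrightarrow> vsub p q ! i = p ! i - q ! i"
  by (simp add: vsub_def)
lemma nth_smul[simp]: "i < length p \<Longrightarrow> smul c p ! i = c * p ! i"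
  by (simp add: smul_def)

lemma Pts_iff[simp]: "p \<in> Pts d \<longleftrightarrow> length p = d"
  by (simp add: Pts_def)

lemma pt_eq: "length p = d \<Longrightarrow> length q = d \<Longrightarrow> p = q \<longleftrightarrow> (\<forall>i<d. p ! i = q ! i)"
  by (simp add: list_eq_iff_nth_eq)

lemma pt_neq: "length p = d \<Longrightarrow> length q = d \<Longrightarrow> p \<noteq> q \<longleftrightarrow> (\<exists>i<d. p ! i \<noteq> q ! i)"
  by (simp add: list_eq_iff_nth_eq)

definition col :: "'a::field list \<Rightarrow> 'a list \<Rightarrow> 'a list \<Rightarrow> bool" where
  "col p q r \<longleftrightarrow> (\<exists>t. q = vadd p (smul t (vsub r p))) \<or> r = p"

lemma comb_eq:
  assumes "length p = d" "length q = d" "length r = d"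
  shows "q = vadd p (smul t (vsub r p)) \<longleftrightarrow> (\<forall>i<d. q ! i = p ! i + t * (r ! i - p ! i))"
  using assms by (simp add: list_eq_iff_nth_eq)

lemma col_iff:
  assumes "length p = d" "length q = d" "length r = d"
  shows "col p q r \<longleftrightarrow> (\<exists>t. \<forall>i<d. q ! i = p ! i + t * (r ! i - p ! i)) \<or> (\<forall>i<d. r ! i = p ! i)"
  unfolding col_def using comb_eq[OF assms] pt_eq[OF assms(3,1)] by simp

lemma col_ne:
  assumes "length p = d" "length q = d" "length r = d" "r \<noteq> p"
  shows "col p q r \<longleftrightarrow> (\<exists>t. \<forall>i<d. q ! i = p ! i + t * (r ! i - p ! i))"
  unfolding col_def using comb_eq[OF assms(1-3)] assms(4) by simp

lemma col_intro:
  "length p = d \<Longrightarrow> length q = d \<Longrightarrow> length r = d \<Longrightarrow> \<forall>i<d. q ! i = p ! i + t * (r ! i - p ! i) \<Longrightarrow> col p q r"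
  unfolding col_def by (rule disjI1, rule exI[of _ t]) (simp add: list_eq_iff_nth_eq)

lemma Col_mem: "[p, q, r] \<in> Col d \<longleftrightarrow> length p = d \<and> length q = d \<and> length r = d \<and> col p q r"
  unfolding Col_def col_def by auto

definition nc :: "'a::field list \<Rightarrow> 'a list \<Rightarrow> 'a list \<Rightarrow> bool" where
  "nc a b c \<longleftrightarrow> a \<noteq> b \<and> \<not> col a c b"

lemma nc_indep:
  assumes l: "length a = d" "length b = d" "length c = d" and n: "nc a b c"
    and e: "\<forall>i<d. x * (b ! i - a ! i) + y * (c ! i - a ! i) = 0"
  shows "x = 0 \<and> y = 0"
proof -
  have ab: "a \<noteq> b" and ncol: "\<not> col a c b" using n unfolding nc_def by auto
  have y0: "y = 0"
  proof (rule ccontr)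
    assume y: "y \<noteq> 0"
    have "c ! i = a ! i + (- x / y) * (b ! i - a ! i)" if i: "i < d" for i
    proof -
      have "x * (b ! i - a ! i) + y * (c ! i - a ! i) = 0" using e i by blast
      then show ?thesis using y by (simp add: field_simps)
    qed
    then have "col a c b" using col_iff[OF l(1,3,2)] by blast
    then show False using ncol by simp
  qed
  obtain i where i: "i < d" "b ! i \<noteq> a ! i" using pt_neq[OF l(2,1)] ab by auto
  have "x * (b ! i - a ! i) = 0" using e i y0 by auto
  then have "x = 0" using i by simp
  then show ?thesis using y0 by simp
qed

definition mk :: "nat \<Rightarrow> (nat \<Rightarrow> 'a) \<Rightarrow> 'a list" where
  "mk d f = map f [0..<d]"

lemma length_mk[simp]: "length (mk d f) = d"
  by (simp add: mk_def)
lemma nth_mk[simp]: "i < d \<Longrightarrow> mk d f ! i = f i"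
  by (simp add: mk_def)

lemma col_refl1: "length a = d \<Longrightarrow> length b = d \<Longrightarrow> col a a b"
  unfolding col_def by (rule disjI1, rule exI[of _ 0]) (simp add: list_eq_iff_nth_eq)

lemma col_refl2: "length a = d \<Longrightarrow> length b = d \<Longrightarrow> col a b b"
  unfolding col_def by (rule disjI1, rule exI[of _ 1]) (simp add: list_eq_iff_nth_eq)

lemma nc_ca: "length a = d \<Longrightarrow> length b = d \<Longrightarrow> nc a b c \<Longrightarrow> c \<noteq> a"
  using col_refl1[of a d b] unfolding nc_def by auto

lemma nc_cb: "length a = d \<Longrightarrow> length b = d \<Longrightarrow> nc a b c \<Longrightarrow> c \<noteq> b"
  using col_refl2[of a d b] unfolding nc_def by auto

lemma three_avoid:
  assumes "\<exists>r1 r2 r3 :: 'a. r1 \<noteq> r2 \<and> r1 \<noteq> r3 \<and> r2 \<noteq> r3"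
  shows "\<exists>s::'a::field. s \<noteq> u \<and> s \<noteq> w"
  using assms by metis

definition copl :: "nat \<Rightarrow> 'a::field list \<Rightarrow> 'a list \<Rightarrow> 'a list \<Rightarrow> 'a list \<Rightarrow> bool" where
  "copl d a b c x \<longleftrightarrow> (\<exists>y\<in>Pts d. \<exists>z\<in>Pts d. col a y b \<and> col a z c \<and> y \<noteq> z \<and> col y x z)"

lemma copl_iff:
  fixes a b c x :: "'a::field list"
  assumes l: "length a = d" "length b = d" "length c = d" "length x = d" and n: "nc a b c"
    and three: "\<exists>r1 r2 r3 :: 'a. r1 \<noteq> r2 \<and> r1 \<noteq> r3 \<and> r2 \<noteq> r3"
  shows "copl d a b c x \<longleftrightarrow> (\<exists>la mu. \<forall>i<d. x ! i = a ! i + la * (b ! i - a ! i) + mu * (c ! i - a ! i))"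
proof
  have ab: "b \<noteq> a" using n unfolding nc_def by auto
  have ac: "c \<noteq> a" using nc_ca[OF l(1,2) n] .
  assume "copl d a b c x"
  then obtain y z where y: "length y = d" and z: "length z = d" and cy: "col a y b" and cz: "col a z c"
    and yz: "y \<noteq> z" and cx: "col y x z" unfolding copl_def by auto
  obtain t1 where t1: "\<forall>i<d. y ! i = a ! i + t1 * (b ! i - a ! i)" using cy col_ne[OF l(1) y l(2) ab] by blast
  obtain t2 where t2: "\<forall>i<d. z ! i = a ! i + t2 * (c ! i - a ! i)" using cz col_ne[OF l(1) z l(3) ac] by blast
  obtain t where t: "\<forall>i<d. x ! i = y ! i + t * (z ! i - y ! i)" using cx col_ne[OF y l(4) z] yz by auto
  show "\<exists>la mu. \<forall>i<d. x ! i = a ! i + la * (b ! i - a ! i) + mu * (c ! i - a ! i)"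
  proof (intro exI allI impI)
    fix i assume i: "i < d"
    show "x ! i = a ! i + ((1 - t) * t1) * (b ! i - a ! i) + (t * t2) * (c ! i - a ! i)"
      using t[rule_format, OF i] t1[rule_format, OF i] t2[rule_format, OF i] by (simp add: algebra_simps)
  qed
next
  assume "\<exists>la mu. \<forall>i<d. x ! i = a ! i + la * (b ! i - a ! i) + mu * (c ! i - a ! i)"
  then obtain la mu where x: "\<forall>i<d. x ! i = a ! i + la * (b ! i - a ! i) + mu * (c ! i - a ! i)" by blast
  obtain s where s0: "s \<noteq> 0" and sl: "s \<noteq> la" using three_avoid[of 0 la] three by blast
  have sl': "s - la \<noteq> 0" using sl by simp
  define y where "y = mk d (\<lambda>i. a ! i + s * (b ! i - a ! i))"
  define z where "z = mk d (\<lambda>i. a ! i + (s * mu / (s - la)) * (c ! i - a ! i))"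
  have ly: "length y = d" and lz: "length z = d" by (simp_all add: y_def z_def)
  have ab: "b \<noteq> a" using n unfolding nc_def by auto
  have ac: "c \<noteq> a" using nc_ca[OF l(1,2) n] .
  have "\<forall>i<d. y ! i = a ! i + s * (b ! i - a ! i)" by (simp add: y_def)
  then have cy: "col a y b" using col_ne[OF l(1) ly l(2) ab] by blast
  have "\<forall>i<d. z ! i = a ! i + (s * mu / (s - la)) * (c ! i - a ! i)" by (simp add: z_def)
  then have cz: "col a z c" using col_ne[OF l(1) lz l(3) ac] by blast
  have yz: "y \<noteq> z"
  proof
    assume "y = z"
    then have "\<forall>i<d. s * (b ! i - a ! i) + (- (s * mu / (s - la))) * (c ! i - a ! i) = 0"
      by (auto simp: y_def z_def list_eq_iff_nth_eq)
    then show False using nc_indep[OF l(1-3) n] s0 by blast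
  qed
  have "col y x z"
  proof -
    have "\<forall>i<d. x ! i = y ! i + ((s - la) / s) * (z ! i - y ! i)"
    proof (intro allI impI)
      fix i assume i: "i < d"
      have "y ! i + ((s - la) / s) * (z ! i - y ! i) = a ! i + la * (b ! i - a ! i) + mu * (c ! i - a ! i)"
        using i s0 sl' by (simp add: y_def z_def field_simps)
      then show "x ! i = y ! i + ((s - la) / s) * (z ! i - y ! i)"
        using x[rule_format, OF i] by simp
    qed
    then show ?thesis by (rule col_intro[OF ly l(4) lz])
  qed
  moreover have "y \<in> Pts d" "z \<in> Pts d" using ly lz by simp_all
  ultimately show "copl d a b c x" unfolding copl_def using cy cz yz by blast
qed

definition meet :: "nat \<Rightarrow> 'a::field list \<Rightarrow> 'a list \<Rightarrow> 'a list \<Rightarrow> 'a list \<Rightarrow> bool" where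
  "meet d p q r s \<longleftrightarrow> (\<exists>m\<in>Pts d. col p m q \<and> col r m s)"

definition pg0 :: "nat \<Rightarrow> 'a::field list \<Rightarrow> 'a list \<Rightarrow> 'a list \<Rightarrow> 'a list \<Rightarrow> bool" where
  "pg0 d a b c x \<longleftrightarrow> copl d a b c x \<and> c \<noteq> x \<and> b \<noteq> x \<and> \<not> meet d c x a b \<and> \<not> meet d b x a c"

lemma pg0_iff:
  fixes a b c x :: "'a::field list"
  assumes l: "length a = d" "length b = d" "length c = d" "length x = d" and n: "nc a b c"
    and three: "\<exists>r1 r2 r3 :: 'a. r1 \<noteq> r2 \<and> r1 \<noteq> r3 \<and> r2 \<noteq> r3"
  shows "pg0 d a b c x \<longleftrightarrow> (\<forall>i<d. x ! i = b ! i + c ! i - a ! i)"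
proof
  have ab: "b \<noteq> a" using n unfolding nc_def by auto
  have ac: "c \<noteq> a" using nc_ca[OF l(1,2) n] .
  assume p: "pg0 d a b c x"
  then obtain la mu where x: "\<forall>i<d. x ! i = a ! i + la * (b ! i - a ! i) + mu * (c ! i - a ! i)"
    using copl_iff[OF l n three] unfolding pg0_def by blast
  have cx: "c \<noteq> x" and bx: "b \<noteq> x" and nm1: "\<not> meet d c x a b" and nm2: "\<not> meet d b x a c"
    using p unfolding pg0_def by auto
  have mu1: "mu = 1"
  proof (rule ccontr)
    assume mu: "mu \<noteq> 1"
    then have mu': "1 - mu \<noteq> 0" by simp
    define m where "m = mk d (\<lambda>i. a ! i + (la / (1 - mu)) * (b ! i - a ! i))"
    have lm: "length m = d" by (simp add: m_def)
    have "\<forall>i<d. m ! i = a ! i + (la / (1 - mu)) * (b ! i - a ! i)" by (simp add: m_def)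
    then have c1: "col a m b" using col_ne[OF l(1) lm l(2) ab] by blast
    have "\<forall>i<d. m ! i = c ! i + (1 / (1 - mu)) * (x ! i - c ! i)"
    proof (intro allI impI)
      fix i assume i: "i < d"
      have "c ! i + (1 / (1 - mu)) * ((a ! i + la * (b ! i - a ! i) + mu * (c ! i - a ! i)) - c ! i)
            = a ! i + (la / (1 - mu)) * (b ! i - a ! i)"
        using mu' by (simp add: field_simps)
      then show "m ! i = c ! i + (1 / (1 - mu)) * (x ! i - c ! i)"
        using x[rule_format, OF i] i by (simp add: m_def)
    qed
    then have c2: "col c m x" by (rule col_intro[OF l(3) lm l(4)])
    have "meet d c x a b" unfolding meet_def using lm c1 c2 by auto
    then show False using nm1 by simp
  qed
  have la1: "la = 1"
  proof (rule ccontr)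
    assume la: "la \<noteq> 1"
    then have la': "1 - la \<noteq> 0" by simp
    define m where "m = mk d (\<lambda>i. a ! i + (mu / (1 - la)) * (c ! i - a ! i))"
    have lm: "length m = d" by (simp add: m_def)
    have "\<forall>i<d. m ! i = a ! i + (mu / (1 - la)) * (c ! i - a ! i)" by (simp add: m_def)
    then have c1: "col a m c" using col_ne[OF l(1) lm l(3) ac] by blast
    have "\<forall>i<d. m ! i = b ! i + (1 / (1 - la)) * (x ! i - b ! i)"
    proof (intro allI impI)
      fix i assume i: "i < d"
      have "b ! i + (1 / (1 - la)) * ((a ! i + la * (b ! i - a ! i) + mu * (c ! i - a ! i)) - b ! i)
            = a ! i + (mu / (1 - la)) * (c ! i - a ! i)"
        using la' by (simp add: field_simps)
      then show "m ! i = b ! i + (1 / (1 - la)) * (x ! i - b ! i)"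
        using x[rule_format, OF i] i by (simp add: m_def)
    qed
    then have c2: "col b m x" by (rule col_intro[OF l(2) lm l(4)])
    have "meet d b x a c" unfolding meet_def using lm c1 c2 by auto
    then show False using nm2 by simp
  qed
  show "\<forall>i<d. x ! i = b ! i + c ! i - a ! i"
    using x mu1 la1 by (simp add: algebra_simps)
next
  assume x: "\<forall>i<d. x ! i = b ! i + c ! i - a ! i"
  have ab: "a \<noteq> b" using n unfolding nc_def by auto
  have ac: "c \<noteq> a" using nc_ca[OF l(1,2) n] .
  have cp: "copl d a b c x"
    unfolding copl_iff[OF l n three] by (rule exI[of _ 1], rule exI[of _ 1]) (simp add: x)
  have cx: "c \<noteq> x"
  proof
    assume "c = x"
    then have "\<forall>i<d. a ! i = b ! i" using x by auto
    then show False using ab pt_eq[OF l(1,2)] by simp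
  qed
  have bx: "b \<noteq> x"
  proof
    assume "b = x"
    then have "\<forall>i<d. c ! i = a ! i" using x by auto
    then show False using ac pt_eq[OF l(3,1)] by simp
  qed
  have m1: "\<not> meet d c x a b"
  proof
    assume "meet d c x a b"
    then obtain m where lm: "length m = d" and c1: "col c m x" and c2: "col a m b" unfolding meet_def by auto
    obtain t where t: "\<forall>i<d. m ! i = c ! i + t * (x ! i - c ! i)" using c1 col_ne[OF l(3) lm l(4)] cx by auto
    obtain s where s: "\<forall>i<d. m ! i = a ! i + s * (b ! i - a ! i)" using c2 col_ne[OF l(1) lm l(2)] ab by auto
    have "\<forall>i<d. (t - s) * (b ! i - a ! i) + 1 * (c ! i - a ! i) = 0"
    proof (intro allI impI)
      fix i assume i: "i < d"
      show "(t - s) * (b ! i - a ! i) + 1 * (c ! i - a ! i) = 0"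
        using t[rule_format, OF i] s[rule_format, OF i] x[rule_format, OF i] by algebra
    qed
    then have "t - s = 0 \<and> (1::'a) = 0" by (rule nc_indep[OF l(1-3) n])
    then show False by simp
  qed
  have m2: "\<not> meet d b x a c"
  proof
    assume "meet d b x a c"
    then obtain m where lm: "length m = d" and c1: "col b m x" and c2: "col a m c" unfolding meet_def by auto
    obtain t where t: "\<forall>i<d. m ! i = b ! i + t * (x ! i - b ! i)" using c1 col_ne[OF l(2) lm l(4)] bx by auto
    obtain s where s: "\<forall>i<d. m ! i = a ! i + s * (c ! i - a ! i)" using c2 col_ne[OF l(1) lm l(3)] ac by auto
    have "\<forall>i<d. 1 * (b ! i - a ! i) + (t - s) * (c ! i - a ! i) = 0"
    proof (intro allI impI)
      fix i assume i: "i < d"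
      show "1 * (b ! i - a ! i) + (t - s) * (c ! i - a ! i) = 0"
        using t[rule_format, OF i] s[rule_format, OF i] x[rule_format, OF i] by algebra
    qed
    then have "(1::'a) = 0 \<and> t - s = 0" by (rule nc_indep[OF l(1-3) n])
    then show False by simp
  qed
  show "pg0 d a b c x" unfolding pg0_def using cp cx bx m1 m2 by simp
qed

lemma exists_off:
  fixes a b :: "'a::field list"
  assumes l: "length a = d" "length b = d" and ab: "a \<noteq> b" and d2: "2 \<le> d"
  shows "\<exists>e. length e = d \<and> \<not> col a e b"
proof (rule ccontr)
  assume h: "\<not> ?thesis"
  define e0 where "e0 = mk d (\<lambda>i. a ! i + (if i = 0 then 1 else 0))"
  define e1 where "e1 = mk d (\<lambda>i. a ! i + (if i = 1 then 1 else 0))"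
  have "col a e0 b" using h by (auto simp: e0_def)
  then obtain t0 where t0: "\<forall>i<d. e0 ! i = a ! i + t0 * (b ! i - a ! i)"
    using col_ne[OF l(1) _ l(2)] ab by (auto simp: e0_def)
  have "col a e1 b" using h by (auto simp: e1_def)
  then obtain t1 where t1: "\<forall>i<d. e1 ! i = a ! i + t1 * (b ! i - a ! i)"
    using col_ne[OF l(1) _ l(2)] ab by (auto simp: e1_def)
  have "e0 ! 0 = a ! 0 + t0 * (b ! 0 - a ! 0)" using t0 d2 by auto
  then have A: "1 = t0 * (b ! 0 - a ! 0)" using d2 by (simp add: e0_def)
  have "e1 ! 0 = a ! 0 + t1 * (b ! 0 - a ! 0)" using t1 d2 by auto
  then have B: "0 = t1 * (b ! 0 - a ! 0)" using d2 by (simp add: e1_def)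
  have "b ! 0 - a ! 0 \<noteq> 0" using A by auto
  then have "t1 = 0" using B by simp
  moreover have "e1 ! 1 = a ! 1 + t1 * (b ! 1 - a ! 1)" using t1 d2 by auto
  ultimately show False using d2 by (simp add: e1_def)
qed

definition pg :: "nat \<Rightarrow> 'a::field list \<Rightarrow> 'a list \<Rightarrow> 'a list \<Rightarrow> 'a list \<Rightarrow> bool" where
  "pg d a b c x \<longleftrightarrow> (a = b \<and> x = c) \<or> (nc a b c \<and> pg0 d a b c x) \<or>
     (a \<noteq> b \<and> col a c b \<and> (\<exists>e\<in>Pts d. \<exists>f\<in>Pts d. nc a b e \<and> pg0 d a b e f \<and> nc e f c \<and> pg0 d e f c x))"

lemma pg_iff:
  fixes a b c x :: "'a::field list"
  assumes l: "length a = d" "length b = d" "length c = d" "length x = d" and d2: "2 \<le> d"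
    and three: "\<exists>r1 r2 r3 :: 'a. r1 \<noteq> r2 \<and> r1 \<noteq> r3 \<and> r2 \<noteq> r3"
  shows "pg d a b c x \<longleftrightarrow> (\<forall>i<d. x ! i = b ! i + c ! i - a ! i)"
proof
  assume "pg d a b c x"
  then consider "a = b" "x = c" | "nc a b c" "pg0 d a b c x" |
    e f where "length e = d" "length f = d" "nc a b e" "pg0 d a b e f" "nc e f c" "pg0 d e f c x"
    unfolding pg_def by auto
  then show "\<forall>i<d. x ! i = b ! i + c ! i - a ! i"
  proof cases
    case 1 then show ?thesis by simp
  next
    case 2 then show ?thesis using pg0_iff[OF l 2(1) three] by simp
  next
    case (3 e f)
    have f: "\<forall>i<d. f ! i = b ! i + e ! i - a ! i" using pg0_iff[OF l(1,2) 3(1,2) 3(3) three] 3(4) by simp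
    have x: "\<forall>i<d. x ! i = f ! i + c ! i - e ! i" using pg0_iff[OF 3(1,2) l(3,4) 3(5) three] 3(6) by simp
    show ?thesis using f x by simp
  qed
next
  assume x: "\<forall>i<d. x ! i = b ! i + c ! i - a ! i"
  show "pg d a b c x"
  proof (cases "a = b")
    case True
    then have "x = c" using x pt_eq[OF l(4,3)] by simp
    then show ?thesis unfolding pg_def using True by simp
  next
    case ab: False
    show ?thesis
    proof (cases "col a c b")
      case False
      then have n: "nc a b c" unfolding nc_def using ab by simp
      then show ?thesis unfolding pg_def using pg0_iff[OF l n three] x by simp
    next
      case True
      obtain e where le: "length e = d" and ne: "\<not> col a e b" using exists_off[OF l(1,2) ab d2] by blast
      have n1: "nc a b e" unfolding nc_def using ab ne by simp
      define f where "f = mk d (\<lambda>i. b ! i + e ! i - a ! i)"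
      have lf: "length f = d" by (simp add: f_def)
      have p1: "pg0 d a b e f" using pg0_iff[OF l(1,2) le lf n1 three] by (simp add: f_def)
      have ef: "e \<noteq> f"
      proof
        assume "e = f"
        then have "\<forall>i<d. b ! i = a ! i" by (auto simp: f_def list_eq_iff_nth_eq)
        then show False using ab pt_eq[OF l(1,2)] by simp
      qed
      have nc2: "\<not> col e c f"
      proof
        assume "col e c f"
        then obtain t where t: "\<forall>i<d. c ! i = e ! i + t * (f ! i - e ! i)" using col_ne[OF le l(3) lf] ef by auto
        obtain s where s: "\<forall>i<d. c ! i = a ! i + s * (b ! i - a ! i)"
          using True col_ne[OF l(1,3,2)] ab by auto
        have "\<forall>i<d. e ! i = a ! i + (s - t) * (b ! i - a ! i)"
        proof (intro allI impI)
          fix i assume i: "i < d"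
          show "e ! i = a ! i + (s - t) * (b ! i - a ! i)"
            using t[rule_format, OF i] s[rule_format, OF i] i by (simp add: f_def algebra_simps)
        qed
        then have "col a e b" by (rule col_intro[OF l(1) le l(2)])
        then show False using ne by simp
      qed
      have n2: "nc e f c" unfolding nc_def using ef nc2 by simp
      have p2: "pg0 d e f c x" using pg0_iff[OF le lf l(3,4) n2 three] x by (simp add: f_def)
      have "e \<in> Pts d" "f \<in> Pts d" using le lf by simp_all
      then have h: "\<exists>e\<in>Pts d. \<exists>f\<in>Pts d. nc a b e \<and> pg0 d a b e f \<and> nc e f c \<and> pg0 d e f c x"
        using n1 p1 n2 p2 by blast
      show ?thesis unfolding pg_def by (intro disjI2 conjI ab True h)
    qed
  qed
qed


definition pard :: "nat \<Rightarrow> 'a::field list \<Rightarrow> 'a list \<Rightarrow> 'a list \<Rightarrow> 'a list \<Rightarrow> bool" where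
  "pard d a b c x \<longleftrightarrow> (\<exists>y\<in>Pts d. pg d a b c y \<and> col c x y)"

lemma pard_iff:
  fixes a b c x :: "'a::field list"
  assumes l: "length a = d" "length b = d" "length c = d" "length x = d" and d2: "2 \<le> d"
    and three: "\<exists>r1 r2 r3 :: 'a. r1 \<noteq> r2 \<and> r1 \<noteq> r3 \<and> r2 \<noteq> r3" and ab: "a \<noteq> b"
  shows "pard d a b c x \<longleftrightarrow> (\<exists>t. \<forall>i<d. x ! i = c ! i + t * (b ! i - a ! i))"
proof
  assume "pard d a b c x"
  then obtain y where ly: "length y = d" and p: "pg d a b c y" and cxy: "col c x y" unfolding pard_def by auto
  have y: "\<forall>i<d. y ! i = b ! i + c ! i - a ! i" using pg_iff[OF l(1-3) ly d2 three] p by simp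
  have yc: "y \<noteq> c"
  proof
    assume "y = c"
    then have "\<forall>i<d. a ! i = b ! i" using y by auto
    then show False using ab pt_eq[OF l(1,2)] by simp
  qed
  obtain t where t: "\<forall>i<d. x ! i = c ! i + t * (y ! i - c ! i)" using cxy col_ne[OF l(3,4) ly yc] by blast
  show "\<exists>t. \<forall>i<d. x ! i = c ! i + t * (b ! i - a ! i)"
    by (rule exI[of _ t]) (use t y in simp)
next
  assume "\<exists>t. \<forall>i<d. x ! i = c ! i + t * (b ! i - a ! i)"
  then obtain t where t: "\<forall>i<d. x ! i = c ! i + t * (b ! i - a ! i)" by blast
  define y where "y = mk d (\<lambda>i. b ! i + c ! i - a ! i)"
  have ly: "length y = d" by (simp add: y_def)
  have p: "pg d a b c y" using pg_iff[OF l(1-3) ly d2 three] by (simp add: y_def)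
  have "\<forall>i<d. x ! i = c ! i + t * (y ! i - c ! i)" using t by (simp add: y_def)
  then have "col c x y" by (rule col_intro[OF l(3,4) ly])
  moreover have "y \<in> Pts d" using ly by simp
  ultimately show "pard d a b c x" unfolding pard_def using p by blast
qed

definition sm1 :: "nat \<Rightarrow> 'a::field list \<Rightarrow> 'a list \<Rightarrow> 'a list \<Rightarrow> 'a list \<Rightarrow> 'a list \<Rightarrow> bool" where
  "sm1 d og e x p q \<longleftrightarrow> col og q p \<and> pard d e p x q"

lemma sm1_iff:
  fixes og e x p q :: "'a::field list"
  assumes l: "length og = d" "length e = d" "length x = d" "length p = d" "length q = d" and d2: "2 \<le> d"
    and three: "\<exists>r1 r2 r3 :: 'a. r1 \<noteq> r2 \<and> r1 \<noteq> r3 \<and> r2 \<noteq> r3"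
    and n: "nc og e p" and x: "\<forall>i<d. x ! i = og ! i + s * (e ! i - og ! i)"
  shows "sm1 d og e x p q \<longleftrightarrow> (\<forall>i<d. q ! i = og ! i + s * (p ! i - og ! i))"
proof
  have po: "p \<noteq> og" using nc_ca[OF l(1,2) n] .
  have pe: "e \<noteq> p" using nc_cb[OF l(1,2) n] by simp
  assume "sm1 d og e x p q"
  then have c: "col og q p" and pd: "pard d e p x q" unfolding sm1_def by auto
  obtain mu where mu: "\<forall>i<d. q ! i = og ! i + mu * (p ! i - og ! i)" using c col_ne[OF l(1,5,4) po] by blast
  obtain la where la: "\<forall>i<d. q ! i = x ! i + la * (p ! i - e ! i)"
    using pd pard_iff[OF l(2,4,3,5) d2 three pe] by blast
  have "\<forall>i<d. (la - s) * (e ! i - og ! i) + (mu - la) * (p ! i - og ! i) = 0"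
  proof (intro allI impI)
    fix i assume i: "i < d"
    show "(la - s) * (e ! i - og ! i) + (mu - la) * (p ! i - og ! i) = 0"
      using mu[rule_format, OF i] la[rule_format, OF i] x[rule_format, OF i] by algebra
  qed
  then have "la - s = 0 \<and> mu - la = 0" by (rule nc_indep[OF l(1,2,4) n])
  then have "mu = s" by simp
  then show "\<forall>i<d. q ! i = og ! i + s * (p ! i - og ! i)" using mu by simp
next
  have po: "p \<noteq> og" using nc_ca[OF l(1,2) n] .
  have pe: "e \<noteq> p" using nc_cb[OF l(1,2) n] by simp
  assume q: "\<forall>i<d. q ! i = og ! i + s * (p ! i - og ! i)"
  have c: "col og q p" using q by (rule col_intro[OF l(1,5,4)])
  have "\<forall>i<d. q ! i = x ! i + s * (p ! i - e ! i)"
  proof (intro allI impI)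
    fix i assume i: "i < d"
    show "q ! i = x ! i + s * (p ! i - e ! i)"
      using q[rule_format, OF i] x[rule_format, OF i] by algebra
  qed
  then have "pard d e p x q" using pard_iff[OF l(2,4,3,5) d2 three pe] by blast
  then show "sm1 d og e x p q" unfolding sm1_def using c by simp
qed

definition sm :: "nat \<Rightarrow> 'a::field list \<Rightarrow> 'a list \<Rightarrow> 'a list \<Rightarrow> 'a list \<Rightarrow> 'a list \<Rightarrow> 'a list \<Rightarrow> bool" where
  "sm d og e1 e2 x p q \<longleftrightarrow> (nc og e1 p \<and> sm1 d og e1 x p q) \<or>
     (col og p e1 \<and> (\<exists>p2\<in>Pts d. \<exists>q2\<in>Pts d. \<exists>w\<in>Pts d. pg d og p e2 p2 \<and> sm1 d og e1 x p2 q2 \<and>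
        sm1 d og e1 x e2 w \<and> pg d w q2 og q))"

lemma shift_nc:
  fixes og e1 e2 p :: "'a::field list"
  assumes l: "length og = d" "length e1 = d" "length e2 = d" "length p = d"
    and n: "nc og e1 e2" and cp: "col og p e1"
  shows "nc og e1 (mk d (\<lambda>i. p ! i + e2 ! i - og ! i))"
proof -
  have oe: "og \<noteq> e1" using n unfolding nc_def by simp
  have eo: "e1 \<noteq> og" using oe by simp
  obtain t where t: "\<forall>i<d. p ! i = og ! i + t * (e1 ! i - og ! i)" using cp col_ne[OF l(1,4,2) eo] by blast
  have "\<not> col og (mk d (\<lambda>i. p ! i + e2 ! i - og ! i)) e1"
  proof
    assume "col og (mk d (\<lambda>i. p ! i + e2 ! i - og ! i)) e1"
    then obtain t' where t': "\<forall>i<d. p ! i + e2 ! i - og ! i = og ! i + t' * (e1 ! i - og ! i)"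
      using col_ne[OF l(1) _ l(2) eo] by force
    have "\<forall>i<d. e2 ! i = og ! i + (t' - t) * (e1 ! i - og ! i)"
    proof (intro allI impI)
      fix i assume i: "i < d"
      show "e2 ! i = og ! i + (t' - t) * (e1 ! i - og ! i)"
        using t[rule_format, OF i] t'[rule_format, OF i] by algebra
    qed
    then have "col og e2 e1" by (rule col_intro[OF l(1,3,2)])
    then show False using n unfolding nc_def by simp
  qed
  then show ?thesis unfolding nc_def using oe by simp
qed

lemma sm_iff:
  fixes og e1 e2 x p q :: "'a::field list"
  assumes l: "length og = d" "length e1 = d" "length e2 = d" "length x = d" "length p = d" "length q = d"
    and d2: "2 \<le> d" and three: "\<exists>r1 r2 r3 :: 'a. r1 \<noteq> r2 \<and> r1 \<noteq> r3 \<and> r2 \<noteq> r3"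
    and n: "nc og e1 e2" and x: "\<forall>i<d. x ! i = og ! i + s * (e1 ! i - og ! i)"
  shows "sm d og e1 e2 x p q \<longleftrightarrow> (\<forall>i<d. q ! i = og ! i + s * (p ! i - og ! i))"
proof (cases "col og p e1")
  case False
  have oe: "og \<noteq> e1" using n unfolding nc_def by simp
  then have np: "nc og e1 p" unfolding nc_def using False by simp
  show ?thesis unfolding sm_def using False np sm1_iff[OF l(1,2,4,5,6) d2 three np x] by simp
next
  case True
  have oe: "og \<noteq> e1" using n unfolding nc_def by simp
  have nnp: "\<not> nc og e1 p" unfolding nc_def using True by simp
  define p2 where "p2 = mk d (\<lambda>i. p ! i + e2 ! i - og ! i)"
  have lp2: "length p2 = d" by (simp add: p2_def)
  have n2: "nc og e1 p2" unfolding p2_def by (rule shift_nc[OF l(1,2,3,5) n True])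
  show ?thesis
  proof
    assume "sm d og e1 e2 x p q"
    then obtain p2' q2 w where l2: "length p2' = d" "length q2 = d" "length w = d"
      and h1: "pg d og p e2 p2'" and h2: "sm1 d og e1 x p2' q2" and h3: "sm1 d og e1 x e2 w"
      and h4: "pg d w q2 og q"
      unfolding sm_def using nnp by auto
    have e1: "\<forall>i<d. p2' ! i = p ! i + e2 ! i - og ! i" using pg_iff[OF l(1,5,3) l2(1) d2 three] h1 by simp
    have "p2' = p2" using e1 l2(1) by (simp add: p2_def list_eq_iff_nth_eq)
    then have h2': "sm1 d og e1 x p2 q2" using h2 by simp
    have e2: "\<forall>i<d. q2 ! i = og ! i + s * (p2' ! i - og ! i)"
      using sm1_iff[OF l(1,2,4) lp2 l2(2) d2 three n2 x] h2' \<open>p2' = p2\<close> by simp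
    have e3: "\<forall>i<d. w ! i = og ! i + s * (e2 ! i - og ! i)"
      using sm1_iff[OF l(1,2,4,3) l2(3) d2 three n x] h3 by simp
    have e4: "\<forall>i<d. q ! i = q2 ! i + og ! i - w ! i"
      using pg_iff[OF l2(3,2) l(1,6) d2 three] h4 by simp
    show "\<forall>i<d. q ! i = og ! i + s * (p ! i - og ! i)"
    proof (intro allI impI)
      fix i assume i: "i < d"
      show "q ! i = og ! i + s * (p ! i - og ! i)"
        using e1[rule_format, OF i] e2[rule_format, OF i] e3[rule_format, OF i] e4[rule_format, OF i] by algebra
    qed
  next
    assume q: "\<forall>i<d. q ! i = og ! i + s * (p ! i - og ! i)"
    define q2 where "q2 = mk d (\<lambda>i. og ! i + s * (p2 ! i - og ! i))"
    define w where "w = mk d (\<lambda>i. og ! i + s * (e2 ! i - og ! i))"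
    have lq2: "length q2 = d" and lw: "length w = d" by (simp_all add: q2_def w_def)
    have h1: "pg d og p e2 p2" using pg_iff[OF l(1,5,3) lp2 d2 three] by (simp add: p2_def)
    have h2: "sm1 d og e1 x p2 q2" using sm1_iff[OF l(1,2,4) lp2 lq2 d2 three n2 x] by (simp add: q2_def)
    have h3: "sm1 d og e1 x e2 w" using sm1_iff[OF l(1,2,4,3) lw d2 three n x] by (simp add: w_def)
    have "\<forall>i<d. q ! i = q2 ! i + og ! i - w ! i"
    proof (intro allI impI)
      fix i assume i: "i < d"
      show "q ! i = q2 ! i + og ! i - w ! i"
        using q[rule_format, OF i] i by (simp add: q2_def w_def p2_def algebra_simps)
    qed
    then have h4: "pg d w q2 og q" using pg_iff[OF lw lq2 l(1,6) d2 three] by simp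
    have "p2 \<in> Pts d" "q2 \<in> Pts d" "w \<in> Pts d" using lp2 lq2 lw by simp_all
    then have "\<exists>p2\<in>Pts d. \<exists>q2\<in>Pts d. \<exists>w\<in>Pts d. pg d og p e2 p2 \<and> sm1 d og e1 x p2 q2 \<and>
        sm1 d og e1 x e2 w \<and> pg d w q2 og q" using h1 h2 h3 h4 by blast
    then show "sm d og e1 e2 x p q" unfolding sm_def using True by blast
  qed
qed


section \<open>Embedding of the field into a line\<close>

definition emb :: "nat \<Rightarrow> 'a::field list \<Rightarrow> 'a list \<Rightarrow> 'a \<Rightarrow> 'a list" where
  "emb d og e t = mk d (\<lambda>i. og ! i + t * (e ! i - og ! i))"

lemma length_emb[simp]: "length (emb d og e t) = d"
  by (simp add: emb_def)

lemma nth_emb[simp]: "i < d \<Longrightarrow> emb d og e t ! i = og ! i + t * (e ! i - og ! i)"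
  by (simp add: emb_def)

lemma emb_col: "length og = d \<Longrightarrow> length e = d \<Longrightarrow> col og (emb d og e t) e"
  by (rule col_intro[of og d _ e t]) auto

lemma col_emb:
  assumes "length og = d" "length e = d" "length x = d" "og \<noteq> e" "col og x e"
  shows "\<exists>t. x = emb d og e t"
proof -
  obtain t where t: "\<forall>i<d. x ! i = og ! i + t * (e ! i - og ! i)"
    using assms col_ne[of og d x e] by auto
  then have "x = emb d og e t" using assms(3) by (simp add: list_eq_iff_nth_eq)
  then show ?thesis by blast
qed

lemma emb_inj:
  assumes "length og = d" "length e = d" "og \<noteq> e" "emb d og e s = emb d og e t"
  shows "s = t"
proof -
  obtain i where i: "i < d" "og ! i \<noteq> e ! i" using pt_neq[OF assms(1,2)] assms(3) by auto
  have "emb d og e s ! i = emb d og e t ! i" using assms(4) by simp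
  then have "s * (e ! i - og ! i) = t * (e ! i - og ! i)" using i by simp
  then show ?thesis using i by simp
qed

definition lc :: "nat \<Rightarrow> 'a::field list \<Rightarrow> 'a list \<Rightarrow> 'a list \<Rightarrow> 'a" where
  "lc d og e x = (SOME t. x = emb d og e t)"

lemma lc_emb:
  assumes "length og = d" "length e = d" "og \<noteq> e"
  shows "lc d og e (emb d og e t) = t"
proof -
  have "emb d og e t = emb d og e (lc d og e (emb d og e t))"
    unfolding lc_def by (rule someI[of _ t]) simp
  then show ?thesis using emb_inj[OF assms] by metis
qed

lemma emb_lc:
  assumes "length og = d" "length e = d" "length x = d" "og \<noteq> e" "col og x e"
  shows "emb d og e (lc d og e x) = x"
proof -
  obtain t where "x = emb d og e t" using col_emb[OF assms] by blast
  then show ?thesis using lc_emb[OF assms(1,2,4)] by simp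
qed

lemma add_iff:
  fixes og e :: "'a::field list"
  assumes l: "length og = d" "length e = d" "length z = d" and d2: "2 \<le> d"
    and three: "\<exists>r1 r2 r3 :: 'a. r1 \<noteq> r2 \<and> r1 \<noteq> r3 \<and> r2 \<noteq> r3"
  shows "pg d og (emb d og e s) (emb d og e t) z \<longleftrightarrow> z = emb d og e (s + t)"
proof -
  have "pg d og (emb d og e s) (emb d og e t) z \<longleftrightarrow>
        (\<forall>i<d. z ! i = emb d og e s ! i + emb d og e t ! i - og ! i)"
    by (rule pg_iff[OF l(1) length_emb length_emb l(3) d2 three])
  also have "\<dots> \<longleftrightarrow> (\<forall>i<d. z ! i = emb d og e (s + t) ! i)"
    by (simp add: algebra_simps)
  also have "\<dots> \<longleftrightarrow> z = emb d og e (s + t)"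
    using l(3) by (simp add: list_eq_iff_nth_eq)
  finally show ?thesis .
qed

lemma mul_iff:
  fixes og e1 e2 :: "'a::field list"
  assumes l: "length og = d" "length e1 = d" "length e2 = d" "length z = d" and d2: "2 \<le> d"
    and three: "\<exists>r1 r2 r3 :: 'a. r1 \<noteq> r2 \<and> r1 \<noteq> r3 \<and> r2 \<noteq> r3" and n: "nc og e1 e2"
  shows "sm d og e1 e2 (emb d og e1 s) (emb d og e1 t) z \<longleftrightarrow> z = emb d og e1 (s * t)"
proof -
  have x: "\<forall>i<d. emb d og e1 s ! i = og ! i + s * (e1 ! i - og ! i)" by simp
  have "sm d og e1 e2 (emb d og e1 s) (emb d og e1 t) z \<longleftrightarrow>
        (\<forall>i<d. z ! i = og ! i + s * (emb d og e1 t ! i - og ! i))"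
    by (rule sm_iff[OF l(1-3) length_emb length_emb l(4) d2 three n x])
  also have "\<dots> \<longleftrightarrow> (\<forall>i<d. z ! i = emb d og e1 (s * t) ! i)"
    by (simp add: algebra_simps)
  also have "\<dots> \<longleftrightarrow> z = emb d og e1 (s * t)"
    using l(4) by (simp add: list_eq_iff_nth_eq)
  finally show ?thesis .
qed

section \<open>Order\<close>

context
  fixes le :: "'a::field \<Rightarrow> 'a \<Rightarrow> bool"
  assumes ofl: "ordered_field_le le"
begin

lemma le_refl: "le x x" using ofl unfolding ordered_field_le_def by blast
lemma le_antisym: "le x y \<Longrightarrow> le y x \<Longrightarrow> x = y" using ofl unfolding ordered_field_le_def by blast
lemma le_trans: "le x y \<Longrightarrow> le y z \<Longrightarrow> le x z" using ofl unfolding ordered_field_le_def by blast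
lemma le_total: "le x y \<or> le y x" using ofl unfolding ordered_field_le_def by blast
lemma le_add: "le x y \<Longrightarrow> le (x + z) (y + z)" using ofl unfolding ordered_field_le_def by blast
lemma le_mult: "le 0 x \<Longrightarrow> le 0 y \<Longrightarrow> le 0 (x * y)" using ofl unfolding ordered_field_le_def by blast

lemma le_diff: "le x y \<longleftrightarrow> le 0 (y - x)"
proof
  assume "le x y"
  then have "le (x + - x) (y + - x)" by (rule le_add)
  then show "le 0 (y - x)" by simp
next
  assume "le 0 (y - x)"
  then have "le (0 + x) (y - x + x)" by (rule le_add)
  then show "le x y" by simp
qed

lemma le_01: "le 0 1"
proof (cases "le 0 (1::'a)")
  case False
  then have "le 1 0" using le_total by blast
  then have "le 0 (0 - 1)" using le_diff by blast
  then have "le 0 ((0 - 1) * (0 - 1))" using le_mult by blast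
  then show ?thesis by simp
qed

lemma not_le_m1: "\<not> le 0 (-1)"
proof
  assume "le 0 (-1)"
  then have "le 1 0" using le_diff[of 1 0] by simp
  then show False using le_01 le_antisym by fastforce
qed

lemma le_inv:
  assumes "le 1 r"
  shows "le 0 (1 / r) \<and> le (1 / r) 1"
proof -
  have r0: "r \<noteq> 0"
  proof
    assume "r = 0"
    then show False using assms le_01 le_antisym by fastforce
  qed
  have p: "le 0 (1 / r)"
  proof (rule ccontr)
    assume "\<not> le 0 (1 / r)"
    then have "le (1 / r) 0" using le_total by blast
    then have "le 0 (0 - 1 / r)" using le_diff by blast
    moreover have "le 0 r" using le_trans[OF le_01 assms] .
    ultimately have "le 0 (r * (0 - 1 / r))" using le_mult by blast
    then have "le 0 (-1)" using r0 by (simp add: field_simps)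
    then show False using not_le_m1 by simp
  qed
  have "le 0 (r - 1)" using assms le_diff by blast
  then have "le 0 ((r - 1) * (1 / r))" using le_mult p by blast
  then have "le 0 (1 - 1 / r)" using r0 by (simp add: field_simps)
  then have "le (1 / r) 1" using le_diff by blast
  then show ?thesis using p by simp
qed

lemma le_recip:
  assumes "le 0 l" "le l 1" "l * r = 1"
  shows "le 1 r"
proof -
  have l0: "l \<noteq> 0" using assms(3) by auto
  have r: "le 0 r"
  proof (rule ccontr)
    assume "\<not> le 0 r"
    then have "le r 0" using le_total by blast
    then have "le 0 (0 - r)" using le_diff by blast
    then have "le 0 (l * (0 - r))" using le_mult assms(1) by blast
    then have "le 0 (-1)" using assms(3) by (simp add: algebra_simps)
    then show False using not_le_m1 by simp
  qed
  have "le 0 (1 - l)" using assms(2) le_diff by blast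
  then have "le 0 ((1 - l) * r)" using le_mult r by blast
  then have "le 0 (r - 1)" using assms(3) by (simp add: algebra_simps)
  then show ?thesis using le_diff by blast
qed

lemma three_ofl: "\<exists>r1 r2 r3 :: 'a. r1 \<noteq> r2 \<and> r1 \<noteq> r3 \<and> r2 \<noteq> r3"
proof -
  have "le 1 (1 + 1)" using le_add[OF le_01, of 1] by simp
  have "(1::'a) + 1 \<noteq> 0"
  proof
    assume h: "(1::'a) + 1 = 0"
    have "le 1 (1 + 1)" using le_add[OF le_01, of 1] by simp
    then have "le 1 0" using h by simp
    then show False using le_01 le_antisym by fastforce
  qed
  moreover have "(1::'a) \<noteq> 1 + 1"
  proof
    assume "(1::'a) = 1 + 1"
    then have "(1::'a) - 1 = 1 + 1 - 1" by simp
    then show False by simp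
  qed
  ultimately show ?thesis by (intro exI[of _ 0] exI[of _ 1] exI[of _ "1 + 1"]) (simp only: zero_neq_one, simp)
qed

end

definition bw :: "('a::field \<Rightarrow> 'a \<Rightarrow> bool) \<Rightarrow> 'a list \<Rightarrow> 'a list \<Rightarrow> 'a list \<Rightarrow> bool" where
  "bw le p q r \<longleftrightarrow> (\<exists>t. le 0 t \<and> le t 1 \<and> q = vadd p (smul t (vsub r p)))"

lemma Bw_mem: "[p, q, r] \<in> Bw le d \<longleftrightarrow> length p = d \<and> length q = d \<and> length r = d \<and> bw le p q r"
  unfolding Bw_def bw_def by auto

lemma bw_iff:
  assumes "length p = d" "length q = d" "length r = d"
  shows "bw le p q r \<longleftrightarrow> (\<exists>t. le 0 t \<and> le t 1 \<and> (\<forall>i<d. q ! i = p ! i + t * (r ! i - p ! i)))"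
  unfolding bw_def using comb_eq[OF assms] by simp

lemma col_bw:
  fixes p q r :: "'a::field list"
  assumes ofl: "ordered_field_le le" and l: "length p = d" "length q = d" "length r = d"
  shows "col p q r \<longleftrightarrow> r = p \<or> bw le p q r \<or> bw le p r q \<or> bw le q p r"
proof
  assume c: "col p q r"
  show "r = p \<or> bw le p q r \<or> bw le p r q \<or> bw le q p r"
  proof (cases "r = p")
    case True then show ?thesis by simp
  next
    case rp: False
    obtain la where la: "\<forall>i<d. q ! i = p ! i + la * (r ! i - p ! i)" using c col_ne[OF l rp] by blast
    consider "le 0 la" "le la 1" | "le 1 la" | "le la 0"
      using le_total[OF ofl] by blast
    then show ?thesis
    proof cases
      case 1
      then have "bw le p q r" using bw_iff[OF l] la by blast
      then show ?thesis by simp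
    next
      case 2
      have la0: "la \<noteq> 0"
      proof
        assume "la = 0" then show False using 2 le_01[OF ofl] le_antisym[OF ofl] by fastforce
      qed
      have "\<forall>i<d. r ! i = p ! i + (1 / la) * (q ! i - p ! i)"
        using la la0 by (simp add: field_simps)
      then have "bw le p r q" using bw_iff[OF l(1,3,2)] le_inv[OF ofl 2] by blast
      then show ?thesis by simp
    next
      case 3
      define m where "m = - la"
      have m: "le 0 m" using 3 le_diff[OF ofl, of la 0] by (simp add: m_def)
      have m1: "le 1 (1 + m)" using le_add[OF ofl m, of 1] by (simp add: add.commute)
      have m0: "1 + m \<noteq> 0"
      proof
        assume "1 + m = 0" then show False using m1 le_01[OF ofl] le_antisym[OF ofl] by fastforce
      qed
      have bnd: "le 0 (1 / (1 + m)) \<and> le (1 / (1 + m)) 1" using le_inv[OF ofl m1] .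
      define t where "t = 1 - 1 / (1 + m)"
      have t0: "le 0 t" using bnd le_diff[OF ofl] by (simp add: t_def)
      have t1: "le t 1" using bnd le_diff[OF ofl, of t 1] by (simp add: t_def)
      have "\<forall>i<d. p ! i = q ! i + t * (r ! i - q ! i)"
      proof (intro allI impI)
        fix i assume i: "i < d"
        have qi: "q ! i = p ! i - m * (r ! i - p ! i)" using la[rule_format, OF i] by (simp add: m_def)
        show "p ! i = q ! i + t * (r ! i - q ! i)"
          unfolding t_def qi using m0 by (simp add: field_simps)
      qed
      then have "bw le q p r" using bw_iff[OF l(2,1,3)] t0 t1 by blast
      then show ?thesis by simp
    qed
  qed
next
  assume "r = p \<or> bw le p q r \<or> bw le p r q \<or> bw le q p r"
  then consider "r = p" | "bw le p q r" | "bw le p r q" | "bw le q p r" by blast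
  then show "col p q r"
  proof cases
    case 1 then show ?thesis unfolding col_def by simp
  next
    case 2 then show ?thesis unfolding col_def bw_def by blast
  next
    case 3
    then obtain t where t: "\<forall>i<d. r ! i = p ! i + t * (q ! i - p ! i)" using bw_iff[OF l(1,3,2)] by blast
    show ?thesis
    proof (cases "t = 0")
      case True
      then have "r = p" using t l by (simp add: list_eq_iff_nth_eq)
      then show ?thesis unfolding col_def by simp
    next
      case False
      have "\<forall>i<d. q ! i = p ! i + (1 / t) * (r ! i - p ! i)"
        using t False by (simp add: field_simps)
      then show ?thesis by (rule col_intro[OF l])
    qed
  next
    case 4
    then obtain t where t: "\<forall>i<d. p ! i = q ! i + t * (r ! i - q ! i)" using bw_iff[OF l(2,1,3)] by blast
    show ?thesis
    proof (cases "t = 1")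
      case True
      then have "r = p" using t l by (simp add: list_eq_iff_nth_eq)
      then show ?thesis unfolding col_def by simp
    next
      case False
      then have t1: "1 - t \<noteq> 0" by simp
      have "\<forall>i<d. q ! i = p ! i + (- t / (1 - t)) * (r ! i - p ! i)"
      proof (intro allI impI)
        fix i assume i: "i < d"
        have pi: "p ! i = q ! i + t * (r ! i - q ! i)" using t i by blast
        show "q ! i = p ! i + (- t / (1 - t)) * (r ! i - p ! i)"
          unfolding pi using t1 by (simp add: field_simps)
      qed
      then show ?thesis by (rule col_intro[OF l])
    qed
  qed
qed

definition leq :: "('a::field \<Rightarrow> 'a \<Rightarrow> bool) \<Rightarrow> nat \<Rightarrow> 'a list \<Rightarrow> 'a list \<Rightarrow> 'a list \<Rightarrow> 'a list \<Rightarrow> bool" where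
  "leq le d og e x y \<longleftrightarrow> (\<exists>z\<in>Pts d. col og z e \<and> pg d og x z y \<and> (bw le og z e \<or> bw le og e z))"

lemma leq_iff:
  fixes og e :: "'a::field list"
  assumes ofl: "ordered_field_le le" and l: "length og = d" "length e = d" and oe: "og \<noteq> e"
    and d2: "2 \<le> d"
  shows "leq le d og e (emb d og e s) (emb d og e t) \<longleftrightarrow> le s t"
proof -
  have three: "\<exists>r1 r2 r3 :: 'a. r1 \<noteq> r2 \<and> r1 \<noteq> r3 \<and> r2 \<noteq> r3" by (rule three_ofl[OF ofl])
  obtain i0 where i0: "i0 < d" "og ! i0 \<noteq> e ! i0" using pt_neq[OF l] oe by auto
  show ?thesis
  proof
    assume "leq le d og e (emb d og e s) (emb d og e t)"
    then obtain z where lz: "length z = d" and cz: "col og z e"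
      and pz: "pg d og (emb d og e s) z (emb d og e t)" and bz: "bw le og z e \<or> bw le og e z"
      unfolding leq_def by auto
    obtain r where zr: "z = emb d og e r" using col_emb[OF l lz oe cz] by blast
    have "emb d og e t = emb d og e (s + r)" using pz add_iff[OF l length_emb d2 three] zr by simp
    then have tsr: "t = s + r" using emb_inj[OF l oe] by blast
    have r0: "le 0 r"
      using bz
    proof
      assume "bw le og z e"
      then obtain la where la: "le 0 la" "le la 1" "\<forall>i<d. z ! i = og ! i + la * (e ! i - og ! i)"
        using bw_iff[OF l(1) lz l(2)] by blast
      then have "z = emb d og e la" using lz by (simp add: list_eq_iff_nth_eq)
      then have "r = la" using zr emb_inj[OF l oe] by simp
      then show "le 0 r" using la by simp
    next
      assume "bw le og e z"
      then obtain la where la: "le 0 la" "le la 1" "\<forall>i<d. e ! i = og ! i + la * (z ! i - og ! i)"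
        using bw_iff[OF l(1,2) lz] by blast
      have "e ! i0 - og ! i0 = (la * r) * (e ! i0 - og ! i0)"
        using la(3) i0 zr by (simp add: algebra_simps)
      then have "la * r = 1" using i0 by simp
      then have "le 1 r" using le_recip[OF ofl la(1,2)] by blast
      then show "le 0 r" using le_trans[OF ofl le_01[OF ofl]] by blast
    qed
    then have "le s (s + r)" using le_diff[OF ofl, of s "s + r"] by simp
    then show "le s t" using tsr by simp
  next
    assume st: "le s t"
    define r where "r = t - s"
    have r0: "le 0 r" using st le_diff[OF ofl] by (simp add: r_def)
    define z where "z = emb d og e r"
    have lz: "length z = d" by (simp add: z_def)
    have cz: "col og z e" unfolding z_def by (rule emb_col[OF l])
    have pz: "pg d og (emb d og e s) z (emb d og e t)"
      using add_iff[OF l length_emb d2 three] by (simp add: z_def r_def)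
    have bz: "bw le og z e \<or> bw le og e z"
    proof (cases "le r 1")
      case True
      have "\<forall>i<d. z ! i = og ! i + r * (e ! i - og ! i)" by (simp add: z_def)
      then show ?thesis using bw_iff[OF l(1) lz l(2)] r0 True by blast
    next
      case False
      then have r1: "le 1 r" using le_total[OF ofl] by blast
      have rn0: "r \<noteq> 0" using r1 le_01[OF ofl] le_antisym[OF ofl] by fastforce
      have "\<forall>i<d. e ! i = og ! i + (1 / r) * (z ! i - og ! i)"
        using rn0 by (simp add: z_def field_simps)
      then show ?thesis using bw_iff[OF l(1,2) lz] le_inv[OF ofl r1] by blast
    qed
    have "z \<in> Pts d" using lz by simp
    then show "leq le d og e (emb d og e s) (emb d og e t)"
      unfolding leq_def using cz pz bz by blast
  qed
qed


lemma expr_ex2: "expr U I Q \<Longrightarrow> expr U I (\<lambda>v. \<exists>a\<in>U. \<exists>b\<in>U. Q (v(m := a, m' := b)))"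
  using expr_ex[OF expr_ex[of U I Q m'], of m] by simp

lemma expr_ex3: "expr U I Q \<Longrightarrow> expr U I (\<lambda>v. \<exists>a\<in>U. \<exists>b\<in>U. \<exists>c\<in>U. Q (v(m := a, m' := b, m'' := c)))"
  using expr_ex[OF expr_ex2[of U I Q m' m''], of m] by simp

locale geo =
  fixes d :: nat and J :: "(nat \<times> 'a::field list list set) list" and le :: "'a \<Rightarrow> 'a \<Rightarrow> bool"
    and isord :: bool
  assumes d2: "2 \<le> d"
    and three: "\<exists>r1 r2 r3 :: 'a. r1 \<noteq> r2 \<and> r1 \<noteq> r3 \<and> r2 \<noteq> r3"
    and colE: "\<And>i j k. expr (Pts d) J (\<lambda>v. col (v i) (v j) (v k))"
    and ordE: "isord \<Longrightarrow> ordered_field_le le \<and> (\<forall>i j k. expr (Pts d) J (\<lambda>v. bw le (v i) (v j) (v k)))"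
begin

abbreviation E where "E \<equiv> expr (Pts d) J"

lemma ncE: "E (\<lambda>v. nc (v i) (v j) (v k))"
proof -
  have "E (\<lambda>v. \<not> v i = v j \<and> \<not> col (v i) (v k) (v j))"
    by (intro expr_conj expr_not expr_eq colE)
  then show ?thesis by (rule expr_cong) (simp add: nc_def)
qed

lemma coplE: "E (\<lambda>v. copl d (v i) (v j) (v k) (v l))"
proof -
  define m where "m = i + j + k + l + 1"
  have "E (\<lambda>v. col (v i) (v m) (v j) \<and> col (v i) (v (Suc m)) (v k) \<and> \<not> v m = v (Suc m) \<and>
      col (v m) (v l) (v (Suc m)))"
    by (intro expr_conj expr_not expr_eq colE)
  then have "E (\<lambda>v. \<exists>a\<in>Pts d. \<exists>b\<in>Pts d. (\<lambda>v. col (v i) (v m) (v j) \<and> col (v i) (v (Suc m)) (v k) \<and> \<not> v m = v (Suc m) \<and>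
      col (v m) (v l) (v (Suc m))) (v(m := a, Suc m := b)))"
    by (rule expr_ex2)
  then show ?thesis by (rule expr_cong) (simp add: copl_def m_def)
qed

lemma meetE: "E (\<lambda>v. meet d (v i) (v j) (v k) (v l))"
proof -
  define m where "m = i + j + k + l + 1"
  have "E (\<lambda>v. col (v i) (v m) (v j) \<and> col (v k) (v m) (v l))"
    by (intro expr_conj colE)
  then have "E (\<lambda>v. \<exists>a\<in>Pts d. (\<lambda>v. col (v i) (v m) (v j) \<and> col (v k) (v m) (v l)) (v(m := a)))"
    by (rule expr_ex)
  then show ?thesis by (rule expr_cong) (simp add: meet_def m_def)
qed

lemma pg0E: "E (\<lambda>v. pg0 d (v i) (v j) (v k) (v l))"
proof -
  have "E (\<lambda>v. copl d (v i) (v j) (v k) (v l) \<and> \<not> v k = v l \<and> \<not> v j = v l \<and>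
     \<not> meet d (v k) (v l) (v i) (v j) \<and> \<not> meet d (v j) (v l) (v i) (v k))"
    by (intro expr_conj expr_not expr_eq coplE meetE)
  then show ?thesis by (rule expr_cong) (simp add: pg0_def)
qed

lemma pgE: "E (\<lambda>v. pg d (v i) (v j) (v k) (v l))"
proof -
  define m where "m = i + j + k + l + 1"
  have "E (\<lambda>v. nc (v i) (v j) (v m) \<and> pg0 d (v i) (v j) (v m) (v (Suc m)) \<and>
      nc (v m) (v (Suc m)) (v k) \<and> pg0 d (v m) (v (Suc m)) (v k) (v l))"
    by (intro expr_conj ncE pg0E)
  then have "E (\<lambda>v. \<exists>a\<in>Pts d. \<exists>b\<in>Pts d. (\<lambda>v. nc (v i) (v j) (v m) \<and> pg0 d (v i) (v j) (v m) (v (Suc m)) \<and>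
      nc (v m) (v (Suc m)) (v k) \<and> pg0 d (v m) (v (Suc m)) (v k) (v l)) (v(m := a, Suc m := b)))"
    by (rule expr_ex2)
  then have "E (\<lambda>v. (v i = v j \<and> v l = v k) \<or> (nc (v i) (v j) (v k) \<and> pg0 d (v i) (v j) (v k) (v l)) \<or>
     (\<not> v i = v j \<and> col (v i) (v k) (v j) \<and> (\<exists>a\<in>Pts d. \<exists>b\<in>Pts d. (\<lambda>v. nc (v i) (v j) (v m) \<and> pg0 d (v i) (v j) (v m) (v (Suc m)) \<and>
      nc (v m) (v (Suc m)) (v k) \<and> pg0 d (v m) (v (Suc m)) (v k) (v l)) (v(m := a, Suc m := b)))))"
    by (intro expr_conj expr_disj expr_not expr_eq colE ncE pg0E)
  then show ?thesis by (rule expr_cong) (simp add: pg_def m_def)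
qed

lemma pardE: "E (\<lambda>v. pard d (v i) (v j) (v k) (v l))"
proof -
  define m where "m = i + j + k + l + 1"
  have "E (\<lambda>v. pg d (v i) (v j) (v k) (v m) \<and> col (v k) (v l) (v m))"
    by (intro expr_conj pgE colE)
  then have "E (\<lambda>v. \<exists>a\<in>Pts d. (\<lambda>v. pg d (v i) (v j) (v k) (v m) \<and> col (v k) (v l) (v m)) (v(m := a)))"
    by (rule expr_ex)
  then show ?thesis by (rule expr_cong) (simp add: pard_def m_def)
qed

lemma sm1E: "E (\<lambda>v. sm1 d (v i) (v j) (v k) (v l) (v n))"
proof -
  have "E (\<lambda>v. col (v i) (v n) (v l) \<and> pard d (v j) (v l) (v k) (v n))"
    by (intro expr_conj pardE colE)
  then show ?thesis by (rule expr_cong) (simp add: sm1_def)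
qed

lemma smE: "E (\<lambda>v. sm d (v i) (v j) (v k) (v l) (v n) (v r))"
proof -
  define m where "m = i + j + k + l + n + r + 1"
  have "E (\<lambda>v. pg d (v i) (v n) (v k) (v m) \<and> sm1 d (v i) (v j) (v l) (v m) (v (Suc m)) \<and>
        sm1 d (v i) (v j) (v l) (v k) (v (Suc (Suc m))) \<and> pg d (v (Suc (Suc m))) (v (Suc m)) (v i) (v r))"
    by (intro expr_conj pgE sm1E)
  then have "E (\<lambda>v. \<exists>a\<in>Pts d. \<exists>b\<in>Pts d. \<exists>c\<in>Pts d. (\<lambda>v. pg d (v i) (v n) (v k) (v m) \<and> sm1 d (v i) (v j) (v l) (v m) (v (Suc m)) \<and>
        sm1 d (v i) (v j) (v l) (v k) (v (Suc (Suc m))) \<and> pg d (v (Suc (Suc m))) (v (Suc m)) (v i) (v r))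
        (v(m := a, Suc m := b, Suc (Suc m) := c)))"
    by (rule expr_ex3)
  then have "E (\<lambda>v. (nc (v i) (v j) (v n) \<and> sm1 d (v i) (v j) (v l) (v n) (v r)) \<or>
     (col (v i) (v n) (v j) \<and> (\<exists>a\<in>Pts d. \<exists>b\<in>Pts d. \<exists>c\<in>Pts d. (\<lambda>v. pg d (v i) (v n) (v k) (v m) \<and> sm1 d (v i) (v j) (v l) (v m) (v (Suc m)) \<and>
        sm1 d (v i) (v j) (v l) (v k) (v (Suc (Suc m))) \<and> pg d (v (Suc (Suc m))) (v (Suc m)) (v i) (v r))
        (v(m := a, Suc m := b, Suc (Suc m) := c)))))"
    by (intro expr_conj expr_disj ncE sm1E colE)
  then show ?thesis by (rule expr_cong) (simp add: sm_def m_def)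
qed

lemma leqE: "isord \<Longrightarrow> E (\<lambda>v. leq le d (v i) (v j) (v k) (v l))"
proof -
  assume io: isord
  have bwE: "\<And>i j k. E (\<lambda>v. bw le (v i) (v j) (v k))" using ordE[OF io] by blast
  define m where "m = i + j + k + l + 1"
  have "E (\<lambda>v. col (v i) (v m) (v j) \<and> pg d (v i) (v k) (v m) (v l) \<and> (bw le (v i) (v m) (v j) \<or> bw le (v i) (v j) (v m)))"
    by (intro expr_conj expr_disj colE pgE bwE)
  then have "E (\<lambda>v. \<exists>a\<in>Pts d. (\<lambda>v. col (v i) (v m) (v j) \<and> pg d (v i) (v k) (v m) (v l) \<and> (bw le (v i) (v m) (v j) \<or> bw le (v i) (v j) (v m))) (v(m := a)))"
    by (rule expr_ex)
  then show ?thesis by (rule expr_cong) (simp add: leq_def m_def)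
qed

end


fun tmax :: "ftm \<Rightarrow> nat" where
  "tmax (FVar i) = i"
| "tmax FZero = 0"
| "tmax FOne = 0"
| "tmax (FAdd s t) = max (tmax s) (tmax t)"
| "tmax (FMul s t) = max (tmax s) (tmax t)"

fun fmax :: "ffm \<Rightarrow> nat" where
  "fmax (FEq s t) = max (tmax s) (tmax t)"
| "fmax (FLe s t) = max (tmax s) (tmax t)"
| "fmax (FNeg \<phi>) = fmax \<phi>"
| "fmax (FAnd \<phi> \<psi>) = max (fmax \<phi>) (fmax \<psi>)"
| "fmax (FEx j \<phi>) = max j (fmax \<phi>)"

lemma emb_0: "length og = d \<Longrightarrow> emb d og e 0 = og"
  by (simp add: list_eq_iff_nth_eq)
lemma emb_1: "length og = d \<Longrightarrow> length e = d \<Longrightarrow> emb d og e 1 = e"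
  by (simp add: list_eq_iff_nth_eq)

context geo
begin

fun trT :: "ftm \<Rightarrow> (nat \<Rightarrow> 'a list) \<Rightarrow> 'a list \<Rightarrow> bool" where
  "trT (FVar i) v x = (x = v (Suc d + i))"
| "trT FZero v x = (x = v 0)"
| "trT FOne v x = (x = v 1)"
| "trT (FAdd s t) v x = (\<exists>y\<in>Pts d. \<exists>z\<in>Pts d. col (v 0) y (v 1) \<and> col (v 0) z (v 1) \<and>
     trT s v y \<and> trT t v z \<and> pg d (v 0) y z x)"
| "trT (FMul s t) v x = (\<exists>y\<in>Pts d. \<exists>z\<in>Pts d. col (v 0) y (v 1) \<and> col (v 0) z (v 1) \<and>
     trT s v y \<and> trT t v z \<and> sm d (v 0) (v 1) (v 2) y z x)"

lemma trT_cong: "(\<And>j. j < Suc d + tmax t + 1 \<Longrightarrow> v j = w j) \<Longrightarrow> trT t v x = trT t w x"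
proof (induction t arbitrary: x)
  case (FVar i) then show ?case by simp
next
  case FZero then show ?case by simp
next
  case FOne then show ?case by simp
next
  case (FAdd s t x)
  have 1: "\<And>y. trT s v y = trT s w y" by (rule FAdd.IH(1)) (use FAdd.prems in simp)
  have 2: "\<And>y. trT t v y = trT t w y" by (rule FAdd.IH(2)) (use FAdd.prems in simp)
  have "v 0 = w 0" "v 1 = w 1" using FAdd.prems by simp_all
  then show ?case by (simp add: 1 2)
next
  case (FMul s t x)
  have 1: "\<And>y. trT s v y = trT s w y" by (rule FMul.IH(1)) (use FMul.prems in simp)
  have 2: "\<And>y. trT t v y = trT t w y" by (rule FMul.IH(2)) (use FMul.prems in simp)
  have "v 0 = w 0" "v 1 = w 1" "v 2 = w 2" using FMul.prems[of 0] FMul.prems[of 1] FMul.prems[of 2] d2 by simp_all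
  then show ?case by (simp add: 1 2)
qed

lemma trTE: "E (\<lambda>v. trT t v (v k))"
proof (induction t arbitrary: k)
  case (FVar i)
  have "E (\<lambda>v. v k = v (Suc d + i))" by (rule expr_eq)
  then show ?case by simp
next
  case FZero
  have "E (\<lambda>v. v k = v 0)" by (rule expr_eq)
  then show ?case by simp
next
  case FOne
  have "E (\<lambda>v. v k = v 1)" by (rule expr_eq)
  then show ?case by simp
next
  case (FAdd s t k)
  define m where "m = k + Suc d + tmax s + tmax t + 1"
  have "E (\<lambda>v. col (v 0) (v m) (v 1) \<and> col (v 0) (v (Suc m)) (v 1) \<and> trT s v (v m) \<and>
     trT t v (v (Suc m)) \<and> pg d (v 0) (v m) (v (Suc m)) (v k))"
    by (intro expr_conj colE pgE FAdd.IH)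
  then have "E (\<lambda>v. \<exists>a\<in>Pts d. \<exists>b\<in>Pts d. (\<lambda>v. col (v 0) (v m) (v 1) \<and> col (v 0) (v (Suc m)) (v 1) \<and> trT s v (v m) \<and>
     trT t v (v (Suc m)) \<and> pg d (v 0) (v m) (v (Suc m)) (v k)) (v(m := a, Suc m := b)))"
    by (rule expr_ex2)
  then show ?case
  proof (rule expr_cong)
    fix v :: "nat \<Rightarrow> 'a list"
    have 1: "\<And>a b y. trT s (v(m := a, Suc m := b)) y = trT s v y" by (rule trT_cong) (auto simp: m_def)
    have 2: "\<And>a b y. trT t (v(m := a, Suc m := b)) y = trT t v y" by (rule trT_cong) (auto simp: m_def)
    have 3: "0 \<noteq> m" "1 \<noteq> m" "k \<noteq> m" "0 \<noteq> Suc m" "1 \<noteq> Suc m" "k \<noteq> Suc m" by (auto simp: m_def)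
    show "(\<exists>a\<in>Pts d. \<exists>b\<in>Pts d. (\<lambda>v. col (v 0) (v m) (v 1) \<and> col (v 0) (v (Suc m)) (v 1) \<and> trT s v (v m) \<and>
     trT t v (v (Suc m)) \<and> pg d (v 0) (v m) (v (Suc m)) (v k)) (v(m := a, Suc m := b))) = trT (FAdd s t) v (v k)"
      using 3 by (simp add: 1 2)
  qed
next
  case (FMul s t k)
  define m where "m = k + Suc d + tmax s + tmax t + 1"
  have "E (\<lambda>v. col (v 0) (v m) (v 1) \<and> col (v 0) (v (Suc m)) (v 1) \<and> trT s v (v m) \<and>
     trT t v (v (Suc m)) \<and> sm d (v 0) (v 1) (v 2) (v m) (v (Suc m)) (v k))"
    by (intro expr_conj colE smE FMul.IH)
  then have "E (\<lambda>v. \<exists>a\<in>Pts d. \<exists>b\<in>Pts d. (\<lambda>v. col (v 0) (v m) (v 1) \<and> col (v 0) (v (Suc m)) (v 1) \<and> trT s v (v m) \<and>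
     trT t v (v (Suc m)) \<and> sm d (v 0) (v 1) (v 2) (v m) (v (Suc m)) (v k)) (v(m := a, Suc m := b)))"
    by (rule expr_ex2)
  then show ?case
  proof (rule expr_cong)
    fix v :: "nat \<Rightarrow> 'a list"
    have 1: "\<And>a b y. trT s (v(m := a, Suc m := b)) y = trT s v y" by (rule trT_cong) (auto simp: m_def)
    have 2: "\<And>a b y. trT t (v(m := a, Suc m := b)) y = trT t v y" by (rule trT_cong) (auto simp: m_def)
    have 3: "0 \<noteq> m" "1 \<noteq> m" "2 \<noteq> m" "k \<noteq> m" "0 \<noteq> Suc m" "1 \<noteq> Suc m" "2 \<noteq> Suc m" "k \<noteq> Suc m"
      using d2 by (auto simp: m_def)
    show "(\<exists>a\<in>Pts d. \<exists>b\<in>Pts d. (\<lambda>v. col (v 0) (v m) (v 1) \<and> col (v 0) (v (Suc m)) (v 1) \<and> trT s v (v m) \<and>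
     trT t v (v (Suc m)) \<and> sm d (v 0) (v 1) (v 2) (v m) (v (Suc m)) (v k)) (v(m := a, Suc m := b))) = trT (FMul s t) v (v k)"
      using 3 by (simp add: 1 2)
  qed
qed

definition wof :: "(nat \<Rightarrow> 'a list) \<Rightarrow> nat \<Rightarrow> 'a" where
  "wof v j = lc d (v 0) (v 1) (v (Suc d + j))"

lemma trT_iff:
  assumes U: "\<And>i. length (v i) = d" and oe: "v 0 \<noteq> v 1" and n: "nc (v 0) (v 1) (v 2)"
    and sl: "\<And>j. j \<le> tmax t \<Longrightarrow> col (v 0) (v (Suc d + j)) (v 1)" and lx: "length x = d"
  shows "trT t v x \<longleftrightarrow> x = emb d (v 0) (v 1) (feval t (wof v))"
  using sl lx
proof (induction t arbitrary: x)
  case (FVar i x)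
  have "emb d (v 0) (v 1) (wof v i) = v (Suc d + i)"
    unfolding wof_def by (rule emb_lc[OF U U U oe FVar.prems(1)]) simp
  then show ?case by simp
next
  case (FZero x) then show ?case using emb_0[OF U] by simp
next
  case (FOne x) then show ?case using emb_1[OF U U] by simp
next
  case (FAdd s t x)
  have IH1: "\<And>y. length y = d \<Longrightarrow> trT s v y \<longleftrightarrow> y = emb d (v 0) (v 1) (feval s (wof v))"
    by (rule FAdd.IH(1)) (use FAdd.prems in auto)
  have IH2: "\<And>y. length y = d \<Longrightarrow> trT t v y \<longleftrightarrow> y = emb d (v 0) (v 1) (feval t (wof v))"
    by (rule FAdd.IH(2)) (use FAdd.prems in auto)
  have A: "\<And>a b. pg d (v 0) (emb d (v 0) (v 1) a) (emb d (v 0) (v 1) b) x \<longleftrightarrow> x = emb d (v 0) (v 1) (a + b)"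
    by (rule add_iff[OF U U FAdd.prems(2) d2 three])
  show ?case
  proof
    assume "trT (FAdd s t) v x"
    then obtain y z where "length y = d" "length z = d" "trT s v y" "trT t v z" "pg d (v 0) y z x" by auto
    then show "x = emb d (v 0) (v 1) (feval (FAdd s t) (wof v))" using IH1 IH2 A by simp
  next
    assume x: "x = emb d (v 0) (v 1) (feval (FAdd s t) (wof v))"
    let ?y = "emb d (v 0) (v 1) (feval s (wof v))" and ?z = "emb d (v 0) (v 1) (feval t (wof v))"
    have "?y \<in> Pts d" "?z \<in> Pts d" "col (v 0) ?y (v 1)" "col (v 0) ?z (v 1)" "trT s v ?y" "trT t v ?z"
      "pg d (v 0) ?y ?z x" using emb_col[OF U U] IH1 IH2 A x by auto
    then show "trT (FAdd s t) v x" by (simp only: trT.simps) blast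
  qed
next
  case (FMul s t x)
  have IH1: "\<And>y. length y = d \<Longrightarrow> trT s v y \<longleftrightarrow> y = emb d (v 0) (v 1) (feval s (wof v))"
    by (rule FMul.IH(1)) (use FMul.prems in auto)
  have IH2: "\<And>y. length y = d \<Longrightarrow> trT t v y \<longleftrightarrow> y = emb d (v 0) (v 1) (feval t (wof v))"
    by (rule FMul.IH(2)) (use FMul.prems in auto)
  have A: "\<And>a b. sm d (v 0) (v 1) (v 2) (emb d (v 0) (v 1) a) (emb d (v 0) (v 1) b) x \<longleftrightarrow> x = emb d (v 0) (v 1) (a * b)"
    by (rule mul_iff[OF U U U FMul.prems(2) d2 three n])
  show ?case
  proof
    assume "trT (FMul s t) v x"
    then obtain y z where "length y = d" "length z = d" "trT s v y" "trT t v z" "sm d (v 0) (v 1) (v 2) y z x" by auto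
    then show "x = emb d (v 0) (v 1) (feval (FMul s t) (wof v))" using IH1 IH2 A by simp
  next
    assume x: "x = emb d (v 0) (v 1) (feval (FMul s t) (wof v))"
    let ?y = "emb d (v 0) (v 1) (feval s (wof v))" and ?z = "emb d (v 0) (v 1) (feval t (wof v))"
    have "?y \<in> Pts d" "?z \<in> Pts d" "col (v 0) ?y (v 1)" "col (v 0) ?z (v 1)" "trT s v ?y" "trT t v ?z"
      "sm d (v 0) (v 1) (v 2) ?y ?z x" using emb_col[OF U U] IH1 IH2 A x by auto
    then show "trT (FMul s t) v x" by (simp only: trT.simps) blast
  qed
qed

fun trF :: "ffm \<Rightarrow> (nat \<Rightarrow> 'a list) \<Rightarrow> bool" where
  "trF (FEq s t) v = (\<exists>x\<in>Pts d. col (v 0) x (v 1) \<and> trT s v x \<and> trT t v x)"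
| "trF (FLe s t) v = (\<exists>x\<in>Pts d. \<exists>y\<in>Pts d. col (v 0) x (v 1) \<and> col (v 0) y (v 1) \<and>
     trT s v x \<and> trT t v y \<and> leq le d (v 0) (v 1) x y)"
| "trF (FNeg \<phi>) v = (\<not> trF \<phi> v)"
| "trF (FAnd \<phi> \<psi>) v = (trF \<phi> v \<and> trF \<psi> v)"
| "trF (FEx j \<phi>) v = (\<exists>a\<in>Pts d. col (v 0) a (v 1) \<and> trF \<phi> (v(Suc d + j := a)))"

lemma trFE: "isord \<or> le_free \<phi> \<Longrightarrow> E (trF \<phi>)"
proof (induction \<phi>)
  case (FEq s t)
  define m where "m = Suc d + tmax s + tmax t + 1"
  have "E (\<lambda>v. col (v 0) (v m) (v 1) \<and> trT s v (v m) \<and> trT t v (v m))"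
    by (intro expr_conj colE trTE)
  then have "E (\<lambda>v. \<exists>a\<in>Pts d. (\<lambda>v. col (v 0) (v m) (v 1) \<and> trT s v (v m) \<and> trT t v (v m)) (v(m := a)))"
    by (rule expr_ex)
  then show ?case
  proof (rule expr_cong)
    fix v :: "nat \<Rightarrow> 'a list"
    have 1: "\<And>a y. trT s (v(m := a)) y = trT s v y" by (rule trT_cong) (auto simp: m_def)
    have 2: "\<And>a y. trT t (v(m := a)) y = trT t v y" by (rule trT_cong) (auto simp: m_def)
    have 3: "0 \<noteq> m" "1 \<noteq> m" by (auto simp: m_def)
    show "(\<exists>a\<in>Pts d. (\<lambda>v. col (v 0) (v m) (v 1) \<and> trT s v (v m) \<and> trT t v (v m)) (v(m := a))) = trF (FEq s t) v"
      using 3 by (simp add: 1 2)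
  qed
next
  case (FLe s t)
  then have io: isord by simp
  define m where "m = Suc d + tmax s + tmax t + 1"
  have "E (\<lambda>v. col (v 0) (v m) (v 1) \<and> col (v 0) (v (Suc m)) (v 1) \<and> trT s v (v m) \<and> trT t v (v (Suc m)) \<and>
      leq le d (v 0) (v 1) (v m) (v (Suc m)))"
    by (intro expr_conj colE trTE leqE io)
  then have "E (\<lambda>v. \<exists>a\<in>Pts d. \<exists>b\<in>Pts d. (\<lambda>v. col (v 0) (v m) (v 1) \<and> col (v 0) (v (Suc m)) (v 1) \<and> trT s v (v m) \<and> trT t v (v (Suc m)) \<and>
      leq le d (v 0) (v 1) (v m) (v (Suc m))) (v(m := a, Suc m := b)))"
    by (rule expr_ex2)
  then show ?case
  proof (rule expr_cong)
    fix v :: "nat \<Rightarrow> 'a list"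
    have 1: "\<And>a b y. trT s (v(m := a, Suc m := b)) y = trT s v y" by (rule trT_cong) (auto simp: m_def)
    have 2: "\<And>a b y. trT t (v(m := a, Suc m := b)) y = trT t v y" by (rule trT_cong) (auto simp: m_def)
    have 3: "0 \<noteq> m" "1 \<noteq> m" "0 \<noteq> Suc m" "1 \<noteq> Suc m" by (auto simp: m_def)
    show "(\<exists>a\<in>Pts d. \<exists>b\<in>Pts d. (\<lambda>v. col (v 0) (v m) (v 1) \<and> col (v 0) (v (Suc m)) (v 1) \<and> trT s v (v m) \<and> trT t v (v (Suc m)) \<and>
      leq le d (v 0) (v 1) (v m) (v (Suc m))) (v(m := a, Suc m := b))) = trF (FLe s t) v"
      using 3 by (simp add: 1 2)
  qed
next
  case (FNeg \<phi>)
  then have "E (trF \<phi>)" by simp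
  then have "E (\<lambda>v. \<not> trF \<phi> v)" by (rule expr_not)
  then show ?case by simp
next
  case (FAnd \<phi> \<psi>)
  then have "E (trF \<phi>)" "E (trF \<psi>)" by auto
  then have "E (\<lambda>v. trF \<phi> v \<and> trF \<psi> v)" by (rule expr_conj)
  then show ?case by simp
next
  case (FEx j \<phi>)
  then have "E (trF \<phi>)" by simp
  then have "E (\<lambda>v. col (v 0) (v (Suc d + j)) (v 1) \<and> trF \<phi> v)" by (intro expr_conj colE)
  then have "E (\<lambda>v. \<exists>a\<in>Pts d. (\<lambda>v. col (v 0) (v (Suc d + j)) (v 1) \<and> trF \<phi> v) (v(Suc d + j := a)))"
    by (rule expr_ex)
  then show ?case
  proof (rule expr_cong)
    fix v :: "nat \<Rightarrow> 'a list"
    have h0: "\<And>a. (v(Suc d + j := a)) 0 = v 0" by simp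
    have h1: "\<And>a. (v(Suc d + j := a)) 1 = v 1" using d2 by simp
    have h2: "\<And>a. (v(Suc d + j := a)) (Suc d + j) = a" by simp
    show "(\<exists>a\<in>Pts d. (\<lambda>v. col (v 0) (v (Suc d + j)) (v 1) \<and> trF \<phi> v) (v(Suc d + j := a))) = trF (FEx j \<phi>) v"
      by (simp only: trF.simps h0 h1 h2)
  qed
qed

lemma wof_upd: "wof (v(Suc d + j := a)) = (wof v)(j := lc d (v 0) (v 1) a)"
  using d2 by (auto simp: wof_def fun_eq_iff)

lemma trF_iff:
  assumes U: "\<And>i. length (v i) = d" and oe: "v 0 \<noteq> v 1" and n: "nc (v 0) (v 1) (v 2)"
    and sl: "\<And>j. j \<le> fmax \<phi> \<Longrightarrow> col (v 0) (v (Suc d + j)) (v 1)" and lf: "isord \<or> le_free \<phi>"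
  shows "trF \<phi> v \<longleftrightarrow> fsat le \<phi> (wof v)"
  using U oe n sl lf
proof (induction \<phi> arbitrary: v)
  case (FEq s t v)
  have IH1: "\<And>y. length y = d \<Longrightarrow> trT s v y \<longleftrightarrow> y = emb d (v 0) (v 1) (feval s (wof v))"
    by (rule trT_iff) (use FEq.prems in auto)
  have IH2: "\<And>y. length y = d \<Longrightarrow> trT t v y \<longleftrightarrow> y = emb d (v 0) (v 1) (feval t (wof v))"
    by (rule trT_iff) (use FEq.prems in auto)
  have inj: "\<And>a b. emb d (v 0) (v 1) a = emb d (v 0) (v 1) b \<Longrightarrow> a = b"
    using emb_inj[OF FEq.prems(1) FEq.prems(1) FEq.prems(2)] by blast
  show ?case
  proof
    assume "trF (FEq s t) v"
    then obtain x where "length x = d" "trT s v x" "trT t v x" by auto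
    then show "fsat le (FEq s t) (wof v)" using IH1 IH2 inj by auto
  next
    assume h: "fsat le (FEq s t) (wof v)"
    let ?x = "emb d (v 0) (v 1) (feval s (wof v))"
    have "?x \<in> Pts d" "col (v 0) ?x (v 1)" "trT s v ?x" "trT t v ?x"
      using emb_col[OF FEq.prems(1) FEq.prems(1)] IH1 IH2 h by auto
    then show "trF (FEq s t) v" by (simp only: trF.simps) blast
  qed
next
  case (FLe s t v)
  then have io: isord by simp
  have ofl: "ordered_field_le le" using ordE[OF io] by blast
  have IH1: "\<And>y. length y = d \<Longrightarrow> trT s v y \<longleftrightarrow> y = emb d (v 0) (v 1) (feval s (wof v))"
    by (rule trT_iff) (use FLe.prems in auto)
  have IH2: "\<And>y. length y = d \<Longrightarrow> trT t v y \<longleftrightarrow> y = emb d (v 0) (v 1) (feval t (wof v))"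
    by (rule trT_iff) (use FLe.prems in auto)
  have L: "\<And>a b. leq le d (v 0) (v 1) (emb d (v 0) (v 1) a) (emb d (v 0) (v 1) b) \<longleftrightarrow> le a b"
    by (rule leq_iff[OF ofl FLe.prems(1) FLe.prems(1) FLe.prems(2) d2])
  show ?case
  proof
    assume "trF (FLe s t) v"
    then obtain x y where "length x = d" "length y = d" "trT s v x" "trT t v y" "leq le d (v 0) (v 1) x y" by auto
    then show "fsat le (FLe s t) (wof v)" using IH1 IH2 L by auto
  next
    assume h: "fsat le (FLe s t) (wof v)"
    let ?x = "emb d (v 0) (v 1) (feval s (wof v))" and ?y = "emb d (v 0) (v 1) (feval t (wof v))"
    have "?x \<in> Pts d" "?y \<in> Pts d" "col (v 0) ?x (v 1)" "col (v 0) ?y (v 1)" "trT s v ?x" "trT t v ?y"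
      "leq le d (v 0) (v 1) ?x ?y"
      using emb_col[OF FLe.prems(1) FLe.prems(1)] IH1 IH2 h L by auto
    then show "trF (FLe s t) v" by (simp only: trF.simps) blast
  qed
next
  case (FNeg \<phi> v)
  have "trF \<phi> v \<longleftrightarrow> fsat le \<phi> (wof v)" by (rule FNeg.IH) (use FNeg.prems in auto)
  then show ?case by simp
next
  case (FAnd \<phi> \<psi> v)
  have "trF \<phi> v \<longleftrightarrow> fsat le \<phi> (wof v)" by (rule FAnd.IH(1)) (use FAnd.prems in auto)
  moreover have "trF \<psi> v \<longleftrightarrow> fsat le \<psi> (wof v)" by (rule FAnd.IH(2)) (use FAnd.prems in auto)
  ultimately show ?case by simp
next
  case (FEx j \<phi> v)
  have U: "\<And>i. length (v i) = d" by (rule FEx.prems(1))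
  have IH: "trF \<phi> (v(Suc d + j := a)) \<longleftrightarrow> fsat le \<phi> (wof (v(Suc d + j := a)))"
    if a: "length a = d" "col (v 0) a (v 1)" for a
  proof (rule FEx.IH)
    show "\<And>i. length ((v(Suc d + j := a)) i) = d" using U a by simp
    show "(v(Suc d + j := a)) 0 \<noteq> (v(Suc d + j := a)) 1" using FEx.prems(2) d2 by simp
    show "nc ((v(Suc d + j := a)) 0) ((v(Suc d + j := a)) 1) ((v(Suc d + j := a)) 2)"
      using FEx.prems(3) d2 by simp
    show "col ((v(Suc d + j := a)) 0) ((v(Suc d + j := a)) (Suc d + j')) ((v(Suc d + j := a)) 1)"
      if "j' \<le> fmax \<phi>" for j'
      using FEx.prems(4)[of j'] that a d2 by auto
    show "isord \<or> le_free \<phi>" using FEx.prems(5) by simp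
  qed
  have oe: "v 0 \<noteq> v 1" by (rule FEx.prems(2))
  show ?case
  proof
    assume "trF (FEx j \<phi>) v"
    then obtain a where a: "length a = d" "col (v 0) a (v 1)" "trF \<phi> (v(Suc d + j := a))" by auto
    then have "fsat le \<phi> ((wof v)(j := lc d (v 0) (v 1) a))" using IH[OF a(1,2)] wof_upd by simp
    then show "fsat le (FEx j \<phi>) (wof v)" by auto
  next
    assume "fsat le (FEx j \<phi>) (wof v)"
    then obtain r where r: "fsat le \<phi> ((wof v)(j := r))" by auto
    let ?a = "emb d (v 0) (v 1) r"
    have la: "length ?a = d" by simp
    have ca: "col (v 0) ?a (v 1)" by (rule emb_col[OF U U])
    have "lc d (v 0) (v 1) ?a = r" by (rule lc_emb[OF U U oe])
    then have "fsat le \<phi> (wof (v(Suc d + j := ?a)))" using r wof_upd by simp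
    then have "trF \<phi> (v(Suc d + j := ?a))" using IH[OF la ca] by simp
    then show "trF (FEx j \<phi>) v" using la ca by (simp only: trF.simps) (blast intro: Pts_iff[THEN iffD2])
  qed
qed

end


definition upd :: "(nat \<Rightarrow> 'b) \<Rightarrow> nat \<Rightarrow> 'b list \<Rightarrow> nat \<Rightarrow> 'b" where
  "upd v k cs = (\<lambda>i. if k \<le> i \<and> i < k + length cs then cs ! (i - k) else v i)"

lemma upd_lt[simp]: "i < k \<Longrightarrow> upd v k cs i = v i"
  by (simp add: upd_def)
lemma upd_ge: "k + length cs \<le> i \<Longrightarrow> upd v k cs i = v i"
  by (simp add: upd_def)
lemma upd_in[simp]: "j < length cs \<Longrightarrow> upd v k cs (k + j) = cs ! j"
  by (simp add: upd_def)
lemma upd_U: "(\<And>i. v i \<in> U) \<Longrightarrow> set cs \<subseteq> U \<Longrightarrow> upd v k cs i \<in> U"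
  by (auto simp: upd_def)
lemma upd_Nil[simp]: "upd v k [] = v"
  by (auto simp: upd_def fun_eq_iff)
lemma upd_snoc: "upd v k (cs @ [c]) = (upd v k cs)(k + length cs := c)"
  by (auto simp: upd_def fun_eq_iff nth_append)

lemma expr_block:
  assumes "expr U I P"
  shows "expr U I (\<lambda>v. \<exists>cs. length cs = N \<and> set cs \<subseteq> U \<and> P (upd v k cs))"
  using assms
proof (induction N arbitrary: P)
  case 0
  then show ?case by (rule expr_cong) simp
next
  case (Suc N)
  have "expr U I (\<lambda>v. \<exists>c\<in>U. P (v(k + N := c)))" by (rule expr_ex[OF Suc.prems])
  then have "expr U I (\<lambda>v. \<exists>cs. length cs = N \<and> set cs \<subseteq> U \<and> (\<lambda>v. \<exists>c\<in>U. P (v(k + N := c))) (upd v k cs))"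
    by (rule Suc.IH)
  then show ?case
  proof (rule expr_cong)
    fix v :: "nat \<Rightarrow> 'a"
    show "(\<exists>cs. length cs = N \<and> set cs \<subseteq> U \<and> (\<lambda>v. \<exists>c\<in>U. P (v(k + N := c))) (upd v k cs)) =
          (\<exists>cs. length cs = Suc N \<and> set cs \<subseteq> U \<and> P (upd v k cs))"
    proof
      assume "\<exists>cs. length cs = N \<and> set cs \<subseteq> U \<and> (\<lambda>v. \<exists>c\<in>U. P (v(k + N := c))) (upd v k cs)"
      then obtain cs c where "length cs = N" "set cs \<subseteq> U" "c \<in> U" "P ((upd v k cs)(k + N := c))" by auto
      then show "\<exists>cs. length cs = Suc N \<and> set cs \<subseteq> U \<and> P (upd v k cs)"
        by (intro exI[of _ "cs @ [c]"]) (simp add: upd_snoc)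
    next
      assume "\<exists>cs. length cs = Suc N \<and> set cs \<subseteq> U \<and> P (upd v k cs)"
      then obtain cs where cs: "length cs = Suc N" "set cs \<subseteq> U" "P (upd v k cs)" by blast
      then obtain zs c where zs: "cs = zs @ [c]" by (cases cs rule: rev_cases) auto
      show "\<exists>cs. length cs = N \<and> set cs \<subseteq> U \<and> (\<lambda>v. \<exists>c\<in>U. P (v(k + N := c))) (upd v k cs)"
        using cs zs by (intro exI[of _ zs]) (auto simp: upd_snoc)
    qed
  qed
qed

lemma expr_block_all:
  assumes "expr U I P"
  shows "expr U I (\<lambda>v. \<forall>cs. length cs = N \<and> set cs \<subseteq> U \<longrightarrow> P (upd v k cs))"
proof -
  have "expr U I (\<lambda>v. \<not> (\<exists>cs. length cs = N \<and> set cs \<subseteq> U \<and> \<not> P (upd v k cs)))"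
    by (intro expr_not expr_block assms)
  then show ?thesis by (rule expr_cong) blast
qed

lemma expr_ball_list: "(\<And>x. x \<in> set xs \<Longrightarrow> expr U I (P x)) \<Longrightarrow> expr U I (\<lambda>v. \<forall>x\<in>set xs. P x v)"
proof (induction xs)
  case Nil
  then show ?case using expr_const[of U I True] by simp
next
  case (Cons a xs)
  then have "expr U I (\<lambda>v. P a v \<and> (\<forall>x\<in>set xs. P x v))" by (intro expr_conj) auto
  then show ?case by (rule expr_cong) simp
qed

context geo
begin

fun PS :: "nat \<Rightarrow> nat \<Rightarrow> (nat \<Rightarrow> 'a list) \<Rightarrow> 'a list \<Rightarrow> bool" where
  "PS b 0 v r = (r = v 0)"
| "PS b (Suc k) v r = (\<exists>r'\<in>Pts d. \<exists>q\<in>Pts d. PS b k v r' \<and>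
     sm d (v 0) (v 1) (v 2) (v (Suc d + b + k)) (v (Suc k)) q \<and> pg d (v 0) r' q r)"

lemma PS_cong: "(\<And>j. j < Suc d + b + k \<Longrightarrow> v j = w j) \<Longrightarrow> PS b k v r = PS b k w r"
proof (induction k arbitrary: r)
  case 0
  then show ?case by simp
next
  case (Suc k r)
  have 1: "\<And>y. PS b k v y = PS b k w y" by (rule Suc.IH) (use Suc.prems in simp)
  have "v 0 = w 0" "v 1 = w 1" "v 2 = w 2" "v (Suc d + b + k) = w (Suc d + b + k)" "v (Suc k) = w (Suc k)"
    using Suc.prems[of 0] Suc.prems[of 1] Suc.prems[of 2] Suc.prems[of "Suc d + b + k"] Suc.prems[of "Suc k"] d2
    by simp_all
  then show ?case by (simp add: 1)
qed

lemma PSE: "E (\<lambda>v. PS b k v (v x))"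
proof (induction k arbitrary: x)
  case 0
  have "E (\<lambda>v. v x = v 0)" by (rule expr_eq)
  then show ?case by simp
next
  case (Suc k x)
  define m where "m = x + Suc d + b + k + 1"
  have "E (\<lambda>v. PS b k v (v m) \<and> sm d (v 0) (v 1) (v 2) (v (Suc d + b + k)) (v (Suc k)) (v (Suc m)) \<and>
     pg d (v 0) (v m) (v (Suc m)) (v x))"
    by (intro expr_conj smE pgE Suc.IH)
  then have "E (\<lambda>v. \<exists>a\<in>Pts d. \<exists>c\<in>Pts d. (\<lambda>v. PS b k v (v m) \<and> sm d (v 0) (v 1) (v 2) (v (Suc d + b + k)) (v (Suc k)) (v (Suc m)) \<and>
     pg d (v 0) (v m) (v (Suc m)) (v x)) (v(m := a, Suc m := c)))"
    by (rule expr_ex2)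
  then show ?case
  proof (rule expr_cong)
    fix v :: "nat \<Rightarrow> 'a list"
    have 1: "\<And>a c y. PS b k (v(m := a, Suc m := c)) y = PS b k v y" by (rule PS_cong) (auto simp: m_def)
    have 3: "0 \<noteq> m" "1 \<noteq> m" "2 \<noteq> m" "x \<noteq> m" "Suc d + b + k \<noteq> m" "Suc k \<noteq> m"
      "0 \<noteq> Suc m" "1 \<noteq> Suc m" "2 \<noteq> Suc m" "x \<noteq> Suc m" "Suc d + b + k \<noteq> Suc m" "Suc k \<noteq> Suc m"
      using d2 by (auto simp: m_def)
    show "(\<exists>a\<in>Pts d. \<exists>c\<in>Pts d. (\<lambda>v. PS b k v (v m) \<and> sm d (v 0) (v 1) (v 2) (v (Suc d + b + k)) (v (Suc k)) (v (Suc m)) \<and>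
     pg d (v 0) (v m) (v (Suc m)) (v x)) (v(m := a, Suc m := c))) = PS b (Suc k) v (v x)"
      using 3 by (simp add: 1 del: add_Suc add_Suc_right)
  qed
qed

definition psum :: "nat \<Rightarrow> nat \<Rightarrow> (nat \<Rightarrow> 'a list) \<Rightarrow> 'a list" where
  "psum b k v = map (\<lambda>i. (\<Sum>j<k. (v (Suc j) ! i - v 0 ! i) * lc d (v 0) (v 1) (v (Suc d + b + j))) + v 0 ! i) [0..<d]"

lemma PS_iff:
  assumes U: "\<And>i. length (v i) = d" and oe: "v 0 \<noteq> v 1" and n: "nc (v 0) (v 1) (v 2)"
    and sl: "\<And>j. j < k \<Longrightarrow> col (v 0) (v (Suc d + b + j)) (v 1)" and lr: "length r = d"
  shows "PS b k v r \<longleftrightarrow> r = psum b k v"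
  using sl lr
proof (induction k arbitrary: r)
  case (0 r)
  have "psum b 0 v = v 0" using U[of 0] by (simp add: psum_def list_eq_iff_nth_eq)
  then show ?case by simp
next
  case (Suc k r)
  let ?x = "v (Suc d + b + k)"
  let ?s = "lc d (v 0) (v 1) ?x"
  have IH: "\<And>y. length y = d \<Longrightarrow> PS b k v y \<longleftrightarrow> y = psum b k v"
    by (rule Suc.IH) (use Suc.prems in auto)
  have xe: "emb d (v 0) (v 1) ?s = ?x" by (rule emb_lc[OF U U U oe Suc.prems(1)]) simp
  have x: "\<forall>i<d. ?x ! i = v 0 ! i + ?s * (v 1 ! i - v 0 ! i)"
    using xe by (metis nth_emb)
  have SM: "\<And>q. length q = d \<Longrightarrow> sm d (v 0) (v 1) (v 2) ?x (v (Suc k)) q \<longleftrightarrow>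
      (\<forall>i<d. q ! i = v 0 ! i + ?s * (v (Suc k) ! i - v 0 ! i))"
    by (rule sm_iff[OF U U U U U _ d2 three n x])
  have PG: "\<And>r' q. length r' = d \<Longrightarrow> length q = d \<Longrightarrow> pg d (v 0) r' q r \<longleftrightarrow> (\<forall>i<d. r ! i = r' ! i + q ! i - v 0 ! i)"
    by (rule pg_iff[OF U _ _ Suc.prems(2) d2 three])
  have step: "\<forall>i<d. psum b (Suc k) v ! i = psum b k v ! i + ?s * (v (Suc k) ! i - v 0 ! i)"
    by (simp add: psum_def algebra_simps)
  show ?case
  proof
    assume "PS b (Suc k) v r"
    then obtain r' q where l: "length r' = d" "length q = d" and h: "PS b k v r'"
      "sm d (v 0) (v 1) (v 2) ?x (v (Suc k)) q" "pg d (v 0) r' q r" by auto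
    have r': "r' = psum b k v" using IH[OF l(1)] h(1) by simp
    have q: "\<forall>i<d. q ! i = v 0 ! i + ?s * (v (Suc k) ! i - v 0 ! i)" using SM[OF l(2)] h(2) by simp
    have rr: "\<forall>i<d. r ! i = r' ! i + q ! i - v 0 ! i" using PG[OF l] h(3) by simp
    show "r = psum b (Suc k) v"
      using Suc.prems(2) rr q step r' by (simp add: list_eq_iff_nth_eq psum_def)
  next
    assume r: "r = psum b (Suc k) v"
    define q where "q = mk d (\<lambda>i. v 0 ! i + ?s * (v (Suc k) ! i - v 0 ! i))"
    have lq: "length q = d" by (simp add: q_def)
    have lp: "length (psum b k v) = d" by (simp add: psum_def)
    have h1: "PS b k v (psum b k v)" using IH[OF lp] by simp
    have h2: "sm d (v 0) (v 1) (v 2) ?x (v (Suc k)) q" using SM[OF lq] by (simp add: q_def)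
    have h3: "pg d (v 0) (psum b k v) q r" using PG[OF lp lq] r step by (simp add: q_def)
    have "psum b k v \<in> Pts d" "q \<in> Pts d" using lp lq by simp_all
    then show "PS b (Suc k) v r" using h1 h2 h3 by (simp only: PS.simps) blast
  qed
qed

end


definition alpha :: "nat \<Rightarrow> 'a::field list \<Rightarrow> 'a list list \<Rightarrow> 'a list \<Rightarrow> 'a list" where
  "alpha d og es s = map (\<lambda>i. (\<Sum>j<d. (es ! j ! i - og ! i) * s ! j) + og ! i) [0..<d]"

lemma length_alpha[simp]: "length (alpha d og es s) = d"
  by (simp add: alpha_def)

lemma concat_block:
  assumes "\<forall>y\<in>set ys. length y = d" "l < length ys" "j < d"
  shows "concat ys ! (d * l + j) = ys ! l ! j"
  using assms
proof (induction ys arbitrary: l)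
  case Nil then show ?case by simp
next
  case (Cons y ys l)
  show ?case
  proof (cases l)
    case 0 then show ?thesis using Cons.prems by (simp add: nth_append)
  next
    case (Suc l')
    have "concat (y # ys) ! (d * l + j) = concat ys ! (d * l' + j)"
      using Cons.prems Suc by (simp add: nth_append)
    also have "\<dots> = ys ! l' ! j" using Cons.IH[of l'] Cons.prems Suc by simp
    finally show ?thesis using Suc by simp
  qed
qed

lemma length_concat_d: "\<forall>y\<in>set ys. length y = d \<Longrightarrow> length (concat ys) = d * length ys"
  by (induction ys) auto

lemma concat_block_map:
  assumes "\<forall>y\<in>set ys. length y = d" "l < length ys"
  shows "map (\<lambda>j. concat ys ! (d * l + j)) [0..<d] = ys ! l"
proof -
  have "length (ys ! l) = d" using assms by simp
  then show ?thesis using concat_block[OF assms] by (simp add: list_eq_iff_nth_eq)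
qed

context geo
begin

definition esv :: "(nat \<Rightarrow> 'a list) \<Rightarrow> 'a list list" where
  "esv v = map (\<lambda>j. v (Suc j)) [0..<d]"

lemma psum_alpha:
  "psum b d v = alpha d (v 0) (esv v) (map (\<lambda>j. lc d (v 0) (v 1) (v (Suc d + b + j))) [0..<d])"
  unfolding psum_def alpha_def esv_def by (intro map_cong refl arg_cong2[where f = "(+)"] sum.cong) auto

lemma esv_cong: "(\<And>i. i \<le> d \<Longrightarrow> v i = w i) \<Longrightarrow> esv v = esv w"
  by (simp add: esv_def)

section \<open>Frame\<close>

abbreviation MM where "MM \<equiv> Suc d + 2 * d"

definition SurjIn :: "(nat \<Rightarrow> 'a list) \<Rightarrow> bool" where
  "SurjIn v \<longleftrightarrow> (\<forall>j<d. col (v 0) (v (Suc d + j)) (v 1)) \<and> PS 0 d v (v MM)"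

definition SurjQ :: "(nat \<Rightarrow> 'a list) \<Rightarrow> bool" where
  "SurjQ v \<longleftrightarrow> (\<forall>a\<in>Pts d. (\<lambda>v. \<exists>cs. length cs = d \<and> set cs \<subseteq> Pts d \<and> SurjIn (upd v (Suc d) cs)) (v(MM := a)))"

definition InjIn :: "(nat \<Rightarrow> 'a list) \<Rightarrow> bool" where
  "InjIn v \<longleftrightarrow> ((\<forall>j<2 * d. col (v 0) (v (Suc d + j)) (v 1)) \<and> PS 0 d v (v MM) \<and> PS d d v (v MM) \<longrightarrow>
      (\<forall>j<d. v (Suc d + j) = v (Suc d + d + j)))"

definition InjQ :: "(nat \<Rightarrow> 'a list) \<Rightarrow> bool" where
  "InjQ v \<longleftrightarrow> (\<forall>a\<in>Pts d. (\<lambda>v. \<forall>cs. length cs = 2 * d \<and> set cs \<subseteq> Pts d \<longrightarrow> InjIn (upd v (Suc d) cs)) (v(MM := a)))"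

definition FrameQ :: "(nat \<Rightarrow> 'a list) \<Rightarrow> bool" where
  "FrameQ v \<longleftrightarrow> v 0 \<noteq> v 1 \<and> nc (v 0) (v 1) (v 2) \<and> SurjQ v \<and> InjQ v"

lemma FrameQE: "E FrameQ"
proof -
  have "E SurjIn" unfolding SurjIn_def by (intro expr_conj expr_ball_nat colE PSE)
  then have s: "E SurjQ" unfolding SurjQ_def by (intro expr_all expr_block)
  have "E InjIn" unfolding InjIn_def by (intro expr_imp expr_conj expr_ball_nat colE PSE expr_eq)
  then have i: "E InjQ" unfolding InjQ_def by (intro expr_all expr_block_all)
  have "E (\<lambda>v. \<not> v 0 = v 1 \<and> nc (v 0) (v 1) (v 2) \<and> SurjQ v \<and> InjQ v)"
    by (intro expr_conj expr_not expr_eq ncE s i)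
  then show ?thesis unfolding FrameQ_def by simp
qed

lemma upd_low: "i \<le> d \<Longrightarrow> upd v (Suc d) cs i = v i"
  by simp

lemma w_PS:
  assumes U: "\<And>i. length (v i) = d" and oe: "v 0 \<noteq> v 1" and n: "nc (v 0) (v 1) (v 2)"
    and lcs: "set cs \<subseteq> Pts d" and bl: "b + d \<le> length cs"
    and sl: "\<And>j. j < d \<Longrightarrow> col (v 0) (cs ! (b + j)) (v 1)" and lr: "length r = d"
  shows "PS b d (upd v (Suc d) cs) r \<longleftrightarrow>
     r = alpha d (v 0) (esv v) (map (\<lambda>j. lc d (v 0) (v 1) (cs ! (b + j))) [0..<d])"
proof -
  let ?w = "upd v (Suc d) cs"
  have Uw: "\<And>i. length (?w i) = d" using upd_U[of v "Pts d" cs "Suc d"] U lcs by simp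
  have w0: "?w 0 = v 0" "?w 1 = v 1" "?w 2 = v 2" using d2 by simp_all
  have ws: "\<And>j. j < d \<Longrightarrow> ?w (Suc d + b + j) = cs ! (b + j)"
  proof -
    fix j assume "j < d"
    then have "b + j < length cs" using bl by simp
    then show "?w (Suc d + b + j) = cs ! (b + j)" using upd_in[of "b + j" cs v "Suc d"] by (simp add: add.assoc)
  qed
  have "PS b d ?w r \<longleftrightarrow> r = psum b d ?w"
    by (rule PS_iff[OF Uw]) (use w0 oe n sl ws lr in auto)
  also have "psum b d ?w = alpha d (v 0) (esv v) (map (\<lambda>j. lc d (v 0) (v 1) (cs ! (b + j))) [0..<d])"
  proof -
    have m: "map (\<lambda>j. lc d (v 0) (v 1) (?w (Suc d + b + j))) [0..<d] = map (\<lambda>j. lc d (v 0) (v 1) (cs ! (b + j))) [0..<d]"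
      using ws by (intro map_cong) auto
    have e: "esv ?w = esv v" by (rule esv_cong) simp
    show ?thesis unfolding psum_alpha w0 m e ..
  qed
  finally show ?thesis .
qed

lemma map_lc_emb:
  assumes U: "\<And>i. length (v i) = d" and oe: "v 0 \<noteq> v 1" and ls: "length s = d"
  shows "map (\<lambda>j. lc d (v 0) (v 1) (map (emb d (v 0) (v 1)) s ! j)) [0..<d] = s"
  using ls lc_emb[OF U U oe] by (simp add: list_eq_iff_nth_eq)

lemma surjin_iff:
  assumes U: "\<And>i. length (v i) = d" and oe: "v 0 \<noteq> v 1" and n: "nc (v 0) (v 1) (v 2)"
    and la: "length a = d" and lcs: "length cs = d" "set cs \<subseteq> Pts d"
  shows "SurjIn (upd (v(MM := a)) (Suc d) cs) \<longleftrightarrow> (\<forall>j<d. col (v 0) (cs ! j) (v 1)) \<and>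
     a = alpha d (v 0) (esv v) (map (\<lambda>j. lc d (v 0) (v 1) (cs ! j)) [0..<d])"
proof -
  let ?v = "v(MM := a)"
  have Uv: "\<And>i. length (?v i) = d" using U la by simp
  have v0: "?v 0 = v 0" "?v 1 = v 1" "?v 2 = v 2" using d2 by simp_all
  have ev: "esv ?v = esv v" by (rule esv_cong) simp
  have wM: "upd ?v (Suc d) cs MM = a" using lcs by (simp add: upd_ge)
  have ws: "\<And>j. j < d \<Longrightarrow> upd ?v (Suc d) cs (Suc d + j) = cs ! j" using lcs by (simp add: upd_def)
  show ?thesis
  proof (cases "\<forall>j<d. col (v 0) (cs ! j) (v 1)")
    case True
    have "PS 0 d (upd ?v (Suc d) cs) a \<longleftrightarrow>
        a = alpha d (?v 0) (esv ?v) (map (\<lambda>j. lc d (?v 0) (?v 1) (cs ! (0 + j))) [0..<d])"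
      by (rule w_PS[OF Uv]) (use v0 oe n lcs True la in auto)
    then show ?thesis unfolding SurjIn_def using True ws wM v0 ev by (simp add: upd_low)
  next
    case False
    then show ?thesis unfolding SurjIn_def using ws v0 by (auto simp: upd_low)
  qed
qed

lemma SurjQ_iff:
  assumes U: "\<And>i. length (v i) = d" and oe: "v 0 \<noteq> v 1" and n: "nc (v 0) (v 1) (v 2)"
  shows "SurjQ v \<longleftrightarrow> (\<forall>p\<in>Pts d. \<exists>s. length s = d \<and> p = alpha d (v 0) (esv v) s)"
proof
  assume h: "SurjQ v"
  show "\<forall>p\<in>Pts d. \<exists>s. length s = d \<and> p = alpha d (v 0) (esv v) s"
  proof
    fix p :: "'a list" assume p: "p \<in> Pts d"
    have "\<exists>cs. length cs = d \<and> set cs \<subseteq> Pts d \<and> SurjIn (upd (v(MM := p)) (Suc d) cs)"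
      using bspec[OF h[unfolded SurjQ_def] p] by simp
    then obtain cs where cs: "length cs = d" "set cs \<subseteq> Pts d" "SurjIn (upd (v(MM := p)) (Suc d) cs)"
      by blast
    have "p = alpha d (v 0) (esv v) (map (\<lambda>j. lc d (v 0) (v 1) (cs ! j)) [0..<d])"
      using surjin_iff[OF U oe n _ cs(1,2), of p] p cs(3) by simp
    then show "\<exists>s. length s = d \<and> p = alpha d (v 0) (esv v) s"
      by (intro exI[of _ "map (\<lambda>j. lc d (v 0) (v 1) (cs ! j)) [0..<d]"]) simp
  qed
next
  assume h: "\<forall>p\<in>Pts d. \<exists>s. length s = d \<and> p = alpha d (v 0) (esv v) s"
  show "SurjQ v" unfolding SurjQ_def
  proof
    fix a :: "'a list" assume a: "a \<in> Pts d"
    then obtain s where s: "length s = d" "a = alpha d (v 0) (esv v) s" using h by blast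
    let ?cs = "map (emb d (v 0) (v 1)) s"
    have l: "length ?cs = d" "set ?cs \<subseteq> Pts d" using s by auto
    have c: "\<forall>j<d. col (v 0) (?cs ! j) (v 1)" using s emb_col[OF U U] by simp
    have "SurjIn (upd (v(MM := a)) (Suc d) ?cs)"
      using surjin_iff[OF U oe n _ l] a c s map_lc_emb[OF U oe s(1)] by simp
    then show "\<exists>cs. length cs = d \<and> set cs \<subseteq> Pts d \<and> SurjIn (upd (v(MM := a)) (Suc d) cs)"
      using l by blast
  qed
qed

lemma injin_iff:
  assumes U: "\<And>i. length (v i) = d" and oe: "v 0 \<noteq> v 1" and n: "nc (v 0) (v 1) (v 2)"
    and la: "length a = d" and lcs: "length cs = 2 * d" "set cs \<subseteq> Pts d"
  shows "InjIn (upd (v(MM := a)) (Suc d) cs) \<longleftrightarrow>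
    ((\<forall>j<2 * d. col (v 0) (cs ! j) (v 1)) \<and>
     a = alpha d (v 0) (esv v) (map (\<lambda>j. lc d (v 0) (v 1) (cs ! j)) [0..<d]) \<and>
     a = alpha d (v 0) (esv v) (map (\<lambda>j. lc d (v 0) (v 1) (cs ! (d + j))) [0..<d]) \<longrightarrow>
     (\<forall>j<d. cs ! j = cs ! (d + j)))"
proof -
  let ?v = "v(MM := a)"
  have Uv: "\<And>i. length (?v i) = d" using U la by simp
  have v0: "?v 0 = v 0" "?v 1 = v 1" "?v 2 = v 2" using d2 by simp_all
  have ev: "esv ?v = esv v" by (rule esv_cong) simp
  have wM: "upd ?v (Suc d) cs MM = a" using lcs by (simp add: upd_ge)
  have ws: "\<And>j. j < 2 * d \<Longrightarrow> upd ?v (Suc d) cs (Suc d + j) = cs ! j" using lcs by (simp add: upd_def)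
  have ws2: "\<And>j. j < d \<Longrightarrow> upd ?v (Suc d) cs (Suc d + d + j) = cs ! (d + j)"
    using ws by (metis add.assoc add_less_cancel_left mult_2)
  show ?thesis
  proof (cases "\<forall>j<2 * d. col (v 0) (cs ! j) (v 1)")
    case True
    have P1: "PS 0 d (upd ?v (Suc d) cs) a \<longleftrightarrow>
        a = alpha d (?v 0) (esv ?v) (map (\<lambda>j. lc d (?v 0) (?v 1) (cs ! (0 + j))) [0..<d])"
      by (rule w_PS[OF Uv]) (use v0 oe n lcs True la in auto)
    have P2: "PS d d (upd ?v (Suc d) cs) a \<longleftrightarrow>
        a = alpha d (?v 0) (esv ?v) (map (\<lambda>j. lc d (?v 0) (?v 1) (cs ! (d + j))) [0..<d])"
      by (rule w_PS[OF Uv]) (use v0 oe n lcs True la in auto)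
    have eA: "(\<forall>j<2 * d. col (upd ?v (Suc d) cs 0) (upd ?v (Suc d) cs (Suc d + j)) (upd ?v (Suc d) cs 1)) =
        (\<forall>j<2 * d. col (v 0) (cs ! j) (v 1))"
      using True ws v0 by (simp add: upd_low)
    have eB: "PS 0 d (upd ?v (Suc d) cs) (upd ?v (Suc d) cs MM) =
        (a = alpha d (v 0) (esv v) (map (\<lambda>j. lc d (v 0) (v 1) (cs ! j)) [0..<d]))"
      unfolding wM P1 v0 ev by simp
    have eC: "PS d d (upd ?v (Suc d) cs) (upd ?v (Suc d) cs MM) =
        (a = alpha d (v 0) (esv v) (map (\<lambda>j. lc d (v 0) (v 1) (cs ! (d + j))) [0..<d]))"
      unfolding wM P2 v0 ev by simp
    have eD: "(\<forall>j<d. upd ?v (Suc d) cs (Suc d + j) = upd ?v (Suc d) cs (Suc d + d + j)) =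
        (\<forall>j<d. cs ! j = cs ! (d + j))" using ws ws2 by auto
    show ?thesis unfolding InjIn_def eA eB eC eD ..
  next
    case False
    have "\<not> (\<forall>j<2 * d. col (upd ?v (Suc d) cs 0) (upd ?v (Suc d) cs (Suc d + j)) (upd ?v (Suc d) cs 1))"
      using False ws v0 by (simp add: upd_low)
    then show ?thesis unfolding InjIn_def using False by blast
  qed
qed

lemma InjQ_iff:
  assumes U: "\<And>i. length (v i) = d" and oe: "v 0 \<noteq> v 1" and n: "nc (v 0) (v 1) (v 2)"
  shows "InjQ v \<longleftrightarrow> inj_on (alpha d (v 0) (esv v)) {s. length s = d}"
proof
  assume h: "InjQ v"
  show "inj_on (alpha d (v 0) (esv v)) {s. length s = d}"
  proof (rule inj_onI)
    fix s1 s2 :: "'a list" assume s1: "s1 \<in> {s. length s = d}" and s2: "s2 \<in> {s. length s = d}"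
      and eq: "alpha d (v 0) (esv v) s1 = alpha d (v 0) (esv v) s2"
    let ?a = "alpha d (v 0) (esv v) s1"
    let ?cs = "map (emb d (v 0) (v 1)) s1 @ map (emb d (v 0) (v 1)) s2"
    have l1: "length s1 = d" and l2: "length s2 = d" using s1 s2 by auto
    have lcs: "length ?cs = 2 * d" "set ?cs \<subseteq> Pts d" using l1 l2 by auto
    have a: "?a \<in> Pts d" by simp
    have c: "\<forall>j<2 * d. col (v 0) (?cs ! j) (v 1)"
      using emb_col[OF U U] l1 l2 by (auto simp: nth_append)
    have m1: "map (\<lambda>j. lc d (v 0) (v 1) (?cs ! j)) [0..<d] = s1"
      using l1 l2 lc_emb[OF U U oe] by (simp add: list_eq_iff_nth_eq nth_append)
    have m2: "map (\<lambda>j. lc d (v 0) (v 1) (?cs ! (d + j))) [0..<d] = s2"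
      using l1 l2 lc_emb[OF U U oe] by (simp add: list_eq_iff_nth_eq nth_append)
    have "InjIn (upd (v(MM := ?a)) (Suc d) ?cs)" using h a lcs unfolding InjQ_def by simp
    then have "\<forall>j<d. ?cs ! j = ?cs ! (d + j)"
      using injin_iff[OF U oe n length_alpha lcs] c m1 m2 eq by simp
    then have "\<forall>j<d. emb d (v 0) (v 1) (s1 ! j) = emb d (v 0) (v 1) (s2 ! j)"
      using l1 l2 by (simp add: nth_append)
    then have "\<forall>j<d. s1 ! j = s2 ! j" using emb_inj[OF U U oe] by blast
    then show "s1 = s2" using l1 l2 by (simp add: list_eq_iff_nth_eq)
  qed
next
  assume inj: "inj_on (alpha d (v 0) (esv v)) {s. length s = d}"
  show "InjQ v" unfolding InjQ_def
  proof (intro ballI allI impI)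
    fix a :: "'a list" and cs :: "'a list list" assume a: "a \<in> Pts d" and lcs: "length cs = 2 * d \<and> set cs \<subseteq> Pts d"
    have la: "length a = d" using a by simp
    show "InjIn (upd (v(MM := a)) (Suc d) cs)"
      unfolding injin_iff[OF U oe n la conjunct1[OF lcs] conjunct2[OF lcs]]
    proof (intro impI)
      assume h: "(\<forall>j<2 * d. col (v 0) (cs ! j) (v 1)) \<and>
         a = alpha d (v 0) (esv v) (map (\<lambda>j. lc d (v 0) (v 1) (cs ! j)) [0..<d]) \<and>
         a = alpha d (v 0) (esv v) (map (\<lambda>j. lc d (v 0) (v 1) (cs ! (d + j))) [0..<d])"
      then have "map (\<lambda>j. lc d (v 0) (v 1) (cs ! j)) [0..<d] = map (\<lambda>j. lc d (v 0) (v 1) (cs ! (d + j))) [0..<d]"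
        using inj_onD[OF inj] by fastforce
      then have eqs: "\<forall>j<d. lc d (v 0) (v 1) (cs ! j) = lc d (v 0) (v 1) (cs ! (d + j))"
        by (simp add: list_eq_iff_nth_eq)
      show "\<forall>j<d. cs ! j = cs ! (d + j)"
      proof (intro allI impI)
        fix j assume j: "j < d"
        have j1: "j < 2 * d" "d + j < 2 * d" using j by auto
        have "cs ! j \<in> set cs" "cs ! (d + j) \<in> set cs" using lcs j1 by simp_all
        then have l1: "length (cs ! j) = d" "length (cs ! (d + j)) = d"
          using lcs by (simp_all add: subset_iff)
        have "cs ! j = emb d (v 0) (v 1) (lc d (v 0) (v 1) (cs ! j))"
          using emb_lc[OF U U l1(1) oe] h j1 by simp
        also have "\<dots> = emb d (v 0) (v 1) (lc d (v 0) (v 1) (cs ! (d + j)))" using eqs j by simp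
        also have "\<dots> = cs ! (d + j)"
          using emb_lc[OF U U l1(2) oe] h j1 by simp
        finally show "cs ! j = cs ! (d + j)" .
      qed
    qed
  qed
qed

lemma FrameQ_iff:
  assumes U: "\<And>i. length (v i) = d"
  shows "FrameQ v \<longleftrightarrow> v 0 \<noteq> v 1 \<and> nc (v 0) (v 1) (v 2) \<and>
     (\<forall>p\<in>Pts d. \<exists>s. length s = d \<and> p = alpha d (v 0) (esv v) s) \<and>
     inj_on (alpha d (v 0) (esv v)) {s. length s = d}"
  unfolding FrameQ_def using SurjQ_iff[of v, OF U] InjQ_iff[of v, OF U] by blast

end


lemma blk_lt: "l < m \<Longrightarrow> j < (d::nat) \<Longrightarrow> d * l + j < d * m"
proof -
  assume l: "l < m" and j: "j < d"
  have "d * Suc l \<le> d * m" using l by (intro mult_le_mono2) simp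
  then show ?thesis using j by simp
qed

context geo
begin

definition NN :: "nat \<Rightarrow> ffm \<Rightarrow> nat" where
  "NN m \<phi> = max (d * m) (Suc (fmax \<phi>))"

definition InIn :: "nat \<Rightarrow> ffm \<Rightarrow> (nat \<Rightarrow> 'a list) \<Rightarrow> bool" where
  "InIn m \<phi> v \<longleftrightarrow> (\<forall>j<NN m \<phi>. col (v 0) (v (Suc d + j)) (v 1)) \<and>
     (\<forall>l<m. PS (d * l) d v (v (Suc d + NN m \<phi> + l))) \<and> trF \<phi> v"

definition InRelQ :: "nat \<Rightarrow> ffm \<Rightarrow> (nat \<Rightarrow> 'a list) \<Rightarrow> bool" where
  "InRelQ m \<phi> v \<longleftrightarrow> (\<exists>cs. length cs = NN m \<phi> \<and> set cs \<subseteq> Pts d \<and> InIn m \<phi> (upd v (Suc d) cs))"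

lemma InRelQE: "isord \<or> le_free \<phi> \<Longrightarrow> E (InRelQ m \<phi>)"
proof -
  assume lf: "isord \<or> le_free \<phi>"
  have "E (InIn m \<phi>)" unfolding InIn_def
    by (intro expr_conj expr_ball_nat colE PSE trFE lf)
  then show ?thesis unfolding InRelQ_def by (rule expr_block)
qed

lemma InRelQ_iff:
  assumes U: "\<And>i. length (v i) = d" and oe: "v 0 \<noteq> v 1" and n: "nc (v 0) (v 1) (v 2)"
    and T: "T \<subseteq> {ys. length ys = m \<and> set ys \<subseteq> Pts d}"
    and fd: "\<And>w. map w [0..<d * m] \<in> concat ` T \<longleftrightarrow> fsat le \<phi> w"
    and lf: "isord \<or> le_free \<phi>"
  shows "InRelQ m \<phi> v \<longleftrightarrow> (\<exists>ys\<in>T. \<forall>l<m. v (Suc d + NN m \<phi> + l) = alpha d (v 0) (esv v) (ys ! l))"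
proof -
  let ?N = "NN m \<phi>"
  have N1: "d * m \<le> ?N" and N2: "fmax \<phi> < ?N" by (auto simp: NN_def)
  have key: "InIn m \<phi> (upd v (Suc d) cs) \<longleftrightarrow> (\<forall>j<?N. col (v 0) (cs ! j) (v 1)) \<and>
      map (\<lambda>j. lc d (v 0) (v 1) (cs ! j)) [0..<d * m] \<in> concat ` T \<and>
      (\<forall>l<m. v (Suc d + ?N + l) = alpha d (v 0) (esv v) (map (\<lambda>j. lc d (v 0) (v 1) (cs ! (d * l + j))) [0..<d]))"
    if cs: "length cs = ?N" "set cs \<subseteq> Pts d" for cs
  proof -
    let ?w = "upd v (Suc d) cs"
    have Uw: "\<And>i. length (?w i) = d" using upd_U[of v "Pts d" cs "Suc d"] U cs by simp
    have w0: "?w 0 = v 0" "?w 1 = v 1" "?w 2 = v 2" using d2 by simp_all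
    have ws: "\<And>j. j < ?N \<Longrightarrow> ?w (Suc d + j) = cs ! j" using cs by (simp add: upd_def)
    have wa: "\<And>l. ?w (Suc d + ?N + l) = v (Suc d + ?N + l)" using cs by (simp add: upd_ge)
    show ?thesis
    proof (cases "\<forall>j<?N. col (v 0) (cs ! j) (v 1)")
      case False
      then have "\<not> (\<forall>j<?N. col (?w 0) (?w (Suc d + j)) (?w 1))" using ws w0 by simp
      then show ?thesis unfolding InIn_def using False by blast
    next
      case True
      have sl: "\<And>j. j < ?N \<Longrightarrow> col (v 0) (cs ! j) (v 1)" using True by blast
      have eA: "(\<forall>j<?N. col (?w 0) (?w (Suc d + j)) (?w 1)) = True" using ws w0 True by simp
      have eB: "(\<forall>l<m. PS (d * l) d ?w (?w (Suc d + ?N + l))) =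
         (\<forall>l<m. v (Suc d + ?N + l) = alpha d (v 0) (esv v) (map (\<lambda>j. lc d (v 0) (v 1) (cs ! (d * l + j))) [0..<d]))"
      proof -
        have "PS (d * l) d ?w (?w (Suc d + ?N + l)) \<longleftrightarrow>
           v (Suc d + ?N + l) = alpha d (v 0) (esv v) (map (\<lambda>j. lc d (v 0) (v 1) (cs ! (d * l + j))) [0..<d])"
          if l: "l < m" for l
        proof -
          have "d * l + d \<le> d * m" using l by (metis add.commute mult_Suc_right mult_le_mono2 Suc_leI)
          then have bl: "d * l + d \<le> length cs" using N1 cs by simp
          have "\<And>j. j < d \<Longrightarrow> d * l + j < ?N" using bl cs by simp
          then show ?thesis unfolding wa
            by (intro w_PS[OF U oe n cs(2) bl]) (use sl U in auto)
        qed
        then show ?thesis by auto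
      qed
      have wofw: "\<And>j. j < ?N \<Longrightarrow> wof ?w j = lc d (v 0) (v 1) (cs ! j)"
        unfolding wof_def using ws w0 by simp
      have eC: "trF \<phi> ?w \<longleftrightarrow> map (\<lambda>j. lc d (v 0) (v 1) (cs ! j)) [0..<d * m] \<in> concat ` T"
      proof -
        have "trF \<phi> ?w \<longleftrightarrow> fsat le \<phi> (wof ?w)"
          by (rule trF_iff[OF Uw]) (use w0 oe n ws sl N2 lf in auto)
        also have "\<dots> \<longleftrightarrow> map (wof ?w) [0..<d * m] \<in> concat ` T" using fd by simp
        also have "map (wof ?w) [0..<d * m] = map (\<lambda>j. lc d (v 0) (v 1) (cs ! j)) [0..<d * m]"
          using wofw N1 by (intro map_cong) auto
        finally show ?thesis .
      qed
      show ?thesis unfolding InIn_def eA eB eC using True by blast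
    qed
  qed
  show ?thesis
  proof
    assume "InRelQ m \<phi> v"
    then obtain cs where cs: "length cs = ?N" "set cs \<subseteq> Pts d" "InIn m \<phi> (upd v (Suc d) cs)"
      unfolding InRelQ_def by blast
    then have k: "map (\<lambda>j. lc d (v 0) (v 1) (cs ! j)) [0..<d * m] \<in> concat ` T"
      "\<forall>l<m. v (Suc d + ?N + l) = alpha d (v 0) (esv v) (map (\<lambda>j. lc d (v 0) (v 1) (cs ! (d * l + j))) [0..<d])"
      using key[OF cs(1,2)] by simp_all
    then obtain ys where ys: "ys \<in> T" "concat ys = map (\<lambda>j. lc d (v 0) (v 1) (cs ! j)) [0..<d * m]" by auto
    have ly0: "length ys = m" "set ys \<subseteq> Pts d" using ys(1) T by auto
    have ly: "length ys = m" "\<forall>y\<in>set ys. length y = d" using ly0 by (auto simp: subset_iff)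
    have "\<forall>l<m. v (Suc d + ?N + l) = alpha d (v 0) (esv v) (ys ! l)"
    proof (intro allI impI)
      fix l assume l: "l < m"
      have "map (\<lambda>j. lc d (v 0) (v 1) (cs ! (d * l + j))) [0..<d] = map (\<lambda>j. concat ys ! (d * l + j)) [0..<d]"
      proof (intro map_cong refl)
        fix j assume "j \<in> set [0..<d]"
        then have j: "j < d" by simp
        have "d * l + j < d * m" using blk_lt[OF l j] .
        then show "lc d (v 0) (v 1) (cs ! (d * l + j)) = concat ys ! (d * l + j)" using ys(2) by simp
      qed
      also have "\<dots> = ys ! l" using concat_block_map[OF ly(2)] ly(1) l by simp
      finally show "v (Suc d + ?N + l) = alpha d (v 0) (esv v) (ys ! l)" using k(2) l by simp
    qed
    then show "\<exists>ys\<in>T. \<forall>l<m. v (Suc d + ?N + l) = alpha d (v 0) (esv v) (ys ! l)" using ys(1) by blast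
  next
    assume "\<exists>ys\<in>T. \<forall>l<m. v (Suc d + ?N + l) = alpha d (v 0) (esv v) (ys ! l)"
    then obtain ys where ys: "ys \<in> T" "\<forall>l<m. v (Suc d + ?N + l) = alpha d (v 0) (esv v) (ys ! l)" by blast
    have ly0: "length ys = m" "set ys \<subseteq> Pts d" using ys(1) T by auto
    have ly: "length ys = m" "\<forall>y\<in>set ys. length y = d" using ly0 by (auto simp: subset_iff)
    have lc: "length (concat ys) = d * m" using length_concat_d[OF ly(2)] ly(1) by simp
    define s where "s = concat ys @ replicate (?N - d * m) 0"
    have ls: "length s = ?N" using lc N1 by (simp add: s_def)
    define cs where "cs = map (emb d (v 0) (v 1)) s"
    have lcs: "length cs = ?N" "set cs \<subseteq> Pts d" using ls by (auto simp: cs_def)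
    have sl: "\<forall>j<?N. col (v 0) (cs ! j) (v 1)" using ls emb_col[OF U U] by (simp add: cs_def)
    have lce: "\<And>j. j < ?N \<Longrightarrow> lc d (v 0) (v 1) (cs ! j) = s ! j"
      using ls lc_emb[OF U U oe] by (simp add: cs_def)
    have sc: "\<And>j. j < d * m \<Longrightarrow> s ! j = concat ys ! j" using lc by (simp add: s_def nth_append)
    have m1: "map (\<lambda>j. lc d (v 0) (v 1) (cs ! j)) [0..<d * m] = concat ys"
      using lce sc N1 lc by (simp add: list_eq_iff_nth_eq)
    have m2: "map (\<lambda>j. lc d (v 0) (v 1) (cs ! (d * l + j))) [0..<d] = ys ! l" if l: "l < m" for l
    proof -
      have "map (\<lambda>j. lc d (v 0) (v 1) (cs ! (d * l + j))) [0..<d] = map (\<lambda>j. concat ys ! (d * l + j)) [0..<d]"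
      proof (intro map_cong refl)
        fix j assume "j \<in> set [0..<d]"
        then have j: "j < d" by simp
        have "d * l + j < d * m" using blk_lt[OF l j] .
        then show "lc d (v 0) (v 1) (cs ! (d * l + j)) = concat ys ! (d * l + j)" using lce sc N1 by simp
      qed
      also have "\<dots> = ys ! l" using concat_block_map[OF ly(2)] ly(1) l by simp
      finally show ?thesis .
    qed
    have "InIn m \<phi> (upd v (Suc d) cs)"
      using key[OF lcs] sl m1 m2 ys by auto
    then show "InRelQ m \<phi> v" unfolding InRelQ_def using lcs by blast
  qed
qed

end


definition phiOf :: "bool \<Rightarrow> ('a::field \<Rightarrow> 'a \<Rightarrow> bool) \<Rightarrow> nat \<Rightarrow> nat \<Rightarrow> 'a list list set \<Rightarrow> ffm" where
  "phiOf isord le d m T = (SOME \<phi>. (\<not> isord \<longrightarrow> le_free \<phi>) \<and> (\<forall>v. map v [0..<d * m] \<in> concat ` T \<longleftrightarrow> fsat le \<phi> v))"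

lemma phiOf_spec:
  assumes "pdefinable isord le d m T"
  shows "(\<not> isord \<longrightarrow> le_free (phiOf isord le d m T)) \<and>
    (\<forall>v. map v [0..<d * m] \<in> concat ` T \<longleftrightarrow> fsat le (phiOf isord le d m T) v)"
proof -
  have "\<exists>\<phi>. (\<not> isord \<longrightarrow> le_free \<phi>) \<and> (\<forall>v. map v [0..<d * m] \<in> concat ` T \<longleftrightarrow> fsat le \<phi> v)"
    using assms unfolding pdefinable_def fdefinable_def by blast
  then show ?thesis unfolding phiOf_def by (rule someI_ex)
qed

lemma mem_Co:
  assumes "(n, R) \<in> set I" "n \<ge> 1" "R \<subseteq> {xs. length xs = n \<and> set xs \<subseteq> U}"
  shows "(n, R) \<in> Co U I"
proof -
  obtain k where k: "k < length I" "I ! k = (n, R)" using assms(1) by (auto simp: in_set_conv_nth)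
  have "expr U I (\<lambda>v. map v [0..<n] \<in> R)" unfolding expr_def
    by (rule exI[of _ "RRel k [0..<n]"]) (simp add: k)
  then show ?thesis by (rule Co_intro[OF assms(2,3)])
qed

lemma wf_geom_mem: "wf_geom d J \<Longrightarrow> (m, T) \<in> set J \<Longrightarrow> 1 \<le> m \<and> T \<subseteq> {xs. length xs = m \<and> set xs \<subseteq> Pts d}"
  unfolding wf_geom_def by (drule (1) bspec) simp

context geo
begin

definition CIn :: "nat \<Rightarrow> 'a list list set \<Rightarrow> ffm \<Rightarrow> (nat \<Rightarrow> 'a list) \<Rightarrow> bool" where
  "CIn m T \<phi> v \<longleftrightarrow> (map v [Suc d + NN m \<phi>..<Suc d + NN m \<phi> + m] \<in> T \<longleftrightarrow> InRelQ m \<phi> v)"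

definition CompatQ :: "nat \<Rightarrow> 'a list list set \<Rightarrow> ffm \<Rightarrow> (nat \<Rightarrow> 'a list) \<Rightarrow> bool" where
  "CompatQ m T \<phi> v \<longleftrightarrow> (\<forall>ys. length ys = m \<and> set ys \<subseteq> Pts d \<longrightarrow> CIn m T \<phi> (upd v (Suc d + NN m \<phi>) ys))"

lemma CompatQE:
  assumes "(m, T) \<in> Co (Pts d) J" "isord \<or> le_free \<phi>"
  shows "E (CompatQ m T \<phi>)"
proof -
  have "E (\<lambda>v. map v [Suc d + NN m \<phi>..<Suc d + NN m \<phi> + m] \<in> T)"
    by (rule Co_rel[OF assms(1)]) simp
  then have "E (CIn m T \<phi>)" unfolding CIn_def by (intro expr_iff InRelQE assms(2))
  then show ?thesis unfolding CompatQ_def by (rule expr_block_all)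
qed

lemma CompatQ_iff:
  assumes U: "\<And>i. length (v i) = d" and oe: "v 0 \<noteq> v 1" and n: "nc (v 0) (v 1) (v 2)"
    and T: "T \<subseteq> {ys. length ys = m \<and> set ys \<subseteq> Pts d}"
    and fd: "\<And>w. map w [0..<d * m] \<in> concat ` T \<longleftrightarrow> fsat le \<phi> w"
    and lf: "isord \<or> le_free \<phi>"
  shows "CompatQ m T \<phi> v \<longleftrightarrow> (\<forall>ys. length ys = m \<and> set ys \<subseteq> Pts d \<longrightarrow>
     (ys \<in> T \<longleftrightarrow> (\<exists>zs\<in>T. \<forall>l<m. ys ! l = alpha d (v 0) (esv v) (zs ! l))))"
proof -
  have "CIn m T \<phi> (upd v (Suc d + NN m \<phi>) ys) \<longleftrightarrow> (ys \<in> T \<longleftrightarrow> (\<exists>zs\<in>T. \<forall>l<m. ys ! l = alpha d (v 0) (esv v) (zs ! l)))"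
    if ys: "length ys = m" "set ys \<subseteq> Pts d" for ys
  proof -
    let ?A = "Suc d + NN m \<phi>"
    let ?w = "upd v ?A ys"
    have Uw: "\<And>i. length (?w i) = d" using upd_U[of v "Pts d" ys ?A] U ys by simp
    have w0: "?w 0 = v 0" "?w 1 = v 1" "?w 2 = v 2" using d2 by simp_all
    have ev: "esv ?w = esv v" by (rule esv_cong) simp
    have wa: "\<And>l. l < m \<Longrightarrow> ?w (?A + l) = ys ! l" using ys by (simp add: upd_def)
    have mw: "map ?w [?A..<?A + m] = ys"
    proof (rule nth_equalityI)
      show "length (map ?w [?A..<?A + m]) = length ys" using ys by (simp only: length_map length_upt)
      fix l assume "l < length (map ?w [?A..<?A + m])"
      then have l: "l < m" by (simp only: length_map length_upt)
      have "map ?w [?A..<?A + m] ! l = ?w (?A + l)" using l by (simp del: upt_Suc add: nth_map_upt)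
      also have "\<dots> = ys ! l" by (rule wa[OF l])
      finally show "map ?w [?A..<?A + m] ! l = ys ! l" .
    qed
    have "InRelQ m \<phi> ?w \<longleftrightarrow> (\<exists>zs\<in>T. \<forall>l<m. ?w (?A + l) = alpha d (?w 0) (esv ?w) (zs ! l))"
      by (rule InRelQ_iff[OF Uw _ _ T fd lf]) (use w0 oe n in auto)
    also have "\<dots> \<longleftrightarrow> (\<exists>zs\<in>T. \<forall>l<m. ys ! l = alpha d (v 0) (esv v) (zs ! l))"
      using wa w0 ev by auto
    finally show ?thesis unfolding CIn_def mw by simp
  qed
  then show ?thesis unfolding CompatQ_def by blast
qed

definition FullCompat :: "(nat \<Rightarrow> 'a list) \<Rightarrow> bool" where
  "FullCompat v \<longleftrightarrow> (\<forall>x\<in>set J. CompatQ (fst x) (snd x) (phiOf isord le d (fst x) (snd x)) v)"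

definition CandIn :: "nat \<Rightarrow> ffm \<Rightarrow> (nat \<Rightarrow> 'a list) \<Rightarrow> bool" where
  "CandIn n \<phi> v \<longleftrightarrow> FrameQ v \<and> FullCompat v \<and> InRelQ n \<phi> v"

definition CandQ :: "nat \<Rightarrow> ffm \<Rightarrow> (nat \<Rightarrow> 'a list) \<Rightarrow> bool" where
  "CandQ n \<phi> v \<longleftrightarrow> (\<exists>fr. length fr = Suc d \<and> set fr \<subseteq> Pts d \<and> CandIn n \<phi> (upd v 0 fr))"

lemma CandQE:
  assumes wfJ: "wf_geom d J" and pdJ: "\<forall>(m, T)\<in>set J. pdefinable isord le d m T"
    and lf: "isord \<or> le_free \<phi>"
  shows "E (CandQ n \<phi>)"
proof -
  have "E (CompatQ (fst x) (snd x) (phiOf isord le d (fst x) (snd x)))" if x: "x \<in> set J" for x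
  proof -
    obtain m T where mT: "x = (m, T)" by fastforce
    have xm: "(m, T) \<in> set J" using x mT by simp
    have h: "1 \<le> m \<and> T \<subseteq> {xs. length xs = m \<and> set xs \<subseteq> Pts d}" by (rule wf_geom_mem[OF wfJ xm])
    have co: "(m, T) \<in> Co (Pts d) J" by (rule mem_Co[OF xm conjunct1[OF h] conjunct2[OF h]])
    have "pdefinable isord le d m T" using pdJ xm by blast
    then have "isord \<or> le_free (phiOf isord le d m T)" using phiOf_spec by blast
    then show ?thesis using CompatQE[OF co] mT by simp
  qed
  then have "E FullCompat" unfolding FullCompat_def by (rule expr_ball_list)
  then have "E (CandIn n \<phi>)" unfolding CandIn_def by (intro expr_conj FrameQE InRelQE lf)
  then show ?thesis unfolding CandQ_def by (rule expr_block)
qed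

end


definition std_es :: "nat \<Rightarrow> 'a::field list list" where
  "std_es d = map (\<lambda>k. mk d (\<lambda>i. if i = k then 1 else 0)) [0..<d]"

lemma alpha_std:
  assumes "length s = d"
  shows "alpha d (replicate d 0) (std_es d) s = (s :: 'a::field list)"
proof -
  have "(\<Sum>j<d. (std_es d ! j ! i - replicate d 0 ! i) * s ! j) + replicate d 0 ! i = s ! i" if i: "i < d" for i
  proof -
    have "(\<Sum>j<d. (std_es d ! j ! i - replicate d 0 ! i) * s ! j) = (\<Sum>j<d. if j = i then s ! j else 0)"
      by (rule sum.cong) (use i in \<open>auto simp: std_es_def\<close>)
    also have "\<dots> = s ! i" using i by simp
    finally show ?thesis using i by simp
  qed
  then show ?thesis using assms by (simp add: alpha_def list_eq_iff_nth_eq)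
qed

lemma beta_Aff:
  fixes og :: "'a::field list" and es :: "'a list list"
  assumes lo: "length og = d"
    and surj: "\<forall>p\<in>Pts d. \<exists>s. length s = d \<and> p = alpha d og es s"
    and inj: "inj_on (alpha d og es) {s. length s = d}"
    and wfJ: "wf_geom d J"
    and comp: "\<forall>x\<in>set J. \<forall>ys. length ys = fst x \<and> set ys \<subseteq> Pts d \<longrightarrow>
        (ys \<in> snd x \<longleftrightarrow> (\<exists>zs\<in>snd x. \<forall>l<fst x. ys ! l = alpha d og es (zs ! l)))"
  shows "(\<lambda>p. if length p = d then alpha d og es p else p) \<in> AffAut d J"
proof -
  define \<beta> where "\<beta> = (\<lambda>p. if length p = d then alpha d og es p else p)"
  have bij: "bij_betw \<beta> (Pts d) (Pts d)"
    unfolding bij_betw_def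
  proof
    show "inj_on \<beta> (Pts d)"
    proof (rule inj_onI)
      fix x y assume "x \<in> Pts d" "y \<in> Pts d" "\<beta> x = \<beta> y"
      then show "x = y" using inj_onD[OF inj, of x y] by (simp add: \<beta>_def)
    qed
    show "\<beta> ` Pts d = Pts d"
    proof
      show "\<beta> ` Pts d \<subseteq> Pts d" by (auto simp: \<beta>_def)
      show "Pts d \<subseteq> \<beta> ` Pts d"
      proof
        fix p :: "'a list" assume "p \<in> Pts d"
        then obtain s where s: "length s = d" "p = alpha d og es s" using surj by blast
        then have "p = \<beta> s" by (simp add: \<beta>_def)
        then show "p \<in> \<beta> ` Pts d" using s(1) by simp
      qed
    qed
  qed
  have out: "\<forall>x. x \<notin> Pts d \<longrightarrow> \<beta> x = x" by (simp add: \<beta>_def)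
  have rel0: "map \<beta> xs \<in> T \<longleftrightarrow> xs \<in> T"
    if mT: "(m, T) \<in> set J" and lx: "length xs = m" and sx: "set xs \<subseteq> Pts d" for m T and xs :: "'a list list"
  proof -
    have wT: "T \<subseteq> {xs. length xs = m \<and> set xs \<subseteq> Pts d}" using wf_geom_mem[OF wfJ mT] by simp
    have lxs: "\<And>l. l < m \<Longrightarrow> length (xs ! l) = d" using sx lx by (auto simp: subset_iff)
    have ys: "length (map \<beta> xs) = m \<and> set (map \<beta> xs) \<subseteq> Pts d" using lx sx by (auto simp: \<beta>_def)
    have nb: "\<And>l. l < m \<Longrightarrow> map \<beta> xs ! l = alpha d og es (xs ! l)" using lx lxs by (simp add: \<beta>_def)
    have c: "map \<beta> xs \<in> T \<longleftrightarrow> (\<exists>zs\<in>T. \<forall>l<m. map \<beta> xs ! l = alpha d og es (zs ! l))"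
      using comp mT ys by fastforce
    show "map \<beta> xs \<in> T \<longleftrightarrow> xs \<in> T"
    proof
      assume "map \<beta> xs \<in> T"
      then obtain zs where zs: "zs \<in> T" "\<forall>l<m. map \<beta> xs ! l = alpha d og es (zs ! l)" using c by blast
      have lz: "length zs = m" "set zs \<subseteq> Pts d" using zs(1) wT by auto
      have "\<forall>l<m. xs ! l = zs ! l"
      proof (intro allI impI)
        fix l assume l: "l < m"
        have "length (zs ! l) = d" using lz l by (auto simp: subset_iff)
        moreover have "alpha d og es (xs ! l) = alpha d og es (zs ! l)" using zs(2) nb l by simp
        ultimately show "xs ! l = zs ! l" using inj_onD[OF inj] lxs[OF l] by simp
      qed
      then have "xs = zs" using lx lz by (simp add: list_eq_iff_nth_eq)
      then show "xs \<in> T" using zs by simp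
    next
      assume "xs \<in> T"
      then show "map \<beta> xs \<in> T" using c nb by blast
    qed
  qed
  have rel: "\<forall>(m, T)\<in>set J. \<forall>xs. length xs = m \<and> set xs \<subseteq> Pts d \<longrightarrow> (map \<beta> xs \<in> T \<longleftrightarrow> xs \<in> T)"
    using rel0 by fast
  have aff: "affine_transf d \<beta>"
  proof -
    define tk where "tk k = mk d (\<lambda>i. og ! i + (if i = k then 1 else 0))" for k
    define sk where "sk k = (SOME s. length s = d \<and> tk k = alpha d og es s)" for k
    have sk: "length (sk k) = d \<and> tk k = alpha d og es (sk k)" for k
    proof -
      have "tk k \<in> Pts d" by (simp add: tk_def)
      then have "\<exists>s. length s = d \<and> tk k = alpha d og es s" using surj by blast
      then show ?thesis unfolding sk_def by (rule someI_ex)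
    qed
    define M where "M i j = es ! j ! i - og ! i" for i j
    define N where "N j k = sk k ! j" for j k
    have MN: "\<forall>i<d. \<forall>k<d. (\<Sum>j<d. M i j * N j k) = (if i = k then 1 else 0)"
    proof (intro allI impI)
      fix i k assume i: "i < d" and k: "k < d"
      have "tk k ! i = alpha d og es (sk k) ! i" using sk by simp
      then have "og ! i + (if i = k then 1 else 0) = (\<Sum>j<d. M i j * N j k) + og ! i"
        using i by (simp add: tk_def alpha_def M_def N_def)
      then show "(\<Sum>j<d. M i j * N j k) = (if i = k then 1 else 0)" by (simp add: algebra_simps)
    qed
    have form: "\<forall>p\<in>Pts d. \<beta> p = map (\<lambda>i. (\<Sum>j<d. M i j * p ! j) + og ! i) [0..<d]"
      by (simp add: \<beta>_def alpha_def M_def)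
    show ?thesis unfolding affine_transf_def
      using lo MN form by blast
  qed
  have "\<beta> \<in> Aut (Pts d) J" unfolding Aut_def using bij out rel by blast
  then show ?thesis using aff unfolding AffAut_def \<beta>_def by simp
qed

context geo
begin

lemma FullCompat_iff:
  assumes U: "\<And>i. length (v i) = d" and oe: "v 0 \<noteq> v 1" and n: "nc (v 0) (v 1) (v 2)"
    and wfJ: "wf_geom d J" and pdJ: "\<forall>(m, T)\<in>set J. pdefinable isord le d m T"
  shows "FullCompat v \<longleftrightarrow> (\<forall>x\<in>set J. \<forall>ys. length ys = fst x \<and> set ys \<subseteq> Pts d \<longrightarrow>
        (ys \<in> snd x \<longleftrightarrow> (\<exists>zs\<in>snd x. \<forall>l<fst x. ys ! l = alpha d (v 0) (esv v) (zs ! l))))"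
proof -
  have "CompatQ (fst x) (snd x) (phiOf isord le d (fst x) (snd x)) v \<longleftrightarrow>
     (\<forall>ys. length ys = fst x \<and> set ys \<subseteq> Pts d \<longrightarrow>
        (ys \<in> snd x \<longleftrightarrow> (\<exists>zs\<in>snd x. \<forall>l<fst x. ys ! l = alpha d (v 0) (esv v) (zs ! l))))"
    if x: "x \<in> set J" for x
  proof -
    obtain m T where mT: "x = (m, T)" by fastforce
    have xm: "(m, T) \<in> set J" using x mT by simp
    have wT: "T \<subseteq> {ys. length ys = m \<and> set ys \<subseteq> Pts d}" using wf_geom_mem[OF wfJ xm] by simp
    have "pdefinable isord le d m T" using pdJ xm by blast
    then have sp: "(\<not> isord \<longrightarrow> le_free (phiOf isord le d m T)) \<and>
      (\<forall>v. map v [0..<d * m] \<in> concat ` T \<longleftrightarrow> fsat le (phiOf isord le d m T) v)" by (rule phiOf_spec)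
    have "CompatQ m T (phiOf isord le d m T) v \<longleftrightarrow> (\<forall>ys. length ys = m \<and> set ys \<subseteq> Pts d \<longrightarrow>
     (ys \<in> T \<longleftrightarrow> (\<exists>zs\<in>T. \<forall>l<m. ys ! l = alpha d (v 0) (esv v) (zs ! l))))"
    proof -
      have fd: "\<And>w. map w [0..<d * m] \<in> concat ` T \<longleftrightarrow> fsat le (phiOf isord le d m T) w" using sp by blast
      have lf: "isord \<or> le_free (phiOf isord le d m T)" using sp by blast
      show ?thesis by (rule CompatQ_iff[OF U oe n wT fd lf])
    qed
    then show ?thesis using mT by simp
  qed
  then show ?thesis unfolding FullCompat_def by blast
qed

lemma CandQ_iff:
  assumes wfJ: "wf_geom d J" and pdJ: "\<forall>(m, T)\<in>set J. pdefinable isord le d m T"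
    and wfG: "wf_geom d G" and SG: "(n, S) \<in> set G" and aff: "AffAut d J \<subseteq> AffAut d G"
    and fdS: "\<And>w. map w [0..<d * n] \<in> concat ` S \<longleftrightarrow> fsat le \<phi> w" and lf: "isord \<or> le_free \<phi>"
    and U: "\<And>i. length (v i) = d"
  shows "CandQ n \<phi> v \<longleftrightarrow> map (\<lambda>l. v (Suc d + NN n \<phi> + l)) [0..<n] \<in> S"
proof -
  let ?A = "Suc d + NN n \<phi>"
  have wS: "S \<subseteq> {ys. length ys = n \<and> set ys \<subseteq> Pts d}" using wf_geom_mem[OF wfG SG] by simp
  have key: "CandIn n \<phi> (upd v 0 fr) \<longleftrightarrow>
     (upd v 0 fr 0 \<noteq> upd v 0 fr 1 \<and> nc (upd v 0 fr 0) (upd v 0 fr 1) (upd v 0 fr 2) \<and>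
     (\<forall>p\<in>Pts d. \<exists>s. length s = d \<and> p = alpha d (upd v 0 fr 0) (esv (upd v 0 fr)) s) \<and>
     inj_on (alpha d (upd v 0 fr 0) (esv (upd v 0 fr))) {s. length s = d} \<and>
     (\<forall>x\<in>set J. \<forall>ys. length ys = fst x \<and> set ys \<subseteq> Pts d \<longrightarrow>
        (ys \<in> snd x \<longleftrightarrow> (\<exists>zs\<in>snd x. \<forall>l<fst x. ys ! l = alpha d (upd v 0 fr 0) (esv (upd v 0 fr)) (zs ! l)))) \<and>
     (\<exists>ys\<in>S. \<forall>l<n. v (?A + l) = alpha d (upd v 0 fr 0) (esv (upd v 0 fr)) (ys ! l)))"
    if fr: "length fr = Suc d" "set fr \<subseteq> Pts d" for fr
  proof -
    let ?w = "upd v 0 fr"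
    have Uw: "\<And>i. length (?w i) = d" using upd_U[of v "Pts d" fr 0] U fr by simp
    have wa: "\<And>l. ?w (?A + l) = v (?A + l)" using fr by (simp add: upd_ge)
    show ?thesis
    proof (cases "?w 0 \<noteq> ?w 1 \<and> nc (?w 0) (?w 1) (?w 2)")
      case False
      then show ?thesis unfolding CandIn_def using FrameQ_iff[of ?w, OF Uw] by blast
    next
      case True
      then have oe: "?w 0 \<noteq> ?w 1" and n: "nc (?w 0) (?w 1) (?w 2)" by auto
      have I: "InRelQ n \<phi> ?w \<longleftrightarrow> (\<exists>ys\<in>S. \<forall>l<n. ?w (?A + l) = alpha d (?w 0) (esv ?w) (ys ! l))"
        by (rule InRelQ_iff[OF Uw oe n wS fdS lf])
      show ?thesis unfolding CandIn_def FrameQ_iff[of ?w, OF Uw] FullCompat_iff[of ?w, OF Uw oe n wfJ pdJ] I wa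
        by blast
    qed
  qed
  show ?thesis
  proof
    assume "CandQ n \<phi> v"
    then obtain fr where fr: "length fr = Suc d" "set fr \<subseteq> Pts d" "CandIn n \<phi> (upd v 0 fr)"
      unfolding CandQ_def by blast
    let ?w = "upd v 0 fr"
    let ?al = "alpha d (?w 0) (esv ?w)"
    have h: "(\<forall>p\<in>Pts d. \<exists>s. length s = d \<and> p = ?al s)" "inj_on ?al {s. length s = d}"
      "\<forall>x\<in>set J. \<forall>ys. length ys = fst x \<and> set ys \<subseteq> Pts d \<longrightarrow>
        (ys \<in> snd x \<longleftrightarrow> (\<exists>zs\<in>snd x. \<forall>l<fst x. ys ! l = ?al (zs ! l)))"
      "\<exists>ys\<in>S. \<forall>l<n. v (?A + l) = ?al (ys ! l)"
      using key[OF fr(1,2)] fr(3) by blast+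
    have l0: "length (?w 0) = d" using upd_U[of v "Pts d" fr 0] U fr by simp
    have "(\<lambda>p. if length p = d then ?al p else p) \<in> AffAut d J"
      by (rule beta_Aff[OF l0 h(1,2) wfJ h(3)])
    then have "(\<lambda>p. if length p = d then ?al p else p) \<in> Aut (Pts d) G"
      using aff unfolding AffAut_def by blast
    then have pres: "\<forall>xs. length xs = n \<and> set xs \<subseteq> Pts d \<longrightarrow>
       (map (\<lambda>p. if length p = d then ?al p else p) xs \<in> S \<longleftrightarrow> xs \<in> S)"
      using SG unfolding Aut_def by fastforce
    obtain ys where ys: "ys \<in> S" "\<forall>l<n. v (?A + l) = ?al (ys ! l)" using h(4) by blast
    have ly: "length ys = n" "set ys \<subseteq> Pts d" using ys(1) wS by auto
    have eqm: "map (\<lambda>p. if length p = d then ?al p else p) ys = map (\<lambda>l. v (?A + l)) [0..<n]"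
    proof (rule nth_equalityI)
      show "length (map (\<lambda>p. if length p = d then ?al p else p) ys) = length (map (\<lambda>l. v (?A + l)) [0..<n])"
        using ly by simp
      fix l assume "l < length (map (\<lambda>p. if length p = d then ?al p else p) ys)"
      then have l: "l < n" using ly by simp
      have "length (ys ! l) = d" using ly l by (auto simp: subset_iff)
      then show "map (\<lambda>p. if length p = d then ?al p else p) ys ! l = map (\<lambda>l. v (?A + l)) [0..<n] ! l"
        using ys(2) l ly by simp
    qed
    have "map (\<lambda>p. if length p = d then ?al p else p) ys \<in> S"
      using pres[rule_format, OF conjI[OF ly(1) ly(2)]] ys(1) by simp
    then show "map (\<lambda>l. v (?A + l)) [0..<n] \<in> S" unfolding eqm .
  next
    assume xs: "map (\<lambda>l. v (?A + l)) [0..<n] \<in> S"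
    define fr where "fr = replicate d (0::'a) # std_es d"
    have fr: "length fr = Suc d" "set fr \<subseteq> Pts d" by (auto simp: fr_def std_es_def)
    let ?w = "upd v 0 fr"
    have w0: "?w 0 = replicate d 0" by (simp add: fr_def upd_def)
    have ew: "esv ?w = std_es d"
      using fr(1) by (simp add: esv_def fr_def std_es_def list_eq_iff_nth_eq upd_def)
    have w1: "?w 1 = mk d (\<lambda>i. if i = 0 then 1 else 0)" using d2 by (simp add: fr_def std_es_def upd_def)
    have w2: "?w 2 = mk d (\<lambda>i. if i = 1 then 1 else 0)" using d2 by (simp add: fr_def std_es_def upd_def)
    have al: "\<And>s. length s = d \<Longrightarrow> alpha d (?w 0) (esv ?w) s = s" unfolding w0 ew by (rule alpha_std)
    have oe: "?w 0 \<noteq> ?w 1"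
    proof
      assume "?w 0 = ?w 1"
      then have "?w 0 ! 0 = ?w 1 ! 0" by simp
      then show False using d2 unfolding w0 w1 by simp
    qed
    have n: "nc (?w 0) (?w 1) (?w 2)"
    proof -
      have "\<not> col (?w 0) (?w 2) (?w 1)"
      proof
        assume "col (?w 0) (?w 2) (?w 1)"
        then obtain t where t: "\<forall>i<d. ?w 2 ! i = ?w 0 ! i + t * (?w 1 ! i - ?w 0 ! i)"
          using col_ne[of "?w 0" d "?w 2" "?w 1"] oe unfolding w0 w1 w2 by auto
        then have "?w 2 ! 1 = ?w 0 ! 1 + t * (?w 1 ! 1 - ?w 0 ! 1)" using d2 by auto
        then show False using d2 unfolding w0 w1 w2 by simp
      qed
      then show ?thesis unfolding nc_def using oe by simp
    qed
    have s1: "\<forall>p\<in>Pts d. \<exists>s. length s = d \<and> p = alpha d (?w 0) (esv ?w) p \<and> p = alpha d (?w 0) (esv ?w) s"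
      using al by auto
    have s2: "inj_on (alpha d (?w 0) (esv ?w)) {s. length s = d}"
      by (rule inj_onI) (simp add: al)
    have s3: "\<forall>x\<in>set J. \<forall>ys. length ys = fst x \<and> set ys \<subseteq> Pts d \<longrightarrow>
        (ys \<in> snd x \<longleftrightarrow> (\<exists>zs\<in>snd x. \<forall>l<fst x. ys ! l = alpha d (?w 0) (esv ?w) (zs ! l)))"
    proof (intro ballI allI impI)
      fix x and ys :: "'a list list" assume x: "x \<in> set J" and ys: "length ys = fst x \<and> set ys \<subseteq> Pts d"
      obtain m T where mT: "x = (m, T)" by fastforce
      have wT: "T \<subseteq> {ys. length ys = m \<and> set ys \<subseteq> Pts d}" using wf_geom_mem[OF wfJ] x mT by simp
      show "ys \<in> snd x \<longleftrightarrow> (\<exists>zs\<in>snd x. \<forall>l<fst x. ys ! l = alpha d (?w 0) (esv ?w) (zs ! l))"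
      proof
        assume "ys \<in> snd x"
        moreover have "\<forall>l<fst x. ys ! l = alpha d (?w 0) (esv ?w) (ys ! l)"
          using ys al by (auto simp: subset_iff)
        ultimately show "\<exists>zs\<in>snd x. \<forall>l<fst x. ys ! l = alpha d (?w 0) (esv ?w) (zs ! l)" by blast
      next
        assume "\<exists>zs\<in>snd x. \<forall>l<fst x. ys ! l = alpha d (?w 0) (esv ?w) (zs ! l)"
        then obtain zs where zs: "zs \<in> T" "\<forall>l<m. ys ! l = alpha d (?w 0) (esv ?w) (zs ! l)" using mT by auto
        have lz: "length zs = m" "set zs \<subseteq> Pts d" using zs(1) wT by auto
        have "\<forall>l<m. ys ! l = zs ! l" using zs(2) lz al by (auto simp: subset_iff)
        then have "ys = zs" using ys lz mT by (simp add: list_eq_iff_nth_eq)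
        then show "ys \<in> snd x" using zs mT by simp
      qed
    qed
    have s4: "\<exists>ys\<in>S. \<forall>l<n. v (?A + l) = alpha d (?w 0) (esv ?w) (ys ! l)"
    proof (rule bexI[OF _ xs], intro allI impI)
      fix l assume l: "l < n"
      have "length (v (?A + l)) = d" using U by simp
      then show "v (?A + l) = alpha d (?w 0) (esv ?w) (map (\<lambda>l. v (?A + l)) [0..<n] ! l)"
        using l al by simp
    qed
    have "CandIn n \<phi> ?w" using key[OF fr] oe n s1 s2 s3 s4 by blast
    then show "CandQ n \<phi> v" unfolding CandQ_def using fr by blast
  qed
qed

lemma S_in_Co:
  assumes wfJ: "wf_geom d J" and pdJ: "\<forall>(m, T)\<in>set J. pdefinable isord le d m T"
    and wfG: "wf_geom d G" and SG: "(n, S) \<in> set G" and aff: "AffAut d J \<subseteq> AffAut d G"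
    and pdS: "pdefinable isord le d n S"
  shows "(n, S) \<in> Co (Pts d) J"
proof -
  define \<phi> where "\<phi> = phiOf isord le d n S"
  have sp: "(\<not> isord \<longrightarrow> le_free \<phi>) \<and> (\<forall>v. map v [0..<d * n] \<in> concat ` S \<longleftrightarrow> fsat le \<phi> v)"
    unfolding \<phi>_def by (rule phiOf_spec[OF pdS])
  then have lf: "isord \<or> le_free \<phi>" by blast
  have fd: "\<And>w. map w [0..<d * n] \<in> concat ` S \<longleftrightarrow> fsat le \<phi> w" using sp by blast
  have w: "1 \<le> n \<and> S \<subseteq> {xs. length xs = n \<and> set xs \<subseteq> Pts d}" by (rule wf_geom_mem[OF wfG SG])
  let ?A = "Suc d + NN n \<phi>"
  have "E (CandQ n \<phi>)" by (rule CandQE[OF wfJ pdJ lf])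
  then have "E (\<lambda>v. CandQ n \<phi> (v \<circ> (\<lambda>i. i - ?A)))" by (rule expr_comp)
  then have "E (\<lambda>v. map v [0..<n] \<in> S)"
  proof (rule expr_cong)
    fix v :: "nat \<Rightarrow> 'a list" assume U: "\<And>i. v i \<in> Pts d"
    have U': "\<And>i. length ((v \<circ> (\<lambda>i. i - ?A)) i) = d" using U by simp
    have "CandQ n \<phi> (v \<circ> (\<lambda>i. i - ?A)) \<longleftrightarrow> map (\<lambda>l. (v \<circ> (\<lambda>i. i - ?A)) (?A + l)) [0..<n] \<in> S"
      by (rule CandQ_iff[OF wfJ pdJ wfG SG aff fd lf U'])
    also have "map (\<lambda>l. (v \<circ> (\<lambda>i. i - ?A)) (?A + l)) [0..<n] = map v [0..<n]" by simp
    finally show "CandQ n \<phi> (v \<circ> (\<lambda>i. i - ?A)) = (map v [0..<n] \<in> S)" .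
  qed
  then show ?thesis by (rule Co_intro[OF conjunct1[OF w] conjunct2[OF w]])
qed

end


lemma rsat_transfer:
  assumes "\<And>x. x \<in> set G \<Longrightarrow> x \<in> Co U G'"
  shows "expr U G' (rsat U G \<phi>)"
proof (induction \<phi>)
  case (REq i j)
  have "expr U G' (\<lambda>v. v i = v j)" by (rule expr_eq)
  then show ?case by simp
next
  case (RRel k xs)
  show ?case
  proof (cases "k < length G \<and> length xs = fst (G ! k)")
    case True
    then have "G ! k \<in> set G" by simp
    then have co: "(fst (G ! k), snd (G ! k)) \<in> Co U G'" using assms by simp
    have "expr U G' (\<lambda>v. map v xs \<in> snd (G ! k))" by (rule Co_rel[OF co]) (use True in simp)
    then show ?thesis by (rule expr_cong) (use True in simp)
  next
    case False
    have "expr U G' (\<lambda>v. False)" by (rule expr_const)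
    then show ?thesis by (rule expr_cong) (use False in auto)
  qed
next
  case (RNeg \<phi>)
  then have "expr U G' (\<lambda>v. \<not> rsat U G \<phi> v)" by (rule expr_not)
  then show ?case by simp
next
  case (RAnd \<phi> \<psi>)
  then have "expr U G' (\<lambda>v. rsat U G \<phi> v \<and> rsat U G \<psi> v)" by (rule expr_conj)
  then show ?case by simp
next
  case (REx x \<phi>)
  then have "expr U G' (\<lambda>v. \<exists>a\<in>U. rsat U G \<phi> (v(x := a)))" by (rule expr_ex)
  then show ?case by simp
qed

lemma Co_mono:
  assumes "\<And>x. x \<in> set G \<Longrightarrow> x \<in> Co U G'"
  shows "Co U G \<subseteq> Co U G'"
proof
  fix x assume x: "x \<in> Co U G"
  obtain n R where nR: "x = (n, R)" by fastforce
  have h: "n \<ge> 1" "R \<subseteq> {xs. length xs = n \<and> set xs \<subseteq> U}" "expr U G (\<lambda>v. map v [0..<n] \<in> R)"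
    using x nR Co_expr[of n R U G] unfolding Co_def rdefinable_def by auto
  then obtain \<phi> where \<phi>: "\<forall>v. (\<forall>i. v i \<in> U) \<longrightarrow> (map v [0..<n] \<in> R \<longleftrightarrow> rsat U G \<phi> v)"
    unfolding expr_def by blast
  have "expr U G' (rsat U G \<phi>)" by (rule rsat_transfer[OF assms])
  then have "expr U G' (\<lambda>v. map v [0..<n] \<in> R)" by (rule expr_cong) (use \<phi> in auto)
  then show "x \<in> Co U G'" using Co_intro[OF h(1,2)] nR by simp
qed

lemma Co_sub_Aut:
  assumes sub: "Co U G \<subseteq> Co U G'"
    and wf: "\<forall>(n, R)\<in>set G. n \<ge> 1 \<and> R \<subseteq> {xs. length xs = n \<and> set xs \<subseteq> U}"
    and ne: "u0 \<in> U"
  shows "Aut U G' \<subseteq> Aut U G"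
proof
  fix f assume f: "f \<in> Aut U G'"
  have bij: "bij_betw f U U" and out: "\<forall>x. x \<notin> U \<longrightarrow> f x = x" using f unfolding Aut_def by auto
  have rel: "map f xs \<in> R \<longleftrightarrow> xs \<in> R"
    if nR: "(n, R) \<in> set G" and lx: "length xs = n" and sx: "set xs \<subseteq> U" for n R xs
  proof -
    have w0: "n \<ge> 1 \<and> R \<subseteq> {xs. length xs = n \<and> set xs \<subseteq> U}" using bspec[OF wf nR] by (simp only: prod.case)
    have w: "n \<ge> 1" "R \<subseteq> {xs. length xs = n \<and> set xs \<subseteq> U}" using w0 by simp_all
    have "(n, R) \<in> Co U G" by (rule mem_Co[OF nR w])
    then have "(n, R) \<in> Co U G'" using sub by blast
    then obtain \<phi> where \<phi>: "\<forall>v. (\<forall>i. v i \<in> U) \<longrightarrow> (map v [0..<n] \<in> R \<longleftrightarrow> rsat U G' \<phi> v)"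
      using Co_expr unfolding expr_def by blast
    define v where "v = (\<lambda>i. if i < n then xs ! i else u0)"
    have vU: "\<forall>i. v i \<in> U" using sx lx ne by (auto simp: v_def)
    have fvU: "\<forall>i. (f \<circ> v) i \<in> U" using vU bij by (auto simp: bij_betw_def)
    have mv: "map v [0..<n] = xs" using lx by (simp add: v_def list_eq_iff_nth_eq)
    have mfv: "map (f \<circ> v) [0..<n] = map f xs" using mv by (metis map_map)
    have "map f xs \<in> R \<longleftrightarrow> rsat U G' \<phi> (f \<circ> v)" using \<phi> fvU mfv by metis
    also have "\<dots> \<longleftrightarrow> rsat U G' \<phi> v" by (rule rsat_Aut[OF f vU])
    also have "\<dots> \<longleftrightarrow> xs \<in> R" using \<phi> vU mv by metis
    finally show ?thesis .
  qed
  show "f \<in> Aut U G" unfolding Aut_def using bij out rel by blast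
qed

lemma geo_interp:
  fixes le :: "'a::field \<Rightarrow> 'a \<Rightarrow> bool"
  assumes d2: "d \<ge> 2"
    and H: "(isord \<and> ordered_field_le le) \<or> (\<not> isord \<and> (\<exists>a b c :: 'a. a \<noteq> b \<and> a \<noteq> c \<and> b \<noteq> c))"
    and cg: "coord_geom isord le d G'"
  shows "geo d G' le isord"
proof -
  have c3: "(3, if isord then Bw le d else Col d) \<in> Co (Pts d) G'" using cg unfolding coord_geom_def by blast
  have three: "\<exists>r1 r2 r3 :: 'a. r1 \<noteq> r2 \<and> r1 \<noteq> r3 \<and> r2 \<noteq> r3" using H three_ofl by blast
  show ?thesis
  proof (cases isord)
    case True
    then have ofl: "ordered_field_le le" using H by blast
    have bw3: "(3, Bw le d) \<in> Co (Pts d) G'" using c3 True by simp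
    have bwE: "expr (Pts d) G' (\<lambda>v. bw le (v i) (v j) (v k))" for i j k
    proof -
      have "expr (Pts d) G' (\<lambda>v. map v [i, j, k] \<in> Bw le d)" by (rule Co_rel[OF bw3]) simp
      then show ?thesis by (rule expr_cong) (simp add: Bw_mem)
    qed
    have colE: "expr (Pts d) G' (\<lambda>v. col (v i) (v j) (v k))" for i j k
    proof -
      have "expr (Pts d) G' (\<lambda>v. v k = v i \<or> bw le (v i) (v j) (v k) \<or> bw le (v i) (v k) (v j) \<or> bw le (v j) (v i) (v k))"
        by (intro expr_disj expr_eq bwE)
      then show ?thesis by (rule expr_cong) (simp add: col_bw[OF ofl])
    qed
    show ?thesis by (unfold_locales) (use d2 three colE bwE ofl True in auto)
  next
    case False
    have col3: "(3, Col d) \<in> Co (Pts d) G'" using c3 False by simp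
    have colE: "expr (Pts d) G' (\<lambda>v. col (v i) (v j) (v k))" for i j k
    proof -
      have "expr (Pts d) G' (\<lambda>v. map v [i, j, k] \<in> Col d)" by (rule Co_rel[OF col3]) simp
      then show ?thesis by (rule expr_cong) (simp add: Col_mem)
    qed
    show ?thesis by (unfold_locales) (use d2 three colE False in auto)
  qed
qed

theorem theorem2:
  fixes isord :: bool and le :: "'a::field \<Rightarrow> 'a \<Rightarrow> bool" and d :: nat
    and G G' :: "(nat \<times> 'a list list set) list"
  assumes "d \<ge> 2"
    and "(isord \<and> ordered_field_le le) \<or> (\<not> isord \<and> (\<exists>a b c :: 'a. a \<noteq> b \<and> a \<noteq> c \<and> b \<noteq> c))"
    and "FFD isord le d G" and "FFD isord le d G'"
  shows "(Co (Pts d) G \<subseteq> Co (Pts d) G' \<longleftrightarrow> Aut (Pts d) G' \<subseteq> Aut (Pts d) G) \<and>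
         (Co (Pts d) G \<subseteq> Co (Pts d) G' \<longleftrightarrow> AffAut d G' \<subseteq> AffAut d G)"
proof -
  note d2 = assms(1)
  have wfG: "wf_geom d G" and pdG: "\<forall>(n, R)\<in>set G. pdefinable isord le d n R"
    using assms(3) unfolding FFD_def coord_geom_def by auto
  have wfJ: "wf_geom d G'" and pdJ: "\<forall>(n, R)\<in>set G'. pdefinable isord le d n R"
    using assms(4) unfolding FFD_def coord_geom_def by auto
  have cg: "coord_geom isord le d G'" using assms(4) unfolding FFD_def by blast
  interpret geo d G' le isord by (rule geo_interp[OF d2 assms(2) cg])
  have L1: "Co (Pts d) G \<subseteq> Co (Pts d) G' \<Longrightarrow> Aut (Pts d) G' \<subseteq> Aut (Pts d) G"
  proof -
    assume sub: "Co (Pts d) G \<subseteq> Co (Pts d) G'"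
    have wf: "\<forall>(n, R)\<in>set G. n \<ge> 1 \<and> R \<subseteq> {xs. length xs = n \<and> set xs \<subseteq> Pts d}"
      using wfG unfolding wf_geom_def by blast
    have "replicate d 0 \<in> Pts d" by simp
    then show ?thesis by (rule Co_sub_Aut[OF sub wf])
  qed
  have L2: "AffAut d G' \<subseteq> AffAut d G \<Longrightarrow> Co (Pts d) G \<subseteq> Co (Pts d) G'"
  proof -
    assume aff: "AffAut d G' \<subseteq> AffAut d G"
    show ?thesis
    proof (rule Co_mono)
      fix x assume x: "x \<in> set G"
      obtain n S where nS: "x = (n, S)" by fastforce
      have SG: "(n, S) \<in> set G" using x nS by simp
      have pdS: "pdefinable isord le d n S" using pdG SG by blast
      show "x \<in> Co (Pts d) G'" unfolding nS by (rule S_in_Co[OF wfJ pdJ wfG SG aff pdS])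
    qed
  qed
  have L3: "Aut (Pts d) G' \<subseteq> Aut (Pts d) G \<Longrightarrow> AffAut d G' \<subseteq> AffAut d G"
    unfolding AffAut_def by blast
  show ?thesis using L1 L2 L3 by blast
qed


end
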